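(* Let $G$ be a plane graph with a weak labeling, and let $T_0,T_1$ be the sets of oriented edges of colors $0$ and $1$ as induced by the labeling. Then there is no directed cycle in $T_0\cup T_1^{-1}$, nor in $T_1\cup T_0^{-1}$.
   Context: An angle of a plane graph is an incidence of a vertex with a face (a corner of a face at a vertex). A weak labeling of a plane graph $G$ is a map from the angles of $G$ to $\{0,1\}$ such that: (G0) there are two special vertices $s_0,s_1$ on the outer face with all angles at $s_i$ labeled $i$; (G1) for each vertex $v\notin\{s_0,s_1\}$ the labels around $v$ form one non-empty cyclic interval of $1$s and one non-empty cyclic interval of $0$s; (G2) for each edge, the two labels on the two sides of the edge coincide at one endpoint and differ at the other; (G3) for each face (including the outer face), its labels, read cyclically, form one non-empty interval of $1$s and one non-empty interval of $0$s. A weak labeling induces a coloring and orientation of the edges: each edge is colored with the common label at the endpoint where its two labels coincide, and is oriented towards that endpoint. $T_i$ denotes the set of edges of color $i$ with this orientation, and $T_i^{-1}$ the same edges with reversed orientation. *)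

theory Defs
  imports Main
begin

text \<open>Plane graphs are represented combinatorially as connected planar maps
(rotation systems): a finite set of darts D (half-edges), a fixed-point-free
involution alpha pairing the two darts of an edge, and a permutation sigma
giving the cyclic (rotation) order of darts around their tail vertex.
Planarity is Euler's formula V - E + F = 2 for the connected map.

Angles are identified with darts: dart d stands for the corner at the tail
vertex of d between sigma^-1 d and d.  This corner lies in the face
(the (sigma o alpha)-orbit) containing d; around a vertex the angles are
cyclically ordered by sigma, around a face by sigma o alpha.\<close>

definition orb :: "('d \<Rightarrow> 'd) \<Rightarrow> 'd \<Rightarrow> 'd set" where
  "orb p d = {(p ^^ n) d | n. True}"

definition map_vertices :: "'d set \<Rightarrow> ('d \<Rightarrow> 'd) \<Rightarrow> 'd set set" where
  "map_vertices D sigma = orb sigma ` D"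

definition map_edges :: "'d set \<Rightarrow> ('d \<Rightarrow> 'd) \<Rightarrow> 'd set set" where
  "map_edges D alpha = orb alpha ` D"

definition map_faces :: "'d set \<Rightarrow> ('d \<Rightarrow> 'd) \<Rightarrow> ('d \<Rightarrow> 'd) \<Rightarrow> 'd set set" where
  "map_faces D alpha sigma = orb (sigma \<circ> alpha) ` D"

definition plane_map :: "'d set \<Rightarrow> ('d \<Rightarrow> 'd) \<Rightarrow> ('d \<Rightarrow> 'd) \<Rightarrow> bool" where
  "plane_map D alpha sigma \<longleftrightarrow>
     finite D \<and>
     (\<forall>d\<in>D. alpha d \<in> D \<and> alpha d \<noteq> d \<and> alpha (alpha d) = d) \<and>
     bij_betw sigma D D \<and>
     (\<forall>d\<in>D. \<forall>e\<in>D. (d, e) \<in> ({(x, alpha x) | x. x \<in> D} \<union> {(x, sigma x) | x. x \<in> D})\<^sup>*) \<and>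
     int (card (map_vertices D sigma)) - int (card (map_edges D alpha))
       + int (card (map_faces D alpha sigma)) = 2"

definition two_intervals :: "('d \<Rightarrow> 'd) \<Rightarrow> 'd set \<Rightarrow> ('d \<Rightarrow> nat) \<Rightarrow> bool" where
  "two_intervals p C lab \<longleftrightarrow>
     (\<exists>d\<in>C. \<exists>k. 0 < k \<and> k < card C \<and>
        (\<forall>i < card C. lab ((p ^^ i) d) = (if i < k then 1 else 0)))"

definition weak_labeling ::
  "'d set \<Rightarrow> ('d \<Rightarrow> 'd) \<Rightarrow> ('d \<Rightarrow> 'd) \<Rightarrow> 'd set \<Rightarrow> 'd set \<Rightarrow> 'd set \<Rightarrow> ('d \<Rightarrow> nat) \<Rightarrow> bool" where
  "weak_labeling D alpha sigma fo s0 s1 lab \<longleftrightarrow>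
     fo \<in> map_faces D alpha sigma \<and>
     (\<forall>d\<in>D. lab d \<in> {0, 1}) \<and>
     \<comment> \<open>(G0)\<close>
     s0 \<in> map_vertices D sigma \<and> s1 \<in> map_vertices D sigma \<and> s0 \<noteq> s1 \<and>
     s0 \<inter> fo \<noteq> {} \<and> s1 \<inter> fo \<noteq> {} \<and>
     (\<forall>d\<in>s0. lab d = 0) \<and> (\<forall>d\<in>s1. lab d = 1) \<and>
     \<comment> \<open>(G1)\<close>
     (\<forall>v \<in> map_vertices D sigma - {s0, s1}. two_intervals sigma v lab) \<and>
     \<comment> \<open>(G2): at the tail of d the two sides of edge d are the angles d and sigma d\<close>
     (\<forall>d\<in>D. (lab d = lab (sigma d)) \<noteq> (lab (alpha d) = lab (sigma (alpha d)))) \<and>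
     \<comment> \<open>(G3), all faces including the outer one\<close>
     (\<forall>f \<in> map_faces D alpha sigma. two_intervals (sigma \<circ> alpha) f lab)"

text \<open>T i: edges of color i, oriented towards the endpoint where the two labels
coincide.  The edge {d, alpha d} whose labels coincide at the tail of d is the arc
from the vertex of alpha d to the vertex of d.\<close>
definition colored_arcs ::
  "'d set \<Rightarrow> ('d \<Rightarrow> 'd) \<Rightarrow> ('d \<Rightarrow> 'd) \<Rightarrow> ('d \<Rightarrow> nat) \<Rightarrow> nat \<Rightarrow> ('d set \<times> 'd set) set" where
  "colored_arcs D alpha sigma lab i =
     {(orb sigma (alpha d), orb sigma d) | d. d \<in> D \<and> lab d = lab (sigma d) \<and> lab d = i}"

end

theory Submission
  imports Defs
begin

definition permS :: "('a \<Rightarrow> 'a) \<Rightarrow> 'a set \<Rightarrow> bool" where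
  "permS p S \<longleftrightarrow> finite S \<and> bij_betw p S S"

definition zc :: "('a \<Rightarrow> 'a) \<Rightarrow> 'a set \<Rightarrow> nat" where
  "zc p S = card (orb p ` S)"

lemma orb_self: "x \<in> orb p x"
  unfolding orb_def by (auto intro: exI[of _ 0])

lemma orb_iter: "(p ^^ n) x \<in> orb p x"
  unfolding orb_def by auto

lemma orb_step_in: "y \<in> orb p x \<Longrightarrow> p y \<in> orb p x"
proof -
  assume "y \<in> orb p x"
  then obtain n where "y = (p ^^ n) x" unfolding orb_def by auto
  hence "p y = (p ^^ Suc n) x" by simp
  thus ?thesis unfolding orb_def by blast
qed

lemma orb_closed_min:
  assumes "\<And>z. z \<in> T \<Longrightarrow> p z \<in> T" "x \<in> T"
  shows "orb p x \<subseteq> T"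
proof -
  have "(p ^^ n) x \<in> T" for n by (induct n) (use assms in auto)
  thus ?thesis unfolding orb_def by auto
qed

lemma orb_trans: "y \<in> orb p x \<Longrightarrow> orb p y \<subseteq> orb p x"
  by (rule orb_closed_min) (auto intro: orb_step_in)

lemma permS_mem: "permS p S \<Longrightarrow> x \<in> S \<Longrightarrow> p x \<in> S"
  unfolding permS_def bij_betw_def by auto

lemma permS_funpow_mem: "permS p S \<Longrightarrow> x \<in> S \<Longrightarrow> (p ^^ n) x \<in> S"
  by (induct n) (auto intro: permS_mem)

lemma orb_sub: "permS p S \<Longrightarrow> x \<in> S \<Longrightarrow> orb p x \<subseteq> S"
  by (rule orb_closed_min) (auto intro: permS_mem)

lemma permS_periodic:
  assumes "permS p S" "x \<in> S"
  shows "\<exists>n>0. (p ^^ n) x = x"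
proof -
  have fin: "finite S" and bij: "bij_betw p S S" using assms unfolding permS_def by auto
  have "\<not> inj_on (\<lambda>n. (p ^^ n) x) {0..card S}"
  proof
    assume inj: "inj_on (\<lambda>n. (p ^^ n) x) {0..card S}"
    have "(\<lambda>n. (p ^^ n) x) ` {0..card S} \<subseteq> S" using permS_funpow_mem[OF assms(1,2)] by auto
    hence "card ((\<lambda>n. (p ^^ n) x) ` {0..card S}) \<le> card S" using fin by (simp add: card_mono)
    with card_image[OF inj] show False by simp
  qed
  then obtain i j where ij: "i \<le> card S" "j \<le> card S" "i \<noteq> j" "(p ^^ i) x = (p ^^ j) x"
    unfolding inj_on_def by auto
  { fix i j assume "i < j" "(p ^^ i) x = (p ^^ j) x"
    hence "(p ^^ i) ((p ^^ (j - i)) x) = (p ^^ i) x"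
    proof -
      have "(p ^^ i) ((p ^^ (j - i)) x) = (p ^^ (i + (j - i))) x" by (simp add: funpow_add)
      thus ?thesis using \<open>i < j\<close> \<open>(p ^^ i) x = (p ^^ j) x\<close> by simp
    qed
    moreover have "inj_on (p ^^ i) S" using bij_betw_funpow[OF bij] bij_betw_def by blast
    moreover have "(p ^^ (j - i)) x \<in> S" by (rule permS_funpow_mem[OF assms])
    ultimately have "(p ^^ (j - i)) x = x" using assms(2) unfolding inj_on_def by blast
    hence "\<exists>n>0. (p ^^ n) x = x" using \<open>i < j\<close> by (intro exI[of _ "j - i"]) auto }
  note * = this
  show ?thesis
  proof (cases "i < j")
    case True thus ?thesis using * ij by blast
  next
    case False hence "j < i" using ij(3) by linarith
    thus ?thesis using * ij(4) by metis
  qed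
qed

lemma orb_sym:
  assumes "permS p S" "x \<in> S" "y \<in> orb p x"
  shows "x \<in> orb p y"
proof -
  obtain n where y: "y = (p ^^ n) x" using assms(3) unfolding orb_def by auto
  obtain m where m: "m > 0" "(p ^^ m) x = x" using permS_periodic[OF assms(1,2)] by auto
  have per: "(p ^^ (m * k)) x = x" for k
  proof (induct k)
    case (Suc k)
    have e: "m * Suc k = m * k + m" by simp
    have "(p ^^ (m * Suc k)) x = (p ^^ (m * k)) ((p ^^ m) x)"
      unfolding e funpow_add by simp
    thus ?case using Suc m(2) by simp
  qed simp
  have "m * n \<ge> n" using m(1) by simp
  hence e: "m * n = (m * n - n) + n" by simp
  have "(p ^^ (m * n - n)) y = (p ^^ (m * n)) x"
    unfolding y by (subst e) (simp only: funpow_add o_apply)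
  hence "(p ^^ (m * n - n)) y = x" using per[of n] by simp
  thus ?thesis unfolding orb_def by blast
qed

lemma orb_eq:
  assumes "permS p S" "x \<in> S" "y \<in> orb p x"
  shows "orb p y = orb p x"
  using orb_trans[OF assms(3)] orb_trans[OF orb_sym[OF assms]] by auto

lemma orb_step_eq: "permS p S \<Longrightarrow> x \<in> S \<Longrightarrow> orb p (p x) = orb p x"
  by (rule orb_eq[where S=S]) (auto intro: orb_step_in orb_self)

lemma orb_disj:
  assumes "permS p S" "x \<in> S" "y \<in> S" "orb p x \<inter> orb p y \<noteq> {}"
  shows "orb p x = orb p y"
proof -
  obtain z where "z \<in> orb p x" "z \<in> orb p y" using assms(4) by auto
  thus ?thesis using orb_eq[OF assms(1,2)] orb_eq[OF assms(1,3)] by metis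
qed

lemma orb_cong:
  assumes "\<And>z. z \<in> T \<Longrightarrow> p z \<in> T" "\<And>z. z \<in> T \<Longrightarrow> q z = p z" "x \<in> T"
  shows "orb q x = orb p x"
proof -
  have "(q ^^ n) x = (p ^^ n) x \<and> (p ^^ n) x \<in> T" for n
    by (induct n) (use assms in auto)
  thus ?thesis unfolding orb_def by auto
qed

lemma permS_closed:
  assumes "permS p S" "K \<subseteq> S" "\<And>z. z \<in> K \<Longrightarrow> p z \<in> K"
  shows "permS p K" "\<And>z. z \<in> S - K \<Longrightarrow> p z \<in> S - K" "permS p (S - K)"
proof -
  have fin: "finite S" and bij: "bij_betw p S S" using assms(1) unfolding permS_def by auto
  have inj: "inj_on p S" using bij bij_betw_def by blast
  have finK: "finite K" using fin assms(2) finite_subset by blast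
  have injK: "inj_on p K" using inj assms(2) by (rule inj_on_subset)
  have sub: "p ` K \<subseteq> K" using assms(3) by blast
  have pK: "p ` K = K" by (rule endo_inj_surj[OF finK sub injK])
  show pk: "permS p K" unfolding permS_def bij_betw_def using finK pK injK by blast
  show cl: "\<And>z. z \<in> S - K \<Longrightarrow> p z \<in> S - K"
  proof -
    fix z assume z: "z \<in> S - K"
    hence "p z \<in> S" using permS_mem[OF assms(1)] by blast
    moreover have "p z \<notin> K"
    proof
      assume "p z \<in> K"
      hence "p z \<in> p ` K" using pK by simp
      then obtain y where "y \<in> K" "p z = p y" by blast
      moreover have "y \<in> S" using \<open>y \<in> K\<close> assms(2) by blast
      ultimately have "z = y" using z inj unfolding inj_on_def by blast
      thus False using z \<open>y \<in> K\<close> by blast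
    qed
    ultimately show "p z \<in> S - K" by blast
  qed
  have finSK: "finite (S - K)" using fin by blast
  have injSK: "inj_on p (S - K)" using inj by (rule inj_on_subset) blast
  have subSK: "p ` (S - K) \<subseteq> S - K" using cl by blast
  have "p ` (S - K) = S - K" by (rule endo_inj_surj[OF finSK subSK injSK])
  thus "permS p (S - K)" unfolding permS_def bij_betw_def using finSK injSK by blast
qed

lemma zc_add:
  assumes "permS p S" "K \<subseteq> S" "\<And>z. z \<in> K \<Longrightarrow> p z \<in> K"
  shows "zc p S = zc p K + zc p (S - K)"
proof -
  have fin: "finite S" using assms(1) unfolding permS_def by blast
  have U: "orb p ` S = orb p ` K \<union> orb p ` (S - K)" using assms(2) by blast
  have D: "orb p ` K \<inter> orb p ` (S - K) = {}"
  proof (rule ccontr)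
    assume "orb p ` K \<inter> orb p ` (S - K) \<noteq> {}"
    then obtain x y where xy: "x \<in> K" "y \<in> S - K" "orb p x = orb p y" by blast
    have "y \<in> orb p x" using xy(3) orb_self by metis
    moreover have "orb p x \<subseteq> K" by (rule orb_closed_min[OF assms(3) xy(1)])
    ultimately show False using xy(2) by blast
  qed
  have f1: "finite (orb p ` K)" using fin assms(2) finite_subset by blast
  have f2: "finite (orb p ` (S - K))" using fin by blast
  show ?thesis unfolding zc_def U using card_Un_disjoint[OF f1 f2 D] by simp
qed

lemma sum_orbits:
  assumes "permS p S"
  shows "sum f S = (\<Sum>B\<in>orb p ` S. sum f B)"
proof -
  have fin: "finite S" using assms unfolding permS_def by blast
  have U: "\<Union>(orb p ` S) = S"
  proof
    show "\<Union>(orb p ` S) \<subseteq> S" using orb_sub[OF assms] by blast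
    show "S \<subseteq> \<Union>(orb p ` S)" using orb_self[of _ p] by blast
  qed
  have F: "\<forall>A\<in>orb p ` S. finite A" using orb_sub[OF assms] fin finite_subset by blast
  have Dj: "\<forall>A\<in>orb p ` S. \<forall>B\<in>orb p ` S. A \<noteq> B \<longrightarrow> A \<inter> B = {}"
  proof (intro ballI impI)
    fix A B assume "A \<in> orb p ` S" "B \<in> orb p ` S" "A \<noteq> B"
    then obtain x y where "x \<in> S" "y \<in> S" "A = orb p x" "B = orb p y" by blast
    thus "A \<inter> B = {}" using orb_disj[OF assms, of x y] \<open>A \<noteq> B\<close> by blast
  qed
  have "sum f (\<Union>(orb p ` S)) = sum (sum f) (orb p ` S)"
    using sum.Union_disjoint[OF F Dj] by simp
  thus ?thesis using U by simp
qed

definition swp :: "'a \<Rightarrow> 'a \<Rightarrow> 'a \<Rightarrow> 'a" where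
  "swp a b x = (if x = a then b else if x = b then a else x)"

lemma swp_bij: "a \<in> S \<Longrightarrow> b \<in> S \<Longrightarrow> bij_betw (swp a b) S S"
proof -
  assume ab: "a \<in> S" "b \<in> S"
  have inv: "swp a b (swp a b x) = x" for x unfolding swp_def by auto
  have inj: "inj_on (swp a b) S"
  proof (rule inj_onI)
    fix x y assume "swp a b x = swp a b y"
    hence "swp a b (swp a b x) = swp a b (swp a b y)" by simp
    thus "x = y" using inv by simp
  qed
  have "swp a b ` S \<subseteq> S" using ab unfolding swp_def by auto
  moreover have "S \<subseteq> swp a b ` S"
  proof
    fix x assume "x \<in> S"
    moreover have "swp a b x \<in> S" using ab \<open>x \<in> S\<close> unfolding swp_def by auto
    ultimately show "x \<in> swp a b ` S" using inv[of x] image_eqI[of x "swp a b" "swp a b x" S] by simp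
  qed
  ultimately show ?thesis using inj unfolding bij_betw_def by blast
qed

lemma permS_swap:
  assumes "permS p S" "a \<in> S" "b \<in> S"
  shows "permS (p \<circ> swp a b) S"
  using assms swp_bij[OF assms(2,3)] unfolding permS_def by (auto intro: bij_betw_trans)

lemma card_merge:
  assumes fin: "finite S" and ab: "a \<in> S" "b \<in> S" "f a \<noteq> f b"
    and self: "\<And>x. x \<in> S \<Longrightarrow> x \<in> f x"
    and cls: "\<And>x y. x \<in> S \<Longrightarrow> y \<in> f x \<Longrightarrow> f y = f x"
    and g: "\<And>x. x \<in> S \<Longrightarrow> g x = (if x \<in> f a \<union> f b then f a \<union> f b else f x)"
  shows "card (f ` S) = card (g ` S) + 1"
proof -
  define U where "U = f a \<union> f b"
  define R where "R = S - U"
  have gS: "g ` S = insert U (f ` R)"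
  proof
    show "g ` S \<subseteq> insert U (f ` R)" using g unfolding U_def R_def by auto
    show "insert U (f ` R) \<subseteq> g ` S"
    proof -
      have "g a = U" using g ab self unfolding U_def by auto
      hence "U \<in> g ` S" using ab by (metis imageI)
      moreover have "f ` R \<subseteq> g ` S"
      proof
        fix X assume "X \<in> f ` R"
        then obtain x where "x \<in> R" "X = f x" by blast
        hence "g x = X" "x \<in> S" using g unfolding R_def U_def by auto
        thus "X \<in> g ` S" by (metis imageI)
      qed
      ultimately show ?thesis by blast
    qed
  qed
  have fS: "f ` S = insert (f a) (insert (f b) (f ` R))"
  proof
    show "f ` S \<subseteq> insert (f a) (insert (f b) (f ` R))"
    proof
      fix X assume "X \<in> f ` S"
      then obtain x where x: "x \<in> S" "X = f x" by blast
      show "X \<in> insert (f a) (insert (f b) (f ` R))"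
      proof (cases "x \<in> U")
        case True
        hence "f x = f a \<or> f x = f b" using cls ab unfolding U_def by blast
        thus ?thesis using x by blast
      next
        case False thus ?thesis using x unfolding R_def by blast
      qed
    qed
    show "insert (f a) (insert (f b) (f ` R)) \<subseteq> f ` S" using ab unfolding R_def by blast
  qed
  have nR: "f x \<noteq> f a" "f x \<noteq> f b" "f x \<noteq> U" if "x \<in> R" for x
  proof -
    have xS: "x \<in> S" "x \<notin> U" using that unfolding R_def by auto
    show "f x \<noteq> f a" using self[OF xS(1)] xS(2) unfolding U_def by blast
    show "f x \<noteq> f b" using self[OF xS(1)] xS(2) unfolding U_def by blast
    show "f x \<noteq> U" using self[OF xS(1)] xS(2) by blast
  qed
  have finR: "finite (f ` R)" using fin unfolding R_def by blast
  have "card (g ` S) = card (f ` R) + 1" unfolding gS using finR nR(3) by (auto simp: card_insert_if)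
  moreover have "card (f ` S) = card (f ` R) + 2" unfolding fS using finR nR(1,2) ab(3)
    by (auto simp: card_insert_if)
  ultimately show ?thesis by simp
qed

lemma card_split:
  assumes fin: "finite S" and a: "a \<in> S"
    and self: "\<And>x. x \<in> S \<Longrightarrow> x \<in> f x"
    and cls: "\<And>x y. x \<in> S \<Longrightarrow> y \<in> f x \<Longrightarrow> f y = f x"
    and g1: "\<And>x. x \<in> S \<Longrightarrow> x \<notin> f a \<Longrightarrow> g x = f x"
    and g2: "\<And>x. x \<in> S \<Longrightarrow> x \<in> f a \<Longrightarrow> g x = A \<or> g x = B"
  shows "card (g ` S) \<le> card (f ` S) + 1"
proof -
  define R where "R = S - f a"
  have "g ` S \<subseteq> insert A (insert B (f ` R))"
  proof
    fix X assume "X \<in> g ` S"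
    then obtain x where x: "x \<in> S" "X = g x" by blast
    show "X \<in> insert A (insert B (f ` R))"
    proof (cases "x \<in> f a")
      case True
      hence "g x = A \<or> g x = B" using g2 x(1) by blast
      thus ?thesis using x(2) by blast
    next
      case False
      hence "g x = f x" using g1 x(1) by blast
      moreover have "x \<in> R" using False x(1) unfolding R_def by blast
      ultimately show ?thesis using x(2) by blast
    qed
  qed
  moreover have "finite (insert A (insert B (f ` R)))" using fin unfolding R_def by blast
  ultimately have "card (g ` S) \<le> card (insert A (insert B (f ` R)))"
    by (rule card_mono[rotated])
  also have "\<dots> \<le> card (f ` R) + 2"
  proof -
    have fR: "finite (f ` R)" using fin unfolding R_def by blast
    have "card (insert B (f ` R)) \<le> card (f ` R) + 1" using fR by (simp add: card_insert_if)
    moreover have "card (insert A (insert B (f ` R))) \<le> card (insert B (f ` R)) + 1"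
      using fR by (simp add: card_insert_if)
    ultimately show ?thesis by linarith
  qed
  also have "card (f ` S) = card (f ` R) + 1"
  proof -
    have "f ` S = insert (f a) (f ` R)"
    proof
      show "f ` S \<subseteq> insert (f a) (f ` R)"
      proof
        fix X assume "X \<in> f ` S"
        then obtain x where x: "x \<in> S" "X = f x" by blast
        show "X \<in> insert (f a) (f ` R)"
        proof (cases "x \<in> f a")
          case True thus ?thesis using cls[OF a True] x(2) by blast
        next
          case False thus ?thesis using x unfolding R_def by blast
        qed
      qed
      show "insert (f a) (f ` R) \<subseteq> f ` S" using a unfolding R_def by blast
    qed
    moreover have "f a \<notin> f ` R"
    proof
      assume "f a \<in> f ` R"
      then obtain x where "x \<in> R" "f a = f x" by blast
      thus False using self[of x] unfolding R_def by auto
    qed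
    ultimately show ?thesis using fin unfolding R_def by simp
  qed
  ultimately show ?thesis by linarith
qed

lemma swp_simps: "swp a b a = b" "swp a b b = a" "z \<noteq> a \<Longrightarrow> z \<noteq> b \<Longrightarrow> swp a b z = z"
  unfolding swp_def by auto

lemma orb_avoid_cong:
  assumes perm: "permS p S" and x: "x \<in> S" and av: "a \<notin> orb p x" "b \<notin> orb p x"
  shows "orb (p \<circ> swp a b) x = orb p x"
proof (rule orb_cong[where T="orb p x"])
  show "\<And>z. z \<in> orb p x \<Longrightarrow> p z \<in> orb p x" by (rule orb_step_in)
  show "\<And>z. z \<in> orb p x \<Longrightarrow> (p \<circ> swp a b) z = p z"
  proof -
    fix z assume "z \<in> orb p x"
    hence "z \<noteq> a" "z \<noteq> b" using av by auto
    thus "(p \<circ> swp a b) z = p z" by (simp add: swp_simps)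
  qed
  show "x \<in> orb p x" by (rule orb_self)
qed

lemma orb_swap_merge:
  assumes perm: "permS p S" and ab: "a \<in> S" "b \<in> S" "a \<noteq> b" and nb: "b \<notin> orb p a"
  shows "zc p S = zc (p \<circ> swp a b) S + 1"
proof -
  define q where "q = p \<circ> swp a b"
  have qa: "q a = p b" and qb: "q b = p a" and qz: "\<And>z. z \<noteq> a \<Longrightarrow> z \<noteq> b \<Longrightarrow> q z = p z"
    unfolding q_def by (auto simp: swp_simps)
  have permq: "permS q S" unfolding q_def by (rule permS_swap[OF perm ab(1,2)])
  have na: "a \<notin> orb p b"
  proof
    assume "a \<in> orb p b"
    hence "b \<in> orb p a" by (rule orb_sym[OF perm ab(2)])
    thus False using nb by simp
  qed
  define U where "U = orb p a \<union> orb p b"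
  have Ucl: "q z \<in> U" if "z \<in> U" for z
  proof (cases "z = a")
    case True thus ?thesis using qa orb_step_in[OF orb_self[of b p]] unfolding U_def by auto
  next
    case False
    show ?thesis
    proof (cases "z = b")
      case True thus ?thesis using qb orb_step_in[OF orb_self[of a p]] unfolding U_def by auto
    next
      case False2: False
      hence "q z = p z" using qz False by blast
      thus ?thesis using that orb_step_in[of z p a] orb_step_in[of z p b] unfolding U_def by auto
    qed
  qed
  have b_in: "b \<in> orb q a"
  proof (rule ccontr)
    assume nbq: "b \<notin> orb q a"
    define T where "T = orb q a \<inter> orb p b"
    have Tcl: "p z \<in> T" if "z \<in> T" for z
    proof -
      have "z \<noteq> a" using that na unfolding T_def by blast
      moreover have "z \<noteq> b" using that nbq unfolding T_def by blast
      ultimately have "p z = q z" using qz by simp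
      thus ?thesis using that orb_step_in[of z q a] orb_step_in[of z p b] unfolding T_def by auto
    qed
    have pbT: "p b \<in> T" unfolding T_def using qa orb_step_in[OF orb_self[of a q]]
        orb_step_in[OF orb_self[of b p]] by auto
    have "orb p (p b) \<subseteq> T" using orb_closed_min[of T p "p b"] Tcl pbT by blast
    moreover have "orb p (p b) = orb p b" by (rule orb_step_eq[OF perm ab(2)])
    ultimately have "b \<in> T" using orb_self[of b p] by blast
    thus False using nbq unfolding T_def by blast
  qed
  have U_sub: "U \<subseteq> orb q a"
  proof -
    define T where "T = orb q a \<inter> U"
    have Tcl: "p z \<in> T" if "z \<in> T" for z
    proof (cases "z = a")
      case True
      have "q b \<in> orb q a" by (rule orb_step_in[OF b_in])
      thus ?thesis using True qb orb_step_in[OF orb_self[of a p]] unfolding T_def U_def by auto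
    next
      case False
      show ?thesis
      proof (cases "z = b")
        case True
        have "q a \<in> orb q a" by (rule orb_step_in[OF orb_self])
        thus ?thesis using True qa orb_step_in[OF orb_self[of b p]] unfolding T_def U_def by auto
      next
        case False2: False
        hence "p z = q z" using qz False by simp
        thus ?thesis using that orb_step_in[of z q a] orb_step_in[of z p a] orb_step_in[of z p b]
          unfolding T_def U_def by auto
      qed
    qed
    have aT: "a \<in> T" unfolding T_def U_def using orb_self[of a q] orb_self[of a p] by auto
    have bT: "b \<in> T" unfolding T_def U_def using b_in orb_self[of b p] by auto
    have "orb p a \<subseteq> T" by (rule orb_closed_min[OF Tcl aT])
    moreover have "orb p b \<subseteq> T" by (rule orb_closed_min[OF Tcl bT])
    ultimately show ?thesis unfolding T_def U_def by blast
  qed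
  have qaU: "orb q a = U"
  proof
    have "a \<in> U" unfolding U_def using orb_self[of a p] by blast
    thus "orb q a \<subseteq> U" using orb_closed_min[of U q a] Ucl by blast
    show "U \<subseteq> orb q a" by (rule U_sub)
  qed
  have g: "orb q x = (if x \<in> orb p a \<union> orb p b then orb p a \<union> orb p b else orb p x)" if x: "x \<in> S" for x
  proof (cases "x \<in> U")
    case True
    hence "orb q x = orb q a" using orb_eq[OF permq ab(1)] qaU by blast
    thus ?thesis using True qaU unfolding U_def by simp
  next
    case False
    have "a \<notin> orb p x"
    proof
      assume "a \<in> orb p x"
      hence "orb p a = orb p x" by (rule orb_eq[OF perm x])
      thus False using False orb_self[of x p] unfolding U_def by blast
    qed
    moreover have "b \<notin> orb p x"
    proof
      assume "b \<in> orb p x"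
      hence "orb p b = orb p x" by (rule orb_eq[OF perm x])
      thus False using False orb_self[of x p] unfolding U_def by blast
    qed
    ultimately have "orb q x = orb p x" unfolding q_def by (rule orb_avoid_cong[OF perm x])
    thus ?thesis using False unfolding U_def by simp
  qed
  have "card (orb p ` S) = card (orb q ` S) + 1"
  proof (rule card_merge[where a=a and b=b])
    show "finite S" using perm unfolding permS_def by blast
    show "a \<in> S" "b \<in> S" by (rule ab)+
    show "orb p a \<noteq> orb p b" using nb orb_self[of b p] by blast
    show "\<And>x. x \<in> S \<Longrightarrow> x \<in> orb p x" by (rule orb_self)
    show "\<And>x y. x \<in> S \<Longrightarrow> y \<in> orb p x \<Longrightarrow> orb p y = orb p x" by (rule orb_eq[OF perm])
    show "\<And>x. x \<in> S \<Longrightarrow> orb q x = (if x \<in> orb p a \<union> orb p b then orb p a \<union> orb p b else orb p x)"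
      by (rule g)
  qed
  thus ?thesis unfolding zc_def q_def by simp
qed

lemma orb_swap_split:
  assumes perm: "permS p S" and ab: "a \<in> S" "b \<in> S" "a \<noteq> b"
  shows "zc (p \<circ> swp a b) S \<le> zc p S + 1"
proof (cases "b \<in> orb p a")
  case False thus ?thesis using orb_swap_merge[OF perm ab False] by simp
next
  case True
  define q where "q = p \<circ> swp a b"
  have qa: "q a = p b" and qb: "q b = p a" and qz: "\<And>z. z \<noteq> a \<Longrightarrow> z \<noteq> b \<Longrightarrow> q z = p z"
    unfolding q_def by (auto simp: swp_simps)
  have permq: "permS q S" unfolding q_def by (rule permS_swap[OF perm ab(1,2)])
  have ob: "orb p b = orb p a" by (rule orb_eq[OF perm ab(1) True])
  have "card (orb q ` S) \<le> card (orb p ` S) + 1"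
  proof (rule card_split[where a=a and A="orb q a" and B="orb q b"])
    show "finite S" using perm unfolding permS_def by blast
    show "a \<in> S" by (rule ab)
    show "\<And>x. x \<in> S \<Longrightarrow> x \<in> orb p x" by (rule orb_self)
    show "\<And>x y. x \<in> S \<Longrightarrow> y \<in> orb p x \<Longrightarrow> orb p y = orb p x" by (rule orb_eq[OF perm])
    show "orb q x = orb p x" if x: "x \<in> S" and nx: "x \<notin> orb p a" for x
    proof -
      have "a \<notin> orb p x"
      proof
        assume "a \<in> orb p x"
        hence "orb p a = orb p x" by (rule orb_eq[OF perm x])
        thus False using nx orb_self[of x p] by blast
      qed
      moreover have "b \<notin> orb p x"
      proof
        assume "b \<in> orb p x"
        hence "orb p b = orb p x" by (rule orb_eq[OF perm x])
        thus False using nx ob orb_self[of x p] by blast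
      qed
      ultimately show "orb q x = orb p x" unfolding q_def by (rule orb_avoid_cong[OF perm x])
    qed
    show "orb q x = orb q a \<or> orb q x = orb q b" if x: "x \<in> S" and xa: "x \<in> orb p a" for x
    proof -
      define T where "T = (orb q a \<union> orb q b) \<inter> orb p a"
      have Tcl: "p z \<in> T" if "z \<in> T" for z
      proof (cases "z = a")
        case True
        thus ?thesis using qb orb_step_in[OF orb_self[of b q]] orb_step_in[OF orb_self[of a p]]
          unfolding T_def by auto
      next
        case False
        show ?thesis
        proof (cases "z = b")
          case True
          thus ?thesis using qa orb_step_in[OF orb_self[of a q]] orb_step_in[OF \<open>b \<in> orb p a\<close>]
            unfolding T_def by auto
        next
          case False2: False
          hence "p z = q z" using qz False by simp
          thus ?thesis using that orb_step_in[of z q a] orb_step_in[of z q b] orb_step_in[of z p a]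
            unfolding T_def by auto
        qed
      qed
      have aT: "a \<in> T" unfolding T_def using orb_self[of a q] orb_self[of a p] by auto
      have "orb p a \<subseteq> T" by (rule orb_closed_min[OF Tcl aT])
      hence "x \<in> orb q a \<or> x \<in> orb q b" using xa unfolding T_def by blast
      thus ?thesis using orb_eq[OF permq ab(1), of x] orb_eq[OF permq ab(2), of x] by metis
    qed
  qed
  thus ?thesis unfolding zc_def q_def by simp
qed

definition Esym :: "('a \<Rightarrow> 'a) \<Rightarrow> ('a \<Rightarrow> 'a) \<Rightarrow> 'a set \<Rightarrow> ('a \<times> 'a) set" where
  "Esym s b S = {(z, s z) | z. z \<in> S} \<union> {(s z, z) | z. z \<in> S} \<union> {(z, b z) | z. z \<in> S} \<union> {(b z, z) | z. z \<in> S}"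

definition comp :: "('a \<Rightarrow> 'a) \<Rightarrow> ('a \<Rightarrow> 'a) \<Rightarrow> 'a set \<Rightarrow> 'a \<Rightarrow> 'a set" where
  "comp s b S x = (Esym s b S)\<^sup>* `` {x}"

lemma sym_Esym: "sym (Esym s b S)"
  unfolding Esym_def sym_def by blast

lemma rtrancl_sym_sym: "sym E \<Longrightarrow> (x, y) \<in> E\<^sup>* \<Longrightarrow> (y, x) \<in> E\<^sup>*"
  by (metis sym_rtrancl symE)

lemma rtrancl_add_edge:
  assumes sE: "sym E"
  shows "(E \<union> {(a,b),(b,a)})\<^sup>* `` {x} =
    (if x \<in> E\<^sup>* `` {a} \<union> E\<^sup>* `` {b} then E\<^sup>* `` {a} \<union> E\<^sup>* `` {b} else E\<^sup>* `` {x})"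
    (is "?L = ?R")
proof
  define E' where "E' = E \<union> {(a,b),(b,a)}"
  have mono: "E\<^sup>* \<subseteq> E'\<^sup>*" unfolding E'_def by (rule rtrancl_mono) blast
  have ab: "(a, b) \<in> E'\<^sup>*" "(b, a) \<in> E'\<^sup>*" unfolding E'_def by auto
  show "?L \<subseteq> ?R"
  proof
    fix y assume "y \<in> ?L"
    hence "(x, y) \<in> E'\<^sup>*" unfolding E'_def by simp
    thus "y \<in> ?R"
    proof (induct rule: rtrancl_induct)
      case base thus ?case by auto
    next
      case (step y z)
      show ?case
      proof (cases "x \<in> E\<^sup>* `` {a} \<union> E\<^sup>* `` {b}")
        case True
        hence yU: "y \<in> E\<^sup>* `` {a} \<union> E\<^sup>* `` {b}" using step(3) by simp
        have "z \<in> E\<^sup>* `` {a} \<union> E\<^sup>* `` {b}"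
          using step(2) unfolding E'_def
        proof
          assume "(y, z) \<in> E"
          thus ?thesis using yU by (auto intro: rtrancl_into_rtrancl)
        next
          assume "(y, z) \<in> {(a,b),(b,a)}"
          thus ?thesis by auto
        qed
        thus ?thesis using True by simp
      next
        case False
        hence yx: "y \<in> E\<^sup>* `` {x}" using step(3) by simp
        have "z \<in> E\<^sup>* `` {x}"
          using step(2) unfolding E'_def
        proof
          assume "(y, z) \<in> E"
          thus ?thesis using yx by (auto intro: rtrancl_into_rtrancl)
        next
          assume yz: "(y, z) \<in> {(a,b),(b,a)}"
          hence "y = a \<or> y = b" by auto
          hence "(y, x) \<in> E\<^sup>*" using yx rtrancl_sym_sym[OF sE] by blast
          hence "x \<in> E\<^sup>* `` {a} \<union> E\<^sup>* `` {b}" using \<open>y = a \<or> y = b\<close> by blast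
          thus ?thesis using False by blast
        qed
        thus ?thesis using False by simp
      qed
    qed
  qed
  show "?R \<subseteq> ?L"
  proof (cases "x \<in> E\<^sup>* `` {a} \<union> E\<^sup>* `` {b}")
    case True
    hence "(x, a) \<in> E'\<^sup>*"
    proof
      assume "x \<in> E\<^sup>* `` {a}"
      hence "(x, a) \<in> E\<^sup>*" using rtrancl_sym_sym[OF sE] by blast
      thus ?thesis using mono by blast
    next
      assume "x \<in> E\<^sup>* `` {b}"
      hence "(x, b) \<in> E\<^sup>*" using rtrancl_sym_sym[OF sE] by blast
      thus ?thesis using mono ab(2) by (meson rtrancl_trans subsetD)
    qed
    moreover have "(a, y) \<in> E'\<^sup>*" if "y \<in> E\<^sup>* `` {a} \<union> E\<^sup>* `` {b}" for y
      using that mono ab(1) by (meson Image_singleton_iff UnE rtrancl_trans subsetD)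
    ultimately show ?thesis using True unfolding E'_def by (auto intro: rtrancl_trans)
  next
    case False thus ?thesis using mono unfolding E'_def by auto
  qed
qed


lemma comp_sub:
  assumes "\<And>z. z \<in> S \<Longrightarrow> s z \<in> S" "\<And>z. z \<in> S \<Longrightarrow> b z \<in> S" "x \<in> S"
  shows "comp s b S x \<subseteq> S"
proof
  fix y assume "y \<in> comp s b S x"
  hence "(x, y) \<in> (Esym s b S)\<^sup>*" unfolding comp_def by simp
  thus "y \<in> S"
    by (induct rule: rtrancl_induct) (use assms in \<open>auto simp: Esym_def\<close>)
qed

lemma comp_self: "x \<in> comp s b S x"
  unfolding comp_def by simp

lemma comp_eq:
  assumes "y \<in> comp s b S x"
  shows "comp s b S y = comp s b S x"
proof -
  have xy: "(x, y) \<in> (Esym s b S)\<^sup>*" using assms unfolding comp_def by simp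
  have yx: "(y, x) \<in> (Esym s b S)\<^sup>*" by (rule rtrancl_sym_sym[OF sym_Esym xy])
  show ?thesis unfolding comp_def using xy yx by (auto intro: rtrancl_trans)
qed

lemma comp_step:
  assumes "y \<in> comp s b S x" "y \<in> S"
  shows "s y \<in> comp s b S x" "b y \<in> comp s b S x"
proof -
  have "(y, s y) \<in> Esym s b S" "(y, b y) \<in> Esym s b S" using assms(2) unfolding Esym_def by blast+
  thus "s y \<in> comp s b S x" "b y \<in> comp s b S x" using assms(1) unfolding comp_def
    by (auto intro: rtrancl_into_rtrancl)
qed

definition alphaP :: "('a \<Rightarrow> 'a) \<Rightarrow> 'a set set \<Rightarrow> 'a \<Rightarrow> 'a" where
  "alphaP a P z = (if z \<in> \<Union>P then a z else z)"

lemma RH: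
  assumes perm: "permS s S"
    and inv: "\<And>x. x \<in> S \<Longrightarrow> a x \<in> S \<and> a x \<noteq> x \<and> a (a x) = x"
    and ne: "S \<noteq> {}"
    and conn: "\<And>x y. x \<in> S \<Longrightarrow> y \<in> S \<Longrightarrow> (x, y) \<in> (Esym s a S)\<^sup>*"
  shows "zc s S + zc (s \<circ> a) S \<le> zc a S + 2"
proof -
  have fin: "finite S" using perm unfolding permS_def by blast
  have sS: "\<And>z. z \<in> S \<Longrightarrow> s z \<in> S" using permS_mem[OF perm] by blast
  define Pairs where "Pairs = (\<lambda>z. {z, a z}) ` S"
  have finP: "finite Pairs" unfolding Pairs_def using fin by blast
  have aP_S: "alphaP a P z \<in> S" if "z \<in> S" for P z
    using inv[OF that] that unfolding alphaP_def by auto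
  have aP_inv: "alphaP a P (alphaP a P z) = z" if zS: "z \<in> S" and PP: "P \<subseteq> Pairs" for P z
  proof (cases "z \<in> \<Union>P")
    case True
    then obtain w where "w \<in> S" "z \<in> {w, a w}" "{w, a w} \<in> P" using PP unfolding Pairs_def by blast
    hence "a z \<in> {w, a w}" using inv[OF \<open>w \<in> S\<close>] by auto
    hence "a z \<in> \<Union>P" using \<open>{w, a w} \<in> P\<close> by blast
    thus ?thesis using True inv[OF zS] unfolding alphaP_def by simp
  next
    case False thus ?thesis unfolding alphaP_def by simp
  qed
  have perm_aP: "permS (alphaP a P) S" if "P \<subseteq> Pairs" for P
  proof -
    have inj: "inj_on (alphaP a P) S"
    proof (rule inj_onI)
      fix x y assume "x \<in> S" "y \<in> S" "alphaP a P x = alphaP a P y"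
      thus "x = y" using aP_inv[OF _ that] by metis
    qed
    have "alphaP a P ` S = S"
    proof
      show "alphaP a P ` S \<subseteq> S" using aP_S by blast
      show "S \<subseteq> alphaP a P ` S"
      proof
        fix x assume x: "x \<in> S"
        have "x = alphaP a P (alphaP a P x)" using aP_inv[OF x that] by simp
        thus "x \<in> alphaP a P ` S" using aP_S[OF x] by blast
      qed
    qed
    thus ?thesis using inj fin unfolding permS_def bij_betw_def by blast
  qed
  have perm_sP: "permS (s \<circ> alphaP a P) S" if "P \<subseteq> Pairs" for P
    using perm perm_aP[OF that] unfolding permS_def by (auto intro: bij_betw_trans)
  have comp_sub': "comp s (alphaP a P) S x \<subseteq> S" if "x \<in> S" for P x
    by (rule comp_sub[OF sS aP_S that])
  have orb_comp: "orb (s \<circ> alphaP a P) x \<subseteq> comp s (alphaP a P) S x" if "x \<in> S" for P x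
  proof (rule orb_closed_min)
    show "x \<in> comp s (alphaP a P) S x" by (rule comp_self)
    fix z assume z: "z \<in> comp s (alphaP a P) S x"
    have zS: "z \<in> S" using z comp_sub'[OF that] by blast
    have "alphaP a P z \<in> comp s (alphaP a P) S x" by (rule comp_step(2)[OF z zS])
    thus "(s \<circ> alphaP a P) z \<in> comp s (alphaP a P) S x"
      using comp_step(1)[OF _ aP_S[OF zS]] by simp
  qed
  have main: "P \<subseteq> Pairs \<Longrightarrow> zc (s \<circ> alphaP a P) S + zc s S \<le> card P + 2 * card (comp s (alphaP a P) S ` S)"
    if "finite P" for P
    using that
  proof (induct P rule: finite_induct)
    case empty
    have id: "alphaP a {} = id" unfolding alphaP_def by auto
    have "comp s id S x = orb s x" if x: "x \<in> S" for x
    proof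
      show "comp s id S x \<subseteq> orb s x"
      proof
        fix y assume "y \<in> comp s id S x"
        hence "(x, y) \<in> (Esym s id S)\<^sup>*" unfolding comp_def by simp
        thus "y \<in> orb s x"
        proof (induct rule: rtrancl_induct)
          case base thus ?case by (rule orb_self)
        next
          case (step y z)
          from step(2) show ?case unfolding Esym_def
          proof (elim UnE CollectE exE conjE)
            fix w assume "(y, z) = (w, s w)" thus ?thesis using orb_step_in[OF step(3)] by simp
          next
            fix w assume yz: "(y, z) = (s w, w)" and w: "w \<in> S"
            have "orb s (s w) = orb s w" by (rule orb_step_eq[OF perm w])
            moreover have "orb s y \<subseteq> orb s x" by (rule orb_trans[OF step(3)])
            ultimately show ?thesis using yz orb_self[of w s] by auto
          next
            fix w assume "(y, z) = (w, id w)" thus ?thesis using step(3) by simp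
          next
            fix w assume "(y, z) = (id w, w)" thus ?thesis using step(3) by simp
          qed
        qed
      qed
      show "orb s x \<subseteq> comp s id S x"
      proof
        fix y assume "y \<in> orb s x"
        then obtain n where y: "y = (s ^^ n) x" unfolding orb_def by blast
        have "(s ^^ n) x \<in> comp s id S x \<and> (s ^^ n) x \<in> S" for n
        proof (induct n)
          case 0 thus ?case using comp_self x by simp
        next
          case (Suc n)
          thus ?case using comp_step(1)[of "(s ^^ n) x"] sS by simp
        qed
        thus "y \<in> comp s id S x" using y by blast
      qed
    qed
    hence "comp s id S ` S = orb s ` S" by (rule image_cong[OF refl])
    hence ceq: "card (comp s id S ` S) = card (orb s ` S)" by simp
    show ?case unfolding id zc_def comp_id ceq by simp
  next
    case (insert p P)
    have PP: "P \<subseteq> Pairs" and pP: "p \<in> Pairs" using insert(4) by auto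
    have IH: "zc (s \<circ> alphaP a P) S + zc s S \<le> card P + 2 * card (comp s (alphaP a P) S ` S)"
      using insert(3) PP by blast
    obtain x0 where x0: "x0 \<in> S" "p = {x0, a x0}" using pP unfolding Pairs_def by blast
    define b where "b = a x0"
    have bS: "b \<in> S" and bx: "b \<noteq> x0" and ab: "a b = x0" using inv[OF x0(1)] unfolding b_def by auto
    have notin: "x0 \<notin> \<Union>P" "b \<notin> \<Union>P"
    proof -
      have *: "q = p" if qP: "q \<in> P" and qq: "x0 \<in> q \<or> b \<in> q" for q
      proof -
        obtain w where w: "w \<in> S" "q = {w, a w}" using qP PP unfolding Pairs_def by blast
        from qq show "q = p"
        proof
          assume "x0 \<in> q"
          hence "x0 = w \<or> x0 = a w" using w by blast
          thus "q = p"
          proof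
            assume "x0 = w" thus "q = p" using w(2) x0(2) by simp
          next
            assume "x0 = a w"
            hence "a x0 = w" using inv[OF w(1)] by simp
            thus "q = p" using w(2) x0(2) \<open>x0 = a w\<close> by (simp add: insert_commute)
          qed
        next
          assume "b \<in> q"
          hence "b = w \<or> b = a w" using w by blast
          thus "q = p"
          proof
            assume "b = w"
            thus "q = p" using w(2) x0(2) ab unfolding b_def by (simp add: insert_commute)
          next
            assume "b = a w"
            hence "w = x0" using inv[OF w(1)] ab by metis
            thus "q = p" using w(2) x0(2) by simp
          qed
        qed
      qed
      show "x0 \<notin> \<Union>P" using * insert(2) by blast
      show "b \<notin> \<Union>P" using * insert(2) by blast
    qed
    have aP_ins: "alphaP a (insert p P) = alphaP a P \<circ> swp x0 b"
    proof
      fix z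
      show "alphaP a (insert p P) z = (alphaP a P \<circ> swp x0 b) z"
      proof (cases "z = x0")
        case True thus ?thesis using notin x0(2) unfolding alphaP_def b_def swp_def by auto
      next
        case False
        show ?thesis
        proof (cases "z = b")
          case True thus ?thesis using notin x0(2) ab bx unfolding alphaP_def swp_def by (auto simp: b_def)
        next
          case False2: False
          thus ?thesis using False x0(2) unfolding alphaP_def swp_def b_def by auto
        qed
      qed
    qed
    define q where "q = s \<circ> alphaP a P"
    have permq: "permS q S" unfolding q_def by (rule perm_sP[OF PP])
    have q_ins: "s \<circ> alphaP a (insert p P) = q \<circ> swp x0 b" unfolding aP_ins q_def by (simp add: comp_assoc)
    define E where "E = Esym s (alphaP a P) S"
    define E' where "E' = Esym s (alphaP a (insert p P)) S"
    have aPx0: "alphaP a P x0 = x0" "alphaP a P b = b" using notin unfolding alphaP_def by auto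
    have aPix0: "alphaP a (insert p P) x0 = b" "alphaP a (insert p P) b = x0"
      using aP_ins aPx0 unfolding swp_def by auto
    have aP_other: "alphaP a (insert p P) z = alphaP a P z" if "z \<noteq> x0" "z \<noteq> b" for z
      using aP_ins that unfolding swp_def by auto
    have E'E: "E'\<^sup>* = (E \<union> {(x0,b),(b,x0)})\<^sup>*"
    proof (rule sym, rule rtrancl_subset)
      show "E' \<subseteq> E \<union> {(x0, b), (b, x0)}"
      proof
        fix e assume "e \<in> E'"
        then consider (s1) z where "z \<in> S" "e = (z, s z)" | (s2) z where "z \<in> S" "e = (s z, z)"
            | (a1) z where "z \<in> S" "e = (z, alphaP a (insert p P) z)"
            | (a2) z where "z \<in> S" "e = (alphaP a (insert p P) z, z)"
          unfolding E'_def Esym_def by blast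
        thus "e \<in> E \<union> {(x0, b), (b, x0)}"
        proof cases
          case s1 thus ?thesis unfolding E_def Esym_def by blast
        next
          case s2 thus ?thesis unfolding E_def Esym_def by blast
        next
          case (a1 z)
          show ?thesis
          proof (cases "z = x0 \<or> z = b")
            case True thus ?thesis using a1 aPix0 by auto
          next
            case False
            hence "e = (z, alphaP a P z)" using a1 aP_other by simp
            thus ?thesis using a1(1) unfolding E_def Esym_def by blast
          qed
        next
          case (a2 z)
          show ?thesis
          proof (cases "z = x0 \<or> z = b")
            case True thus ?thesis using a2 aPix0 by auto
          next
            case False
            hence "e = (alphaP a P z, z)" using a2 aP_other by simp
            thus ?thesis using a2(1) unfolding E_def Esym_def by blast
          qed
        qed
      qed
      show "E \<union> {(x0, b), (b, x0)} \<subseteq> E'\<^sup>*"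
      proof
        fix e assume e: "e \<in> E \<union> {(x0, b), (b, x0)}"
        have x0b: "(x0, b) \<in> E'" "(b, x0) \<in> E'" unfolding E'_def Esym_def using x0(1) aPix0 by auto
        show "e \<in> E'\<^sup>*"
        proof (cases "e \<in> {(x0, b), (b, x0)}")
          case True thus ?thesis using x0b by auto
        next
          case False
          hence "e \<in> E" using e by blast
          then consider (s1) z where "z \<in> S" "e = (z, s z)" | (s2) z where "z \<in> S" "e = (s z, z)"
            | (a1) z where "z \<in> S" "e = (z, alphaP a P z)" | (a2) z where "z \<in> S" "e = (alphaP a P z, z)"
            unfolding E_def Esym_def by blast
          thus ?thesis
          proof cases
            case s1 thus ?thesis unfolding E'_def Esym_def by blast
          next
            case s2 thus ?thesis unfolding E'_def Esym_def by blast
          next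
            case (a1 z)
            show ?thesis
            proof (cases "z = x0 \<or> z = b")
              case True thus ?thesis using a1 aPx0 by auto
            next
              case False
              thus ?thesis using a1 aP_other[of z] unfolding E'_def Esym_def by (auto intro!: r_into_rtrancl)
            qed
          next
            case (a2 z)
            show ?thesis
            proof (cases "z = x0 \<or> z = b")
              case True thus ?thesis using a2 aPx0 by auto
            next
              case False
              thus ?thesis using a2 aP_other[of z] unfolding E'_def Esym_def by (auto intro!: r_into_rtrancl)
            qed
          qed
        qed
      qed
    qed
    have comp_ins: "comp s (alphaP a (insert p P)) S z =
       (if z \<in> comp s (alphaP a P) S x0 \<union> comp s (alphaP a P) S b
        then comp s (alphaP a P) S x0 \<union> comp s (alphaP a P) S b else comp s (alphaP a P) S z)" for z
      unfolding comp_def E'_def[symmetric] E_def[symmetric] E'E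
      by (rule rtrancl_add_edge) (simp add: E_def sym_Esym)
    show ?case
    proof (cases "comp s (alphaP a P) S x0 = comp s (alphaP a P) S b")
      case True
      have "comp s (alphaP a (insert p P)) S z = comp s (alphaP a P) S z" if "z \<in> S" for z
        using comp_ins[of z] True comp_eq[of z s "alphaP a P" S x0] by auto
      hence ceq: "comp s (alphaP a (insert p P)) S ` S = comp s (alphaP a P) S ` S" by (rule image_cong[OF refl])
      have "zc (q \<circ> swp x0 b) S \<le> zc q S + 1" by (rule orb_swap_split[OF permq x0(1) bS bx[symmetric]])
      hence A: "zc (s \<circ> alphaP a (insert p P)) S \<le> zc (s \<circ> alphaP a P) S + 1"
        unfolding q_ins q_def by simp
      have B: "card (insert p P) = card P + 1" using insert(1,2) by simp
      have C: "card (comp s (alphaP a (insert p P)) S ` S) = card (comp s (alphaP a P) S ` S)"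
        using ceq by simp
      show ?thesis using IH A B C by linarith
    next
      case False
      have nb: "b \<notin> orb q x0"
      proof
        assume "b \<in> orb q x0"
        hence "b \<in> comp s (alphaP a P) S x0" using orb_comp[OF x0(1), of P] unfolding q_def by blast
        hence "comp s (alphaP a P) S b = comp s (alphaP a P) S x0" by (rule comp_eq)
        thus False using False by simp
      qed
      have z1: "zc q S = zc (q \<circ> swp x0 b) S + 1" by (rule orb_swap_merge[OF permq x0(1) bS bx[symmetric] nb])
      have c1: "card (comp s (alphaP a P) S ` S) = card (comp s (alphaP a (insert p P)) S ` S) + 1"
      proof (rule card_merge[where a=x0 and b=b])
        show "finite S" "x0 \<in> S" "b \<in> S" using fin x0(1) bS by auto
        show "comp s (alphaP a P) S x0 \<noteq> comp s (alphaP a P) S b" by (rule False)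
        show "\<And>x. x \<in> S \<Longrightarrow> x \<in> comp s (alphaP a P) S x" by (rule comp_self)
        show "\<And>x y. x \<in> S \<Longrightarrow> y \<in> comp s (alphaP a P) S x \<Longrightarrow> comp s (alphaP a P) S y = comp s (alphaP a P) S x"
          by (rule comp_eq)
        show "\<And>x. x \<in> S \<Longrightarrow> comp s (alphaP a (insert p P)) S x = (if x \<in> comp s (alphaP a P) S x0 \<union> comp s (alphaP a P) S b
           then comp s (alphaP a P) S x0 \<union> comp s (alphaP a P) S b else comp s (alphaP a P) S x)"
          by (rule comp_ins)
      qed
      have A: "zc (s \<circ> alphaP a P) S = zc (s \<circ> alphaP a (insert p P)) S + 1"
        using z1 unfolding q_ins q_def by simp
      have B: "card (insert p P) = card P + 1" using insert(1,2) by simp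
      show ?thesis using IH A B c1 by linarith
    qed
  qed
  have M: "zc (s \<circ> alphaP a Pairs) S + zc s S \<le> card Pairs + 2 * card (comp s (alphaP a Pairs) S ` S)"
    using main[OF finP] by blast
  have aPall: "alphaP a Pairs z = a z" if "z \<in> S" for z
  proof -
    have "z \<in> \<Union>Pairs" using that unfolding Pairs_def by blast
    thus ?thesis unfolding alphaP_def by simp
  qed
  have "orb (s \<circ> alphaP a Pairs) x = orb (s \<circ> a) x" if "x \<in> S" for x
  proof (rule orb_cong[where T=S])
    show "\<And>z. z \<in> S \<Longrightarrow> (s \<circ> a) z \<in> S" using sS inv by simp
    show "\<And>z. z \<in> S \<Longrightarrow> (s \<circ> alphaP a Pairs) z = (s \<circ> a) z" using aPall by simp
    show "x \<in> S" by (rule that)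
  qed
  hence "orb (s \<circ> alphaP a Pairs) ` S = orb (s \<circ> a) ` S" by (rule image_cong[OF refl])
  hence z1: "zc (s \<circ> alphaP a Pairs) S = zc (s \<circ> a) S" unfolding zc_def by simp
  have "orb a z = {z, a z}" if "z \<in> S" for z
  proof
    have "(a ^^ n) z \<in> {z, a z}" for n by (induct n) (use inv[OF that] in auto)
    thus "orb a z \<subseteq> {z, a z}" unfolding orb_def by blast
    have "a z = (a ^^ 1) z" by simp
    thus "{z, a z} \<subseteq> orb a z" using orb_self[of z a] orb_iter[of 1 a z] by auto
  qed
  hence "orb a ` S = Pairs" unfolding Pairs_def by (rule image_cong[OF refl])
  hence z2: "zc a S = card Pairs" unfolding zc_def by simp
  have s3: "{(z, alphaP a Pairs z) | z. z \<in> S} = {(z, a z) | z. z \<in> S}" using aPall by auto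
  have s4: "{(alphaP a Pairs z, z) | z. z \<in> S} = {(a z, z) | z. z \<in> S}" using aPall by auto
  have Eeq: "Esym s (alphaP a Pairs) S = Esym s a S" unfolding Esym_def s3 s4 by (rule refl)
  have "comp s (alphaP a Pairs) S x = S" if "x \<in> S" for x
  proof
    show "comp s (alphaP a Pairs) S x \<subseteq> S" by (rule comp_sub[OF sS aP_S that])
    show "S \<subseteq> comp s (alphaP a Pairs) S x" using conn[OF that] unfolding comp_def Eeq by blast
  qed
  hence "comp s (alphaP a Pairs) S ` S = {S}" using ne by auto
  hence z3: "card (comp s (alphaP a Pairs) S ` S) = 1" by simp
  show ?thesis using M z1 z2 z3 by simp
qed

lemma funpow_mod:
  assumes "(p ^^ q) d = d"
  shows "(p ^^ n) d = (p ^^ (n mod q)) d"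
proof -
  have per: "(p ^^ (q * k)) d = d" for k
  proof (induct k)
    case (Suc k)
    have e: "q * Suc k = q * k + q" by simp
    have "(p ^^ (q * Suc k)) d = (p ^^ (q * k)) ((p ^^ q) d)" unfolding e funpow_add by simp
    thus ?case using Suc assms by simp
  qed simp
  have "n = n mod q + q * (n div q)" by simp
  hence "(p ^^ n) d = (p ^^ (n mod q)) ((p ^^ (q * (n div q))) d)"
    by (metis funpow_add o_apply)
  thus ?thesis using per by simp
qed

lemma orb_period:
  assumes perm: "permS p S" and d: "d \<in> S"
  defines "q \<equiv> LEAST n. n > 0 \<and> (p ^^ n) d = d"
  shows "q > 0" "(p ^^ q) d = d" "inj_on (\<lambda>i. (p ^^ i) d) {..<q}"
    "orb p d = (\<lambda>i. (p ^^ i) d) ` {..<q}" "card (orb p d) = q"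
proof -
  obtain n0 where n0: "n0 > 0" "(p ^^ n0) d = d" using permS_periodic[OF perm d] by blast
  have q: "q > 0 \<and> (p ^^ q) d = d" unfolding q_def by (rule LeastI[of _ n0]) (use n0 in blast)
  show "q > 0" "(p ^^ q) d = d" using q by auto
  have minq: "\<And>m. 0 < m \<Longrightarrow> m < q \<Longrightarrow> (p ^^ m) d \<noteq> d"
    using not_less_Least unfolding q_def by blast
  have bij: "bij_betw p S S" using perm unfolding permS_def by blast
  show inj: "inj_on (\<lambda>i. (p ^^ i) d) {..<q}"
  proof (rule inj_onI)
    fix i j assume ij: "i \<in> {..<q}" "j \<in> {..<q}" "(p ^^ i) d = (p ^^ j) d"
    show "i = j"
    proof (rule ccontr)
      assume "i \<noteq> j"
      { fix i j assume ij': "i < j" "j < q" "(p ^^ i) d = (p ^^ j) d"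
        have "(p ^^ i) ((p ^^ (j - i)) d) = (p ^^ (i + (j - i))) d" by (simp add: funpow_add)
        hence "(p ^^ i) ((p ^^ (j - i)) d) = (p ^^ i) d" using ij' by simp
        moreover have "inj_on (p ^^ i) S" using bij_betw_funpow[OF bij] bij_betw_def by blast
        moreover have "(p ^^ (j - i)) d \<in> S" by (rule permS_funpow_mem[OF perm d])
        ultimately have "(p ^^ (j - i)) d = d" using d unfolding inj_on_def by blast
        hence False using minq[of "j - i"] ij' by simp }
      note * = this
      show False
      proof (cases "i < j")
        case True thus False using * ij by auto
      next
        case False hence "j < i" using \<open>i \<noteq> j\<close> by simp
        moreover have "i < q" using ij(1) by simp
        ultimately show False using *[of j i] ij(3) by simp
      qed
    qed
  qed
  show orbq: "orb p d = (\<lambda>i. (p ^^ i) d) ` {..<q}"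
  proof
    show "orb p d \<subseteq> (\<lambda>i. (p ^^ i) d) ` {..<q}"
    proof
      fix y assume "y \<in> orb p d"
      then obtain n where y: "y = (p ^^ n) d" unfolding orb_def by blast
      have "y = (p ^^ (n mod q)) d" using funpow_mod[of q p d n] q y by simp
      moreover have "n mod q < q" using q by simp
      ultimately show "y \<in> (\<lambda>i. (p ^^ i) d) ` {..<q}" by blast
    qed
    show "(\<lambda>i. (p ^^ i) d) ` {..<q} \<subseteq> orb p d" unfolding orb_def by blast
  qed
  show "card (orb p d) = q" unfolding orbq using card_image[OF inj] by simp
qed

lemma two_intervals_sum:
  assumes perm: "permS p S" and d0: "d0 \<in> S" and ti: "two_intervals p (orb p d0) lab"
  shows "(\<Sum>e\<in>orb p d0. (if lab e = lab (p e) then 0 else 1::nat)) = 2"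
proof -
  obtain d k where d: "d \<in> orb p d0" and k: "0 < k" "k < card (orb p d0)"
    and lk: "\<And>i. i < card (orb p d0) \<Longrightarrow> lab ((p ^^ i) d) = (if i < k then 1 else 0)"
    using ti unfolding two_intervals_def by blast
  have od: "orb p d = orb p d0" by (rule orb_eq[OF perm d0 d])
  have dS: "d \<in> S" using orb_sub[OF perm d0] d by blast
  define N where "N = card (orb p d0)"
  have NN: "N = (LEAST n. n > 0 \<and> (p ^^ n) d = d)" using orb_period(5)[OF perm dS] od unfolding N_def by simp
  have pN: "(p ^^ N) d = d" using orb_period(2)[OF perm dS] NN by simp
  have inj: "inj_on (\<lambda>i. (p ^^ i) d) {..<N}" using orb_period(3)[OF perm dS] NN by simp
  have oe: "orb p d0 = (\<lambda>i. (p ^^ i) d) ` {..<N}" using orb_period(4)[OF perm dS] NN od by simp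
  have "(\<Sum>e\<in>orb p d0. (if lab e = lab (p e) then 0 else 1::nat)) =
        (\<Sum>i<N. (if lab ((p ^^ i) d) = lab (p ((p ^^ i) d)) then 0 else 1))"
    unfolding oe using sum.reindex[OF inj, of "\<lambda>e. (if lab e = lab (p e) then 0 else 1::nat)"]
    by (simp add: comp_def)
  also have "\<dots> = (\<Sum>i<N. (if i = k - 1 \<or> i = N - 1 then 1 else 0))"
  proof (rule sum.cong[OF refl])
    fix i assume i: "i \<in> {..<N}"
    have li: "lab ((p ^^ i) d) = (if i < k then 1 else 0)" using lk i unfolding N_def by simp
    have "p ((p ^^ i) d) = (p ^^ Suc i) d" by simp
    moreover have "lab ((p ^^ Suc i) d) = (if Suc i < N then (if Suc i < k then 1 else 0) else 1)"
    proof (cases "Suc i < N")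
      case True thus ?thesis using lk[of "Suc i"] unfolding N_def by (simp del: funpow.simps)
    next
      case False hence "Suc i = N" using i by simp
      hence "lab ((p ^^ Suc i) d) = lab d" using pN by simp
      also have "\<dots> = 1" using lk[of 0] k unfolding N_def by simp
      finally show ?thesis using False by simp
    qed
    ultimately show "(if lab ((p ^^ i) d) = lab (p ((p ^^ i) d)) then 0 else 1) =
                     (if i = k - 1 \<or> i = N - 1 then 1 else (0::nat))"
      using li i k unfolding N_def by auto
  qed
  also have "\<dots> = 2"
  proof -
    have "k - 1 \<noteq> N - 1" "k - 1 < N" "N - 1 < N" using k unfolding N_def by auto
    hence "{i\<in>{..<N}. i = k - 1 \<or> i = N - 1} = {k - 1, N - 1}" by auto
    moreover have "(\<Sum>i<N. (if i = k - 1 \<or> i = N - 1 then 1 else 0::nat)) = card {i\<in>{..<N}. i = k - 1 \<or> i = N - 1}"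
      by (simp add: sum.If_cases Int_def)
    ultimately show ?thesis using \<open>k - 1 \<noteq> N - 1\<close> by simp
  qed
  finally show ?thesis .
qed

definition outd :: "('d \<Rightarrow> nat) \<Rightarrow> ('d \<Rightarrow> 'd) \<Rightarrow> ('d \<Rightarrow> 'd) \<Rightarrow> nat \<Rightarrow> 'd \<Rightarrow> bool" where
  "outd lab s a c x \<longleftrightarrow> (lab (a x) = c \<and> lab (s (a x)) = c) \<or> (lab x = 1 - c \<and> lab (s x) = 1 - c)"

locale wl =
  fixes D :: "'d set" and a s :: "'d \<Rightarrow> 'd" and fo s0 s1 :: "'d set" and lab :: "'d \<Rightarrow> nat"
  assumes pm: "plane_map D a s" and wlab: "weak_labeling D a s fo s0 s1 lab"
begin

lemma finD: "finite D" using pm unfolding plane_map_def by blast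
lemma aD: "d \<in> D \<Longrightarrow> a d \<in> D" using pm unfolding plane_map_def by blast
lemma a_ne: "d \<in> D \<Longrightarrow> a d \<noteq> d" using pm unfolding plane_map_def by blast
lemma aa: "d \<in> D \<Longrightarrow> a (a d) = d" using pm unfolding plane_map_def by blast
lemma permS_s: "permS s D" using pm finD unfolding plane_map_def permS_def by blast
lemma sD: "d \<in> D \<Longrightarrow> s d \<in> D" using permS_mem[OF permS_s] .

lemma permS_a: "permS a D"
proof -
  have inj: "inj_on a D" by (rule inj_onI) (metis aa)
  have "a ` D = D"
  proof
    show "a ` D \<subseteq> D" using aD by blast
    show "D \<subseteq> a ` D"
    proof
      fix x assume "x \<in> D" thus "x \<in> a ` D" using aa[of x] aD[of x] by (metis imageI)
    qed
  qed
  thus ?thesis using inj finD unfolding permS_def bij_betw_def by blast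
qed

lemma permS_f: "permS (s \<circ> a) D"
  using permS_s permS_a unfolding permS_def by (auto intro: bij_betw_trans)

lemma connM: "d \<in> D \<Longrightarrow> e \<in> D \<Longrightarrow> (d, e) \<in> ({(x, a x) | x. x \<in> D} \<union> {(x, s x) | x. x \<in> D})\<^sup>*"
  using pm unfolding plane_map_def by blast

lemma euler: "int (zc s D) - int (zc a D) + int (zc (s \<circ> a) D) = 2"
  using pm unfolding plane_map_def zc_def map_vertices_def map_edges_def map_faces_def by blast

lemma lab01: "d \<in> D \<Longrightarrow> lab d = 0 \<or> lab d = 1"
  using wlab unfolding weak_labeling_def by blast

lemma G2: "d \<in> D \<Longrightarrow> (lab d = lab (s d)) \<noteq> (lab (a d) = lab (s (a d)))"
  using wlab unfolding weak_labeling_def by blast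

lemma s0v: "s0 \<in> orb s ` D" and s1v: "s1 \<in> orb s ` D" and s01: "s0 \<noteq> s1"
  using wlab unfolding weak_labeling_def map_vertices_def by blast+

lemma s0lab: "d \<in> s0 \<Longrightarrow> lab d = 0" and s1lab: "d \<in> s1 \<Longrightarrow> lab d = 1"
  using wlab unfolding weak_labeling_def by blast+

lemma fo_face: "fo \<in> orb (s \<circ> a) ` D" using wlab unfolding weak_labeling_def map_faces_def by blast
lemma s0fo: "s0 \<inter> fo \<noteq> {}" and s1fo: "s1 \<inter> fo \<noteq> {}" using wlab unfolding weak_labeling_def by blast+

lemma vsum:
  assumes d: "d \<in> D" and n0: "orb s d \<noteq> s0" and n1: "orb s d \<noteq> s1"
  shows "(\<Sum>e\<in>orb s d. (if lab e = lab (s e) then 0 else 1::nat)) = 2"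
proof -
  have "orb s d \<in> map_vertices D s - {s0, s1}" using d n0 n1 unfolding map_vertices_def by blast
  hence "two_intervals s (orb s d) lab" using wlab unfolding weak_labeling_def by blast
  thus ?thesis by (rule two_intervals_sum[OF permS_s d])
qed

lemma fsum:
  assumes d: "d \<in> D"
  shows "(\<Sum>e\<in>orb (s \<circ> a) d. (if lab e = lab ((s \<circ> a) e) then 0 else 1::nat)) = 2"
proof -
  have "orb (s \<circ> a) d \<in> map_faces D a s" using d unfolding map_faces_def by blast
  hence "two_intervals (s \<circ> a) (orb (s \<circ> a) d) lab" using wlab unfolding weak_labeling_def by blast
  thus ?thesis by (rule two_intervals_sum[OF permS_f d])
qed

lemma pole_vertex:
  assumes "P = s0 \<or> P = s1"
  shows "\<exists>d0\<in>D. P = orb s d0" "\<exists>v. \<forall>d\<in>P. lab d = v"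
  using assms s0v s1v s0lab s1lab by blast+

end

locale cyc = wl +
  fixes c :: nat and Cd :: "'d set" and psi :: "'d \<Rightarrow> 'd"
  assumes c01: "c \<le> 1" and CdD: "Cd \<subseteq> D" and Cdne: "Cd \<noteq> {}"
    and psiCd: "\<And>x. x \<in> Cd \<Longrightarrow> psi x \<in> Cd"
    and apsi: "\<And>x. x \<in> Cd \<Longrightarrow> a x \<in> orb s (psi x)"
    and tinj: "\<And>x y. x \<in> Cd \<Longrightarrow> y \<in> Cd \<Longrightarrow> orb s x = orb s y \<Longrightarrow> x = y"
    and single: "\<And>x y. x \<in> Cd \<Longrightarrow> y \<in> Cd \<Longrightarrow> y \<in> orb psi x"
    and outC: "\<And>x. x \<in> Cd \<Longrightarrow> outd lab s a c x"
begin

lemma finCd: "finite Cd" using finD CdD finite_subset by blast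

lemma psi_surj: "psi ` Cd = Cd"
proof
  show "psi ` Cd \<subseteq> Cd" using psiCd by blast
  show "Cd \<subseteq> psi ` Cd"
  proof
    fix x assume x: "x \<in> Cd"
    have "psi x \<in> Cd" using psiCd x by blast
    hence "x \<in> orb psi (psi x)" using single x by blast
    then obtain n where n: "x = (psi ^^ n) (psi x)" unfolding orb_def by blast
    have "(psi ^^ n) x \<in> Cd" using x psiCd by (induct n) auto
    moreover have "x = psi ((psi ^^ n) x)" using n by (simp add: funpow_swap1)
    ultimately show "x \<in> psi ` Cd" by blast
  qed
qed

lemma psi_inj: "inj_on psi Cd"
  using finite_surj_inj[OF finCd] psi_surj by blast

lemma permS_psi: "permS psi Cd"
  using psi_inj psi_surj finCd unfolding permS_def bij_betw_def by blast

definition psinv where "psinv = inv_into Cd psi"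
definition I where "I = a ` Cd"
definition iota where "iota x = a (psinv x)"
definition om where "om y = psi (a y)"

lemma psinv_Cd: "x \<in> Cd \<Longrightarrow> psinv x \<in> Cd"
  unfolding psinv_def using inv_into_into[of x psi Cd] psi_surj by blast
lemma psi_psinv: "x \<in> Cd \<Longrightarrow> psi (psinv x) = x"
  unfolding psinv_def using f_inv_into_f[of x psi Cd] psi_surj by blast
lemma psinv_psi: "x \<in> Cd \<Longrightarrow> psinv (psi x) = x"
  unfolding psinv_def using inv_into_f_f[OF psi_inj] by blast

lemma ID: "I \<subseteq> D" unfolding I_def using CdD aD by blast
lemma xD: "x \<in> Cd \<Longrightarrow> x \<in> D" using CdD by blast
lemma iota_I: "x \<in> Cd \<Longrightarrow> iota x \<in> I" unfolding iota_def I_def using psinv_Cd by blast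
lemma iota_vert: "x \<in> Cd \<Longrightarrow> iota x \<in> orb s x"
  unfolding iota_def using apsi[OF psinv_Cd] psi_psinv by metis
lemma om_Cd: "y \<in> I \<Longrightarrow> om y \<in> Cd"
  unfolding I_def om_def using psiCd aa CdD by auto
lemma om_vert: "y \<in> I \<Longrightarrow> y \<in> orb s (om y)"
proof -
  assume "y \<in> I"
  then obtain z where z: "z \<in> Cd" "y = a z" unfolding I_def by blast
  have "om y = psi z" unfolding om_def using z aa xD by simp
  thus ?thesis using apsi[OF z(1)] z(2) by simp
qed
lemma om_iota: "x \<in> Cd \<Longrightarrow> om (iota x) = x"
  unfolding om_def iota_def using aa[OF xD[OF psinv_Cd]] psi_psinv by simp
lemma iota_om: "y \<in> I \<Longrightarrow> iota (om y) = y"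
proof -
  assume "y \<in> I"
  then obtain z where z: "z \<in> Cd" "y = a z" unfolding I_def by blast
  have "om y = psi z" unfolding om_def using z aa xD by simp
  thus ?thesis unfolding iota_def using psinv_psi[OF z(1)] z by simp
qed
lemma a_iota_psi: "x \<in> Cd \<Longrightarrow> a x = iota (psi x)"
  unfolding iota_def using psinv_psi by simp

lemma disj: "Cd \<inter> I = {}"
proof (rule ccontr)
  assume "Cd \<inter> I \<noteq> {}"
  then obtain x z where x: "x \<in> Cd" "z \<in> Cd" "x = a z" unfolding I_def by blast
  have xd: "x \<in> D" "z \<in> D" using x xD by auto
  have ox: "outd lab s a c x" and oz: "outd lab s a c z" using outC x by auto
  have g2: "(lab z = lab (s z)) \<noteq> (lab x = lab (s x))" using G2[OF xd(2)] x(3) by simp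
  have az: "a x = z" using x(3) aa xd by simp
  show False
  proof (cases "lab z = lab (s z)")
    case True
    hence nx: "lab x \<noteq> lab (s x)" using g2 by simp
    from ox have "lab z = c" unfolding outd_def az using nx by auto
    moreover from oz have "lab z = 1 - c" unfolding outd_def using True x(3) nx by auto
    ultimately show False using c01 by arith
  next
    case False
    hence yx: "lab x = lab (s x)" using g2 by simp
    from oz have "lab x = c" unfolding outd_def using False x(3) by auto
    moreover from ox have "lab x = 1 - c" unfolding outd_def az using False yx by auto
    ultimately show False using c01 by arith
  qed
qed

lemma uniqCd:
  assumes x: "x \<in> Cd" and e: "e \<in> Cd" and eo: "e \<in> orb s x"
  shows "e = x"
proof -
  have "orb s e = orb s x" by (rule orb_eq[OF permS_s xD[OF x] eo])
  thus ?thesis by (rule tinj[OF e x])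
qed

lemma uniqI: "x \<in> Cd \<Longrightarrow> y \<in> I \<Longrightarrow> y \<in> orb s x \<Longrightarrow> y = iota x"
proof -
  assume x: "x \<in> Cd" and y: "y \<in> I" "y \<in> orb s x"
  have "orb s y = orb s x" by (rule orb_eq[OF permS_s xD[OF x] y(2)])
  moreover have "orb s y = orb s (om y)" by (rule orb_eq[OF permS_s xD[OF om_Cd[OF y(1)]] om_vert[OF y(1)]])
  ultimately have "om y = x" using tinj[OF om_Cd[OF y(1)] x] by simp
  thus "y = iota x" using iota_om[OF y(1)] by simp
qed

lemma iota_ne: assumes x: "x \<in> Cd" shows "iota x \<noteq> x"
proof
  assume "iota x = x"
  hence "x \<in> Cd \<inter> I" using iota_I[OF x] x by simp
  thus False using disj by simp
qed
lemma iota_D: assumes x: "x \<in> Cd" shows "iota x \<in> D" using ID iota_I[OF x] by blast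
lemma I_notCd: assumes y: "y \<in> I" shows "y \<notin> Cd" using disj y by blast

lemma s_notCd: "x \<in> Cd \<Longrightarrow> s x \<notin> Cd"
proof
  assume x: "x \<in> Cd" and sx: "s x \<in> Cd"
  have "s x \<in> orb s x" by (rule orb_step_in[OF orb_self])
  hence "s x = x" using uniqCd[OF x sx] by simp
  hence "orb s x \<subseteq> {x}" by (intro orb_closed_min) auto
  thus False using iota_vert[OF x] iota_ne[OF x] by blast
qed

lemma pole_not_cycle:
  assumes x: "x \<in> Cd" and P: "P = s0 \<or> P = s1"
  shows "orb s x \<noteq> P"
proof
  assume eq: "orb s x = P"
  obtain v where v: "\<And>d. d \<in> P \<Longrightarrow> lab d = v" using pole_vertex(2)[OF P] by blast
  have xP: "x \<in> P" using eq orb_self by metis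
  have sxP: "s x \<in> P" using eq orb_step_in[OF orb_self] by metis
  have iP: "iota x \<in> P" using eq iota_vert[OF x] by simp
  have siP: "s (iota x) \<in> P" using eq orb_step_in[OF iota_vert[OF x]] by simp
  have lx: "lab x = v" "lab (s x) = v" using v xP sxP by auto
  have li: "lab (iota x) = v" "lab (s (iota x)) = v" using v iP siP by auto
  have na: "lab (a x) \<noteq> lab (s (a x))" using G2[OF xD[OF x]] lx by simp
  have "v = 1 - c" using outC[OF x] na lx unfolding outd_def by auto
  define z where "z = psinv x"
  have z: "z \<in> Cd" "a z = iota x" unfolding z_def iota_def using psinv_Cd x by auto
  have nz: "lab z \<noteq> lab (s z)" using G2[OF xD[OF z(1)]] z(2) li by simp
  have "v = c" using outC[OF z(1)] nz z(2) li unfolding outd_def by auto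
  thus False using \<open>v = 1 - c\<close> c01 by arith
qed

end

context cyc
begin

definition Dp :: "('d \<times> nat) set" where
  "Dp = {z. (snd z = 0 \<and> fst z \<in> D) \<or> (snd z = 1 \<and> (fst z \<in> Cd \<or> fst z \<in> I))}"

definition sp :: "'d \<times> nat \<Rightarrow> 'd \<times> nat" where
  "sp z = (if snd z = 0 \<and> fst z \<in> I then (om (fst z), 0)
           else if snd z = 1 \<and> fst z \<in> Cd then (iota (fst z), 1)
           else (s (fst z), if s (fst z) \<in> Cd then 1 else 0))"

definition ap :: "'d \<times> nat \<Rightarrow> 'd \<times> nat" where
  "ap z = (a (fst z), snd z)"

definition fp where "fp = sp \<circ> ap"

lemma Dp0: "(d, 0) \<in> Dp \<longleftrightarrow> d \<in> D" unfolding Dp_def by simp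
lemma Dp1: "(d, 1) \<in> Dp \<longleftrightarrow> d \<in> Cd \<or> d \<in> I" unfolding Dp_def by simp
lemma Dp_cases: "z \<in> Dp \<Longrightarrow> (\<exists>d. z = (d, 0) \<and> d \<in> D) \<or> (\<exists>d. z = (d, 1) \<and> (d \<in> Cd \<or> d \<in> I))"
  unfolding Dp_def by (cases z) auto

lemma spB1: "l = 0 \<Longrightarrow> d \<in> I \<Longrightarrow> sp (d, l) = (om d, 0)" unfolding sp_def by simp
lemma spB2: "l = 1 \<Longrightarrow> d \<in> Cd \<Longrightarrow> sp (d, l) = (iota d, 1)" unfolding sp_def using disj by auto
lemma spB3: "\<not> (l = 0 \<and> d \<in> I) \<Longrightarrow> \<not> (l = 1 \<and> d \<in> Cd) \<Longrightarrow> sp (d, l) = (s d, if s d \<in> Cd then 1 else 0)"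
  unfolding sp_def by auto

lemma sp0I: "d \<in> I \<Longrightarrow> sp (d, 0) = (om d, 0)" unfolding sp_def by simp
lemma sp1C: "d \<in> Cd \<Longrightarrow> sp (d, 1) = (iota d, 1)" unfolding sp_def by simp
lemma sp0: "d \<notin> I \<Longrightarrow> sp (d, 0) = (s d, if s d \<in> Cd then 1 else 0)" unfolding sp_def by simp
lemma sp1: "d \<notin> Cd \<Longrightarrow> sp (d, 1) = (s d, if s d \<in> Cd then 1 else 0)" unfolding sp_def by simp
lemma ap_simp: "ap (d, l) = (a d, l)" unfolding ap_def by simp

lemma finDp: "finite Dp"
proof -
  have "Dp \<subseteq> D \<times> {0, 1}" unfolding Dp_def using CdD ID by auto
  thus ?thesis using finD finite_subset by blast
qed

lemma sp_Dp: "z \<in> Dp \<Longrightarrow> sp z \<in> Dp"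
proof -
  assume z: "z \<in> Dp"
  obtain d l where zz: "z = (d, l)" by (cases z)
  have dD: "d \<in> D" using z CdD ID unfolding zz Dp_def by auto
  consider (B1) "l = 0" "d \<in> I" | (B2) "l = 1" "d \<in> Cd" | (B3) "\<not> (l = 0 \<and> d \<in> I)" "\<not> (l = 1 \<and> d \<in> Cd)"
    by blast
  thus ?thesis
  proof cases
    case B1 thus ?thesis unfolding zz using spB1[OF B1] om_Cd[OF B1(2)] xD Dp0 by simp
  next
    case B2 thus ?thesis unfolding zz using spB2[OF B2] iota_I[OF B2(2)] Dp1 by simp
  next
    case B3
    have "s d \<in> D" by (rule sD[OF dD])
    thus ?thesis unfolding zz spB3[OF B3] Dp_def by simp
  qed
qed

lemma ap_Dp: "z \<in> Dp \<Longrightarrow> ap z \<in> Dp"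
proof -
  assume z: "z \<in> Dp"
  show ?thesis
  proof (cases "snd z = 0")
    case True thus ?thesis using z aD unfolding Dp_def ap_def by auto
  next
    case False
    hence z1: "snd z = 1" "fst z \<in> Cd \<or> fst z \<in> I" using z unfolding Dp_def by auto
    have "a (fst z) \<in> Cd \<or> a (fst z) \<in> I"
      using z1(2) aa xD unfolding I_def by auto
    thus ?thesis using z1 unfolding Dp_def ap_def by simp
  qed
qed

lemma ap_ap: "z \<in> Dp \<Longrightarrow> ap (ap z) = z"
proof -
  assume z: "z \<in> Dp"
  have "fst z \<in> D" using z CdD ID unfolding Dp_def by auto
  thus ?thesis unfolding ap_def using aa by (cases z) simp
qed

lemma ap_ne: "z \<in> Dp \<Longrightarrow> ap z \<noteq> z"
proof -
  assume z: "z \<in> Dp"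
  have "fst z \<in> D" using z CdD ID unfolding Dp_def by auto
  thus ?thesis unfolding ap_def using a_ne by (cases z) auto
qed

lemma sp_inj: "inj_on sp Dp"
proof (rule inj_onI)
  fix z w assume z: "z \<in> Dp" and w: "w \<in> Dp" and eq: "sp z = sp w"
  obtain d l where zz: "z = (d, l)" by (cases z)
  obtain e k where ww: "w = (e, k)" by (cases w)
  have dD: "d \<in> D" and eD: "e \<in> D" using z w CdD ID unfolding zz ww Dp_def by auto
  have l01: "l = 0 \<or> l = 1" and k01: "k = 0 \<or> k = 1" using z w unfolding zz ww Dp_def by auto
  consider (B1) "l = 0" "d \<in> I" | (B2) "l = 1" "d \<in> Cd" | (B3) "\<not> (l = 0 \<and> d \<in> I)" "\<not> (l = 1 \<and> d \<in> Cd)"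
    by blast
  note cz = this
  consider (C1) "k = 0" "e \<in> I" | (C2) "k = 1" "e \<in> Cd" | (C3) "\<not> (k = 0 \<and> e \<in> I)" "\<not> (k = 1 \<and> e \<in> Cd)"
    by blast
  note cw = this
  have eq': "sp (d, l) = sp (e, k)" using eq zz ww by simp
  show "z = w"
  proof (cases rule: cz)
    case B1
    show ?thesis
    proof (cases rule: cw)
      case C1
      hence "om d = om e" using eq' spB1[OF B1] spB1[OF C1] by simp
      hence "d = e" using iota_om B1(2) C1(2) by metis
      thus ?thesis using B1 C1 zz ww by simp
    next
      case C2 thus ?thesis using eq' spB1[OF B1] spB2[OF C2] by simp
    next
      case C3
      from eq' have "(om d, 0::nat) = (s e, if s e \<in> Cd then 1 else 0)" by (simp only: spB1[OF B1] spB3[OF C3])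
      hence h: "om d = s e" "(if s e \<in> Cd then 1 else 0::nat) = 0" by simp_all
      have "s e \<in> Cd" using h(1) om_Cd[OF B1(2)] by simp
      thus ?thesis using h(2) by simp
    qed
  next
    case B2
    show ?thesis
    proof (cases rule: cw)
      case C1 thus ?thesis using eq' spB2[OF B2] spB1[OF C1] by simp
    next
      case C2
      hence "iota d = iota e" using eq' spB2[OF B2] spB2[OF C2] by simp
      hence "d = e" using om_iota B2(2) C2(2) by metis
      thus ?thesis using B2 C2 zz ww by simp
    next
      case C3
      from eq' have "(iota d, 1::nat) = (s e, if s e \<in> Cd then 1 else 0)" by (simp only: spB2[OF B2] spB3[OF C3])
      hence "iota d = s e" "s e \<in> Cd" by (auto split: if_splits)
      thus ?thesis using iota_I[OF B2(2)] disj by auto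
    qed
  next
    case B3
    show ?thesis
    proof (cases rule: cw)
      case C1
      from eq' have "(om e, 0::nat) = (s d, if s d \<in> Cd then 1 else 0)" by (simp only: spB3[OF B3] spB1[OF C1])
      hence h: "om e = s d" "(if s d \<in> Cd then 1 else 0::nat) = 0" by simp_all
      have "s d \<in> Cd" using h(1) om_Cd[OF C1(2)] by simp
      thus ?thesis using h(2) by simp
    next
      case C2
      from eq' have "(iota e, 1::nat) = (s d, if s d \<in> Cd then 1 else 0)" by (simp only: spB3[OF B3] spB2[OF C2])
      hence "iota e = s d" "s d \<in> Cd" by (auto split: if_splits)
      thus ?thesis using iota_I[OF C2(2)] disj by auto
    next
      case C3
      hence eq2: "s d = s e" using eq' spB3[OF B3] spB3[OF C3] by simp
      have de: "d = e" using eq2 dD eD permS_s unfolding permS_def bij_betw_def inj_on_def by blast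
      have "l = k"
      proof (rule ccontr)
        assume "l \<noteq> k"
        hence "(l = 0 \<and> k = 1) \<or> (l = 1 \<and> k = 0)" using l01 k01 by auto
        thus False
        proof
          assume lk: "l = 0 \<and> k = 1"
          hence "e \<in> Cd \<or> e \<in> I" using w unfolding ww Dp_def by simp
          thus False using B3 C3 lk de by auto
        next
          assume lk: "l = 1 \<and> k = 0"
          hence "d \<in> Cd \<or> d \<in> I" using z unfolding zz Dp_def by simp
          thus False using B3 C3 lk de by auto
        qed
      qed
      thus ?thesis using de zz ww by simp
    qed
  qed
qed

lemma permS_sp: "permS sp Dp"
proof -
  have "sp ` Dp = Dp" by (rule endo_inj_surj[OF finDp _ sp_inj]) (use sp_Dp in blast)
  thus ?thesis using finDp sp_inj unfolding permS_def bij_betw_def by blast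
qed

lemma permS_ap: "permS ap Dp"
proof -
  have inj: "inj_on ap Dp" by (rule inj_onI) (metis ap_ap)
  have "ap ` Dp = Dp" by (rule endo_inj_surj[OF finDp _ inj]) (use ap_Dp in blast)
  thus ?thesis using finDp inj unfolding permS_def bij_betw_def by blast
qed

lemma permS_fp: "permS fp Dp"
  using permS_sp permS_ap unfolding permS_def fp_def by (auto intro: bij_betw_trans)

lemma om_in_vert: "e \<in> I \<Longrightarrow> om e \<in> orb s e"
  by (rule orb_sym[OF permS_s xD[OF om_Cd] om_vert]) (auto simp: om_Cd)

lemma sp_vert: "z \<in> Dp \<Longrightarrow> fst (sp z) \<in> orb s (fst z)"
proof -
  assume z: "z \<in> Dp"
  obtain d l where zz: "z = (d, l)" by (cases z)
  consider (B1) "l = 0" "d \<in> I" | (B2) "l = 1" "d \<in> Cd" | (B3) "\<not> (l = 0 \<and> d \<in> I)" "\<not> (l = 1 \<and> d \<in> Cd)"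
    by blast
  thus ?thesis
  proof cases
    case B1 thus ?thesis unfolding zz using spB1[OF B1] om_in_vert[OF B1(2)] by simp
  next
    case B2 thus ?thesis unfolding zz using spB2[OF B2] iota_vert[OF B2(2)] by simp
  next
    case B3 thus ?thesis unfolding zz using spB3[OF B3] orb_step_in[OF orb_self[of d s]] by simp
  qed
qed

lemma orb_sp_vert:
  assumes z: "z \<in> Dp" and w: "w \<in> orb sp z"
  shows "fst w \<in> orb s (fst z)" "w \<in> Dp"
proof -
  define T where "T = {u \<in> Dp. fst u \<in> orb s (fst z)}"
  have "orb sp z \<subseteq> T"
  proof (rule orb_closed_min)
    show "z \<in> T" unfolding T_def using z orb_self[of "fst z" s] by blast
    fix u assume u: "u \<in> T"
    hence uD: "u \<in> Dp" "fst u \<in> orb s (fst z)" unfolding T_def by auto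
    have "fst (sp u) \<in> orb s (fst u)" by (rule sp_vert[OF uD(1)])
    hence "fst (sp u) \<in> orb s (fst z)" using orb_trans[OF uD(2)] by blast
    thus "sp u \<in> T" unfolding T_def using sp_Dp[OF uD(1)] by blast
  qed
  thus "fst w \<in> orb s (fst z)" "w \<in> Dp" using w unfolding T_def by auto
qed

end

lemma orb_conj:
  assumes "\<And>x. x \<in> A \<Longrightarrow> p x \<in> A" "\<And>x. x \<in> A \<Longrightarrow> q (f x) = f (p x)" "x \<in> A"
  shows "orb q (f x) = f ` orb p x"
proof -
  have "(q ^^ n) (f x) = f ((p ^^ n) x) \<and> (p ^^ n) x \<in> A" for n
    by (induct n) (use assms in auto)
  thus ?thesis unfolding orb_def by auto
qed

lemma zc_conj:
  assumes inj: "inj_on f A" and cl: "\<And>x. x \<in> A \<Longrightarrow> p x \<in> A"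
    and cm: "\<And>x. x \<in> A \<Longrightarrow> q (f x) = f (p x)" and fin: "finite A"
  shows "zc q (f ` A) = zc p A"
proof -
  have "orb q ` f ` A = (\<lambda>B. f ` B) ` (orb p ` A)"
  proof -
    have "orb q ` f ` A = (\<lambda>x. orb q (f x)) ` A" by (simp add: image_image)
    also have "\<dots> = (\<lambda>x. f ` orb p x) ` A"
    proof (rule image_cong[OF refl])
      fix x assume "x \<in> A"
      thus "orb q (f x) = f ` orb p x" using orb_conj[of A p q f x] cl cm by blast
    qed
    also have "\<dots> = (\<lambda>B. f ` B) ` (orb p ` A)" by (simp add: image_image)
    finally show ?thesis .
  qed
  moreover have "inj_on (\<lambda>B. f ` B) (orb p ` A)"
  proof (rule inj_onI)
    fix B1 B2 assume "B1 \<in> orb p ` A" "B2 \<in> orb p ` A" "f ` B1 = f ` B2"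
    moreover have "B1 \<subseteq> A" "B2 \<subseteq> A" using \<open>B1 \<in> orb p ` A\<close> \<open>B2 \<in> orb p ` A\<close>
      using orb_closed_min[of A p] cl by blast+
    ultimately show "B1 = B2" using inj inj_on_image_eq_iff by metis
  qed
  ultimately show ?thesis unfolding zc_def by (simp add: card_image)
qed

context cyc
begin

definition mm where "mm x = (LEAST n. (s ^^ n) x = iota x)"

lemma mm_ex: assumes x: "x \<in> Cd" shows "\<exists>n. (s ^^ n) x = iota x"
proof -
  have "iota x \<in> orb s x" by (rule iota_vert[OF x])
  thus ?thesis unfolding orb_def by auto
qed

lemma mm_prop: "x \<in> Cd \<Longrightarrow> (s ^^ mm x) x = iota x"
  unfolding mm_def using mm_ex by (rule LeastI_ex)

lemma mm_min: "n < mm x \<Longrightarrow> (s ^^ n) x \<noteq> iota x"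
  unfolding mm_def using not_less_Least by blast

lemma mm_pos: "x \<in> Cd \<Longrightarrow> 0 < mm x"
proof (rule ccontr)
  assume x: "x \<in> Cd" and "\<not> 0 < mm x"
  hence "mm x = 0" by simp
  hence "iota x = x" using mm_prop[OF x] by simp
  thus False using iota_ne[OF x] by simp
qed

lemma mm_noret:
  assumes x: "x \<in> Cd" and j: "0 < j" "j \<le> mm x"
  shows "(s ^^ j) x \<noteq> x"
proof
  assume sj: "(s ^^ j) x = x"
  have "(s ^^ mm x) x = (s ^^ (mm x mod j)) x" by (rule funpow_mod[OF sj])
  hence "(s ^^ (mm x mod j)) x = iota x" using mm_prop[OF x] by simp
  moreover have "mm x mod j < mm x" using j by (meson le_trans mod_less_divisor not_le)
  ultimately show False using mm_min by blast
qed

lemma fpow_D: "x \<in> D \<Longrightarrow> (s ^^ n) x \<in> D" by (rule permS_funpow_mem[OF permS_s])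
lemma fpow_vert: "(s ^^ n) x \<in> orb s x" by (rule orb_iter)

lemma iter_step:
  assumes x: "x \<in> Cd" and n: "n < mm x"
  shows "sp ((s ^^ n) x, 0) = ((s ^^ Suc n) x, 0)"
proof -
  have nI: "(s ^^ n) x \<notin> I"
  proof
    assume "(s ^^ n) x \<in> I"
    hence "(s ^^ n) x = iota x" using uniqI[OF x] fpow_vert by blast
    thus False using mm_min[OF n] by simp
  qed
  have nC: "(s ^^ Suc n) x \<notin> Cd"
  proof
    assume "(s ^^ Suc n) x \<in> Cd"
    hence "(s ^^ Suc n) x = x" using uniqCd[OF x] fpow_vert by blast
    thus False using mm_noret[OF x, of "Suc n"] n by simp
  qed
  have "sp ((s ^^ n) x, 0) = (s ((s ^^ n) x), if s ((s ^^ n) x) \<in> Cd then 1 else 0)"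
    by (rule spB3) (use nI in auto)
  thus ?thesis using nC by simp
qed

lemma iter_L: "x \<in> Cd \<Longrightarrow> n \<le> mm x \<Longrightarrow> (sp ^^ n) (x, 0) = ((s ^^ n) x, 0)"
proof (induct n)
  case (Suc n)
  hence "(sp ^^ n) (x, 0) = ((s ^^ n) x, 0)" by simp
  thus ?case using iter_step[OF Suc(2), of n] Suc(3) by simp
qed simp

lemma sp_mm: "x \<in> Cd \<Longrightarrow> sp ((s ^^ mm x) x, 0) = (x, 0)"
  using mm_prop spB1[of 0 "iota x"] iota_I om_iota by simp

definition Lset where "Lset x = {((s ^^ n) x, 0::nat) | n. n \<le> mm x}"

lemma orb_L: assumes x: "x \<in> Cd" shows "orb sp (x, 0) = Lset x"
proof
  show "orb sp (x, 0) \<subseteq> Lset x"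
  proof (rule orb_closed_min)
    show "(x, 0) \<in> Lset x" unfolding Lset_def by (rule CollectI, rule exI[of _ 0]) simp
    fix z assume "z \<in> Lset x"
    then obtain n where n: "n \<le> mm x" "z = ((s ^^ n) x, 0)" unfolding Lset_def by blast
    show "sp z \<in> Lset x"
    proof (cases "n < mm x")
      case True
      have "sp z = ((s ^^ Suc n) x, 0)" using iter_step[OF x True] n(2) by simp
      moreover have "Suc n \<le> mm x" using True by simp
      ultimately show ?thesis unfolding Lset_def by blast
    next
      case False hence "n = mm x" using n by simp
      thus ?thesis using sp_mm[OF x] n unfolding Lset_def by (auto intro: exI[of _ 0])
    qed
  qed
  show "Lset x \<subseteq> orb sp (x, 0)"
  proof
    fix z assume "z \<in> Lset x"
    then obtain n where n: "n \<le> mm x" "z = ((s ^^ n) x, 0)" unfolding Lset_def by blast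
    thus "z \<in> orb sp (x, 0)" using iter_L[OF x n(1)] orb_iter[of n sp "(x,0)"] by simp
  qed
qed

lemma x0_not_x1: "x \<in> Cd \<Longrightarrow> (x, 1::nat) \<notin> orb sp (x, 0)"
  using orb_L unfolding Lset_def by auto

end

context cyc
begin

definition L0 where "L0 = (\<lambda>d. (d, 0::nat)) ` D"

lemma L0_sub: "L0 \<subseteq> Dp" unfolding L0_def Dp_def by auto

lemma zc_ap_le: "zc ap Dp \<le> zc a D + card Cd"
proof -
  have cl: "\<And>z. z \<in> L0 \<Longrightarrow> ap z \<in> L0" unfolding L0_def ap_def using aD by auto
  have add: "zc ap Dp = zc ap L0 + zc ap (Dp - L0)" by (rule zc_add[OF permS_ap L0_sub cl])
  have c0: "zc ap L0 = zc a D" unfolding L0_def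
    by (rule zc_conj) (auto simp: inj_on_def ap_def aD finD)
  have "orb ap ` (Dp - L0) \<subseteq> (\<lambda>x. orb ap (x, 1)) ` Cd"
  proof
    fix B assume "B \<in> orb ap ` (Dp - L0)"
    then obtain z where z: "z \<in> Dp" "z \<notin> L0" "B = orb ap z" by blast
    obtain d where d: "z = (d, 1)" "d \<in> Cd \<or> d \<in> I" using z(1,2) unfolding Dp_def L0_def by (cases z) auto
    show "B \<in> (\<lambda>x. orb ap (x, 1)) ` Cd"
    proof (cases "d \<in> Cd")
      case True thus ?thesis using z d by blast
    next
      case False
      then obtain x where x: "x \<in> Cd" "d = a x" using d unfolding I_def by blast
      have x1: "(x, 1) \<in> Dp" using x Dp1 by simp
      have "z \<in> orb ap (x, 1)" using d x orb_step_in[OF orb_self, of ap "(x,1)"] by (simp add: ap_def)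
      hence "orb ap z = orb ap (x, 1)" by (rule orb_eq[OF permS_ap x1])
      thus ?thesis using z x by blast
    qed
  qed
  hence "zc ap (Dp - L0) \<le> card ((\<lambda>x. orb ap (x, 1)) ` Cd)"
    unfolding zc_def by (rule card_mono[rotated]) (use finCd in blast)
  also have "\<dots> \<le> card Cd" by (rule card_image_le[OF finCd])
  finally show ?thesis using add c0 by simp
qed

definition rho where "rho d = (d, if d \<in> Cd then 1 else 0::nat)"

lemma aI_iff: "d \<in> D \<Longrightarrow> a d \<in> I \<longleftrightarrow> d \<in> Cd"
proof
  assume d: "d \<in> D" and "a d \<in> I"
  then obtain x where "x \<in> Cd" "a d = a x" unfolding I_def by blast
  thus "d \<in> Cd" using aa d xD by metis
next
  assume "d \<in> Cd" thus "a d \<in> I" unfolding I_def by blast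
qed

lemma fp_rho: assumes d: "d \<in> D" shows "fp (rho d) = rho ((s \<circ> a) d)"
proof (cases "d \<in> Cd")
  case True
  have "a d \<notin> Cd" using I_notCd aI_iff[OF d] True by blast
  hence "sp (a d, 1) = (s (a d), if s (a d) \<in> Cd then 1 else 0)" by (intro spB3) auto
  thus ?thesis using True unfolding fp_def rho_def ap_def by simp
next
  case False
  have "a d \<notin> I" using aI_iff[OF d] False by blast
  hence "sp (a d, 0) = (s (a d), if s (a d) \<in> Cd then 1 else 0)" by (intro spB3) auto
  thus ?thesis using False unfolding fp_def rho_def ap_def by simp
qed

lemma zc_fp_ge: "zc fp Dp \<ge> zc (s \<circ> a) D + 2"
proof -
  define R where "R = rho ` D"
  have Rsub: "R \<subseteq> Dp" unfolding R_def rho_def Dp_def by auto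
  have cl: "\<And>z. z \<in> R \<Longrightarrow> fp z \<in> R"
    unfolding R_def using fp_rho sD aD by auto
  have add: "zc fp Dp = zc fp R + zc fp (Dp - R)" by (rule zc_add[OF permS_fp Rsub cl])
  have c0: "zc fp R = zc (s \<circ> a) D" unfolding R_def
  proof (rule zc_conj)
    show "inj_on rho D" unfolding rho_def by (rule inj_onI) simp
    show "\<And>x. x \<in> D \<Longrightarrow> (s \<circ> a) x \<in> D" using sD aD by simp
    show "\<And>x. x \<in> D \<Longrightarrow> fp (rho x) = rho ((s \<circ> a) x)" by (rule fp_rho)
    show "finite D" by (rule finD)
  qed
  obtain x0 where x0: "x0 \<in> Cd" using Cdne by blast
  have z1: "(x0, 0) \<in> Dp - R" using x0 xD unfolding R_def rho_def Dp_def by auto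
  have z2: "(a x0, 1) \<in> Dp - R"
  proof -
    have "a x0 \<in> I" using x0 unfolding I_def by blast
    hence "a x0 \<notin> Cd" using I_notCd by blast
    thus ?thesis using \<open>a x0 \<in> I\<close> unfolding R_def rho_def Dp_def by auto
  qed
  have CdL: "orb fp (x0, 0) \<subseteq> (\<lambda>x. (x, 0::nat)) ` Cd"
  proof (rule orb_closed_min)
    show "(x0, 0) \<in> (\<lambda>x. (x, 0::nat)) ` Cd" using x0 by blast
    fix z assume "z \<in> (\<lambda>x. (x, 0::nat)) ` Cd"
    then obtain x where x: "x \<in> Cd" "z = (x, 0)" by blast
    have "a x \<in> I" using x unfolding I_def by blast
    hence "fp z = (om (a x), 0)" using x spB1 unfolding fp_def ap_def by simp
    thus "fp z \<in> (\<lambda>x. (x, 0::nat)) ` Cd" using om_Cd[OF \<open>a x \<in> I\<close>] by blast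
  qed
  have ne: "orb fp (x0, 0) \<noteq> orb fp (a x0, 1)"
    using CdL orb_self[of "(a x0, 1::nat)" fp] by auto
  have "{orb fp (x0, 0), orb fp (a x0, 1)} \<subseteq> orb fp ` (Dp - R)" using z1 z2 by blast
  moreover have "finite (orb fp ` (Dp - R))" using finDp by blast
  ultimately have "card {orb fp (x0, 0), orb fp (a x0, 1)} \<le> zc fp (Dp - R)"
    unfolding zc_def by (rule card_mono[rotated])
  hence "2 \<le> zc fp (Dp - R)" using ne by simp
  thus ?thesis using add c0 by simp
qed

definition DA where "DA = {d \<in> D. orb s d \<inter> Cd = {}}"

lemma zc_sp_ge: "zc sp Dp \<ge> zc s D + card Cd"
proof -
  have DAsub: "DA \<subseteq> D" unfolding DA_def by blast
  have DAcl: "\<And>d. d \<in> DA \<Longrightarrow> s d \<in> DA"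
  proof -
    fix d assume d: "d \<in> DA"
    have "orb s (s d) = orb s d" using orb_step_eq[OF permS_s] d unfolding DA_def by blast
    thus "s d \<in> DA" using d sD unfolding DA_def by auto
  qed
  have addD: "zc s D = zc s DA + zc s (D - DA)" by (rule zc_add[OF permS_s DAsub DAcl])
  have "orb s ` (D - DA) \<subseteq> orb s ` Cd"
  proof
    fix B assume "B \<in> orb s ` (D - DA)"
    then obtain d where d: "d \<in> D" "d \<notin> DA" "B = orb s d" by blast
    then obtain x where x: "x \<in> Cd" "x \<in> orb s d" unfolding DA_def by blast
    have "orb s x = orb s d" by (rule orb_eq[OF permS_s d(1) x(2)])
    thus "B \<in> orb s ` Cd" using x d by blast
  qed
  hence "zc s (D - DA) \<le> card (orb s ` Cd)" unfolding zc_def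
    by (rule card_mono[rotated]) (use finCd in blast)
  also have "\<dots> \<le> card Cd" by (rule card_image_le[OF finCd])
  finally have c1: "zc s D \<le> zc s DA + card Cd" using addD by simp
  define A' where "A' = (\<lambda>d. (d, 0::nat)) ` DA"
  have A'sub: "A' \<subseteq> Dp" unfolding A'_def Dp_def DA_def by auto
  have spA: "sp (d, 0) = (s d, 0)" if d: "d \<in> DA" for d
  proof -
    have dD: "d \<in> D" using d unfolding DA_def by blast
    have nI: "d \<notin> I"
    proof
      assume "d \<in> I"
      hence "om d \<in> orb s d" by (rule om_in_vert)
      thus False using om_Cd[OF \<open>d \<in> I\<close>] d unfolding DA_def by blast
    qed
    have "s d \<notin> Cd" using d orb_step_in[OF orb_self[of d s]] unfolding DA_def by blast
    thus ?thesis using spB3[of 0 d] nI by simp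
  qed
  have A'cl: "\<And>z. z \<in> A' \<Longrightarrow> sp z \<in> A'" unfolding A'_def using spA DAcl by auto
  have addP: "zc sp Dp = zc sp A' + zc sp (Dp - A')" by (rule zc_add[OF permS_sp A'sub A'cl])
  have cA: "zc sp A' = zc s DA" unfolding A'_def
  proof (rule zc_conj)
    show "inj_on (\<lambda>d. (d, 0::nat)) DA" by (rule inj_onI) simp
    show "\<And>x. x \<in> DA \<Longrightarrow> s x \<in> DA" by (rule DAcl)
    show "\<And>x. x \<in> DA \<Longrightarrow> sp (x, 0) = (s x, 0)" by (rule spA)
    show "finite DA" using finD DAsub finite_subset by blast
  qed
  define F where "F = (\<lambda>z. orb sp z)"
  have Fsub: "F ` (Cd \<times> {0, 1}) \<subseteq> orb sp ` (Dp - A')"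
  proof
    fix B assume "B \<in> F ` (Cd \<times> {0, 1})"
    then obtain x l where xl: "x \<in> Cd" "l = 0 \<or> l = 1" "B = orb sp (x, l)" unfolding F_def by blast
    have "(x, l) \<in> Dp" using xl xD Dp_def by auto
    moreover have "(x, l) \<notin> A'" using xl orb_self[of x s] unfolding A'_def DA_def by auto
    ultimately show "B \<in> orb sp ` (Dp - A')" using xl by blast
  qed
  have Finj: "inj_on F (Cd \<times> {0, 1})"
  proof (rule inj_onI)
    fix z w assume z: "z \<in> Cd \<times> {0, 1}" and w: "w \<in> Cd \<times> {0, 1}" and eq: "F z = F w"
    obtain x l where zz: "z = (x, l)" "x \<in> Cd" "l = 0 \<or> l = 1" using z by blast
    obtain y k where ww: "w = (y, k)" "y \<in> Cd" "k = 0 \<or> k = 1" using w by blast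
    have zD: "z \<in> Dp" using zz xD Dp_def by auto
    have "w \<in> orb sp z" using eq orb_self[of w sp] unfolding F_def by simp
    hence "fst w \<in> orb s (fst z)" by (rule orb_sp_vert(1)[OF zD])
    hence "y \<in> orb s x" using zz ww by simp
    hence yx: "y = x" by (rule uniqCd[OF zz(2) ww(2)])
    have "l = k"
    proof (rule ccontr)
      assume "l \<noteq> k"
      hence "(l = 0 \<and> k = 1) \<or> (l = 1 \<and> k = 0)" using zz ww by auto
      thus False
      proof
        assume lk: "l = 0 \<and> k = 1"
        have "(x, 1) \<in> orb sp (x, 0)" using eq orb_self[of "(x,1::nat)" sp] zz ww yx lk unfolding F_def by simp
        thus False using x0_not_x1[OF zz(2)] by simp
      next
        assume lk: "l = 1 \<and> k = 0"
        have "(x, 1) \<in> orb sp (x, 0)" using eq orb_self[of "(x,1::nat)" sp] zz ww yx lk unfolding F_def by simp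
        thus False using x0_not_x1[OF zz(2)] by simp
      qed
    qed
    thus "z = w" using zz ww yx by simp
  qed
  have "card (F ` (Cd \<times> {0, 1})) = 2 * card Cd"
    using card_image[OF Finj] finCd by (simp add: card_cartesian_product)
  moreover have "card (F ` (Cd \<times> {0, 1})) \<le> zc sp (Dp - A')"
    unfolding zc_def by (rule card_mono[OF _ Fsub]) (use finDp in blast)
  ultimately have "2 * card Cd \<le> zc sp (Dp - A')" by simp
  thus ?thesis using addP cA c1 by simp
qed

lemma chi_ge: "int (zc sp Dp) - int (zc ap Dp) + int (zc fp Dp) \<ge> 4"
  using zc_sp_ge zc_ap_le zc_fp_ge euler unfolding fp_def by linarith

end

lemma comp_back:
  assumes "y \<in> S" "s y \<in> comp s b S x \<or> b y \<in> comp s b S x"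
  shows "y \<in> comp s b S x"
proof -
  have "(s y, y) \<in> Esym s b S" "(b y, y) \<in> Esym s b S" using assms(1) unfolding Esym_def by blast+
  thus ?thesis using assms(2) unfolding comp_def by (auto intro: rtrancl_into_rtrancl)
qed

lemma Esym_restrict:
  assumes K: "\<And>u v. (u, v) \<in> Esym p b S \<Longrightarrow> u \<in> K \<Longrightarrow> v \<in> K"
    and path: "(z, w) \<in> (Esym p b S)\<^sup>*" and z: "z \<in> S - K"
    and pS: "\<And>u. u \<in> S \<Longrightarrow> p u \<in> S" and bS: "\<And>u. u \<in> S \<Longrightarrow> b u \<in> S"
  shows "(z, w) \<in> (Esym p b (S - K))\<^sup>*"
  using path
proof (induct rule: rtrancl_induct)
  case base thus ?case by simp
next
  case (step u v)
  have uR: "u \<in> S - K"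
  proof -
    have "(z, u) \<in> (Esym p b S)\<^sup>*" using step(1) .
    moreover have "(z, u) \<in> (Esym p b S)\<^sup>* \<Longrightarrow> u \<in> S - K"
    proof (induct rule: rtrancl_induct)
      case base thus ?case using z .
    next
      case (step u' v')
      have "v' \<in> S" using step(2) pS bS unfolding Esym_def by blast
      moreover have "v' \<notin> K"
      proof
        assume "v' \<in> K"
        have "(v', u') \<in> Esym p b S" using step(2) sym_Esym[of p b S] unfolding sym_def by blast
        hence "u' \<in> K" using K \<open>v' \<in> K\<close> by blast
        thus False using step(3) by blast
      qed
      ultimately show ?case by blast
    qed
    ultimately show ?thesis by blast
  qed
  have vR: "v \<in> S - K"
  proof -
    have "v \<in> S" using step(2) pS bS unfolding Esym_def by blast
    moreover have "v \<notin> K"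
    proof
      assume "v \<in> K"
      have "(v, u) \<in> Esym p b S" using step(2) sym_Esym[of p b S] unfolding sym_def by blast
      hence "u \<in> K" using K \<open>v \<in> K\<close> by blast
      thus False using uR by blast
    qed
    ultimately show ?thesis by blast
  qed
  have "(u, v) \<in> Esym p b (S - K)"
    using step(2) uR vR unfolding Esym_def by blast
  thus ?case using step(3) by (simp add: rtrancl_into_rtrancl)
qed

context cyc
begin

abbreviation cc where "cc \<equiv> comp sp ap Dp"

lemma cc_fwd: "y \<in> cc x \<Longrightarrow> y \<in> Dp \<Longrightarrow> sp y \<in> cc x \<and> ap y \<in> cc x"
  using comp_step[of y sp ap Dp x] by simp

lemma cc_back_sp: "y \<in> Dp \<Longrightarrow> sp y \<in> cc x \<Longrightarrow> y \<in> cc x"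
  using comp_back[of y Dp sp ap x] by simp
lemma cc_back_ap: "y \<in> Dp \<Longrightarrow> ap y \<in> cc x \<Longrightarrow> y \<in> cc x"
  using comp_back[of y Dp sp ap x] by simp

lemma layer1_conn:
  assumes x0: "x0 \<in> Cd" and d: "d \<in> Cd \<or> d \<in> I"
  shows "(d, 1) \<in> cc (x0, 1)"
proof -
  have step: "(psi y, 1) \<in> cc (x0, 1)" if y: "y \<in> Cd" "(y, 1) \<in> cc (x0, 1)" for y
  proof -
    have yD: "(y, 1) \<in> Dp" using y Dp1 by simp
    have "ap (y, 1) \<in> cc (x0, 1)" using cc_fwd[OF y(2) yD] by blast
    hence "(a y, 1) \<in> cc (x0, 1)" by (simp add: ap_def)
    moreover have "sp (psi y, 1) = (a y, 1)" using spB2[of 1 "psi y"] psiCd[OF y(1)] a_iota_psi[OF y(1)] by simp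
    moreover have "(psi y, 1) \<in> Dp" using psiCd[OF y(1)] Dp1 by simp
    ultimately show ?thesis using cc_back_sp by metis
  qed
  have all: "(y, 1) \<in> cc (x0, 1)" if y: "y \<in> Cd" for y
  proof -
    have "y \<in> orb psi x0" by (rule single[OF x0 y])
    then obtain n where n: "y = (psi ^^ n) x0" unfolding orb_def by blast
    have "((psi ^^ n) x0, 1) \<in> cc (x0, 1) \<and> (psi ^^ n) x0 \<in> Cd" for n
    proof (induct n)
      case 0 thus ?case using comp_self x0 by simp
    next
      case (Suc n) thus ?case using step psiCd by simp
    qed
    thus ?thesis using n by blast
  qed
  show ?thesis
  proof (cases "d \<in> Cd")
    case True thus ?thesis by (rule all)
  next
    case False
    then obtain x where x: "x \<in> Cd" "d = a x" using d unfolding I_def by blast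
    have "(x, 1) \<in> cc (x0, 1)" by (rule all[OF x(1)])
    moreover have "(x, 1) \<in> Dp" using x Dp1 by simp
    ultimately have "ap (x, 1) \<in> cc (x0, 1)" using cc_fwd by blast
    thus ?thesis using x by (simp add: ap_def)
  qed
qed

lemma fp_Cd0: "x \<in> Cd \<Longrightarrow> fp (x, 0) = (psi x, 0)"
proof -
  assume x: "x \<in> Cd"
  have "a x \<in> I" using x unfolding I_def by blast
  moreover have "om (a x) = psi x" unfolding om_def using aa xD x by simp
  ultimately show ?thesis unfolding fp_def ap_def using spB1 by simp
qed

lemma layer0_Cd_conn:
  assumes x0: "x0 \<in> Cd" and y: "y \<in> Cd"
  shows "(y, 0) \<in> cc (x0, 0)"
proof -
  have step: "(psi y, 0) \<in> cc (x0, 0)" if y: "y \<in> Cd" "(y, 0) \<in> cc (x0, 0)" for y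
  proof -
    have yD: "(y, 0) \<in> Dp" using y xD Dp0 by simp
    have "ap (y, 0) \<in> cc (x0, 0)" using cc_fwd[OF y(2) yD] by blast
    moreover have "ap (y, 0) \<in> Dp" using ap_Dp[OF yD] .
    ultimately have "sp (ap (y, 0)) \<in> cc (x0, 0)" using cc_fwd by blast
    thus ?thesis using fp_Cd0[OF y(1)] unfolding fp_def by simp
  qed
  have "y \<in> orb psi x0" by (rule single[OF x0 y])
  then obtain n where n: "y = (psi ^^ n) x0" unfolding orb_def by blast
  have "((psi ^^ n) x0, 0) \<in> cc (x0, 0) \<and> (psi ^^ n) x0 \<in> Cd" for n
  proof (induct n)
    case 0 thus ?case using comp_self x0 by simp
  next
    case (Suc n) thus ?case using step psiCd by simp
  qed
  thus ?thesis using n by blast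
qed

lemma cc_union_back:
  assumes "y \<in> Dp" "sp y \<in> cc u \<union> cc v \<or> ap y \<in> cc u \<union> cc v"
  shows "y \<in> cc u \<union> cc v"
  using assms cc_back_sp[of y u] cc_back_ap[of y u] cc_back_sp[of y v] cc_back_ap[of y v] by blast

lemma all_conn:
  assumes x0: "x0 \<in> Cd" and z: "z \<in> Dp"
  shows "z \<in> cc (x0, 0) \<union> cc (x0, 1)"
proof -
  define G where "G = cc (x0, 0) \<union> cc (x0, 1)"
  have L0: "(d, 0) \<in> G" if d: "d \<in> D" for d
  proof -
    have "(d, x0) \<in> ({(x, a x) | x. x \<in> D} \<union> {(x, s x) | x. x \<in> D})\<^sup>*" by (rule connM[OF d xD[OF x0]])
    thus ?thesis
    proof (induct rule: converse_rtrancl_induct)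
      case base thus ?case unfolding G_def using comp_self[of "(x0,0::nat)" sp ap Dp] by blast
    next
      case (step d e)
      from step(1) consider (A) "d \<in> D" "e = a d" | (S) "d \<in> D" "e = s d" by blast
      thus ?case
      proof cases
        case A
        have "ap (d, 0) \<in> G" using A step(3) by (simp add: ap_def)
        thus ?thesis using cc_union_back[of "(d,0)"] A Dp0 unfolding G_def by blast
      next
        case S
        have dD: "(d, 0) \<in> Dp" using S Dp0 by simp
        show ?thesis
        proof (cases "d \<in> I")
          case True
          have "sp (d, 0) = (om d, 0)" using spB1 True by simp
          moreover have "(om d, 0) \<in> cc (x0, 0)" by (rule layer0_Cd_conn[OF x0 om_Cd[OF True]])
          ultimately show ?thesis using cc_union_back[OF dD] unfolding G_def by simp
        next
          case nI: False
          show ?thesis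
          proof (cases "s d \<in> Cd")
            case True
            have "sp (d, 0) = (s d, 1)" using spB3[of 0 d] nI True by simp
            moreover have "(s d, 1) \<in> cc (x0, 1)" by (rule layer1_conn[OF x0]) (use True in blast)
            ultimately show ?thesis using cc_union_back[OF dD] unfolding G_def by simp
          next
            case False
            have "sp (d, 0) = (s d, 0)" using spB3[of 0 d] nI False by simp
            hence "sp (d, 0) \<in> G" using step(3) S by simp
            thus ?thesis using cc_union_back[OF dD, of "(x0,0)" "(x0,1)"] unfolding G_def by blast
          qed
        qed
      qed
    qed
  qed
  show ?thesis
    using Dp_cases[OF z] L0 layer1_conn[OF x0] unfolding G_def by blast
qed

end

locale cnt = cyc +
  fixes x0
  assumes x0: "x0 \<in> Cd" and n1: "(x0, 1) \<notin> cc (x0, 0)"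
    and np: "\<And>d. (d, 0) \<in> cc (x0, 0) \<Longrightarrow> d \<notin> s0 \<and> d \<notin> s1"
begin

definition K where "K = cc (x0, 0)"

lemma x00: "(x0, 0) \<in> Dp" using x0 xD Dp0 by simp

lemma K_sub: "K \<subseteq> Dp" unfolding K_def by (rule comp_sub[OF sp_Dp ap_Dp x00])

lemma K_sp: "z \<in> K \<Longrightarrow> sp z \<in> K" using cc_fwd K_sub unfolding K_def by blast
lemma K_ap: "z \<in> K \<Longrightarrow> ap z \<in> K" using cc_fwd K_sub unfolding K_def by blast
lemma K_fp: "z \<in> K \<Longrightarrow> fp z \<in> K" using K_sp K_ap unfolding fp_def by simp

lemma K_layer: assumes z: "z \<in> K" shows "snd z = 0"
proof (rule ccontr)
  assume "snd z \<noteq> 0"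
  hence "snd z = 1" "fst z \<in> Cd \<or> fst z \<in> I" using z K_sub unfolding Dp_def by auto
  hence "z \<in> cc (x0, 1)" using layer1_conn[OF x0, of "fst z"] by (cases z) auto
  hence "cc z = cc (x0, 1)" by (rule comp_eq)
  moreover have "cc z = cc (x0, 0)" using z unfolding K_def by (rule comp_eq)
  ultimately have "(x0, 1) \<in> cc (x0, 0)" using comp_self[of "(x0,1::nat)" sp ap Dp] by simp
  thus False using n1 by simp
qed

lemma K_mem: assumes z: "z \<in> K" shows "\<exists>d. z = (d, 0) \<and> d \<in> D"
proof -
  obtain d l where zz: "z = (d, l)" by (cases z)
  have "l = 0" using K_layer[OF z] zz by simp
  moreover have "z \<in> Dp" using z K_sub by blast
  ultimately show ?thesis using zz Dp0 by blast
qed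

lemma Cd0_K: "x \<in> Cd \<Longrightarrow> (x, 0) \<in> K"
  unfolding K_def by (rule layer0_Cd_conn[OF x0])

lemma I0_K: "y \<in> I \<Longrightarrow> (y, 0) \<in> K"
proof -
  assume "y \<in> I"
  then obtain x where x: "x \<in> Cd" "y = a x" unfolding I_def by blast
  have "ap (x, 0) \<in> K" using K_ap Cd0_K[OF x(1)] by blast
  thus ?thesis using x by (simp add: ap_def)
qed

lemma permS_spK: "permS sp K" by (rule permS_closed(1)[OF permS_sp K_sub K_sp])
lemma permS_apK: "permS ap K" by (rule permS_closed(1)[OF permS_ap K_sub K_ap])
lemma permS_fpK: "permS fp K" by (rule permS_closed(1)[OF permS_fp K_sub K_fp])

lemma K_sp_nCd: assumes "(d, 0) \<in> K" "d \<notin> I" shows "s d \<notin> Cd"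
proof
  assume "s d \<in> Cd"
  hence "sp (d, 0) = (s d, 1)" using spB3[of 0 d] assms(2) by simp
  hence "snd (sp (d, 0)) = 1" by simp
  thus False using K_layer[OF K_sp[OF assms(1)]] by simp
qed

definition g where "g z = (if snd z = (0::nat) \<and> fst z \<in> Cd then 0 else lab (fst z))"
definition vc where "vc z = (if g z = g (sp z) then 0 else 1::nat)"
definition fc where "fc z = (if g z = g (fp z) then 0 else 1::nat)"
definition Q where "Q z = vc z + fc z + vc (ap z) + fc (ap z)"
definition ne :: "nat \<Rightarrow> nat \<Rightarrow> nat" where "ne u v = (if u = v then 0 else 1)"
definition es where "es x = ne 0 (lab (s x)) + ne (lab (a x)) 0 + ne (lab (a x)) (lab (s x))"
definition st where "st x = ne 0 (lab (s x)) + ne (lab (s x)) (lab (iota x)) + ne (lab (iota x)) 0"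

lemma Q_Cd: assumes x: "x \<in> Cd" shows "Q (x, 0) = es x"
proof -
  have sx: "s x \<notin> Cd" by (rule s_notCd[OF x])
  have ax: "a x \<in> I" using x unfolding I_def by blast
  have axC: "a x \<notin> Cd" using I_notCd[OF ax] .
  have xI: "x \<notin> I" using disj x by blast
  have sp1: "sp (x, 0) = (s x, 0)" using spB3[of 0 x] xI sx by simp
  have sp2: "sp (a x, 0) = (psi x, 0)" using spB1[of 0 "a x"] ax unfolding om_def using aa xD x by simp
  have g1: "g (x, 0) = 0" "g (s x, 0) = lab (s x)" "g (a x, 0) = lab (a x)" "g (psi x, 0) = 0"
    unfolding g_def using x sx axC psiCd by auto
  have fp1: "fp (x, 0) = (psi x, 0)" by (rule fp_Cd0[OF x])
  have fp2: "fp (a x, 0) = (s x, 0)" unfolding fp_def ap_def using aa[OF xD[OF x]] sp1 by simp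
  have "vc (x, 0) = ne 0 (lab (s x))" unfolding vc_def ne_def sp1 g1 by simp
  moreover have "fc (x, 0) = 0" unfolding fc_def fp1 g1 by simp
  moreover have "vc (a x, 0) = ne (lab (a x)) 0" unfolding vc_def ne_def sp2 g1 by simp
  moreover have "fc (a x, 0) = ne (lab (a x)) (lab (s x))" unfolding fc_def ne_def fp2 g1 by simp
  moreover have "ap (x, 0) = (a x, 0)" by (simp add: ap_def)
  ultimately show ?thesis unfolding Q_def es_def by simp
qed

lemma Q_I: assumes y: "y \<in> I" shows "Q (y, 0) = es (a y)"
proof -
  obtain x where x: "x \<in> Cd" "y = a x" using y unfolding I_def by blast
  have "Q (y, 0) = Q (x, 0)" unfolding Q_def ap_def using x aa xD by (simp add: add.commute add.left_commute)
  thus ?thesis using Q_Cd[OF x(1)] x aa xD by simp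
qed

lemma Q_other:
  assumes z: "(d, 0) \<in> K" and dC: "d \<notin> Cd" and dI: "d \<notin> I"
  shows "Q (d, 0) = 2"
proof -
  have dD: "d \<in> D" using z K_sub Dp0 by blast
  have adC: "a d \<notin> Cd" using aI_iff[OF aD[OF dD]] aa[OF dD] dI by simp
  have adI: "a d \<notin> I" using aI_iff[OF dD] dC by simp
  have z2: "(a d, 0) \<in> K" using K_ap[OF z] by (simp add: ap_def)
  have sd: "s d \<notin> Cd" by (rule K_sp_nCd[OF z dI])
  have sad: "s (a d) \<notin> Cd" by (rule K_sp_nCd[OF z2 adI])
  have sp1: "sp (d, 0) = (s d, 0)" using spB3[of 0 d] dI sd by simp
  have sp2: "sp (a d, 0) = (s (a d), 0)" using spB3[of 0 "a d"] adI sad by simp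
  have gs: "g (d, 0) = lab d" "g (s d, 0) = lab (s d)" "g (a d, 0) = lab (a d)" "g (s (a d), 0) = lab (s (a d))"
    unfolding g_def using dC sd adC sad by auto
  have l: "lab d \<le> 1" "lab (s d) \<le> 1" "lab (a d) \<le> 1" "lab (s (a d)) \<le> 1"
    using lab01 dD sD aD by (metis le_less less_one)+
  have G: "(lab d = lab (s d)) \<noteq> (lab (a d) = lab (s (a d)))" by (rule G2[OF dD])
  have fp1: "fp (d, 0) = (s (a d), 0)" unfolding fp_def ap_def using sp2 by simp
  have fp2: "fp (a d, 0) = (s d, 0)" unfolding fp_def ap_def using aa[OF dD] sp1 by simp
  have v1: "vc (d, 0) = ne (lab d) (lab (s d))" unfolding vc_def ne_def sp1 gs by simp
  have f1: "fc (d, 0) = ne (lab d) (lab (s (a d)))" unfolding fc_def ne_def fp1 gs by simp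
  have v2: "vc (a d, 0) = ne (lab (a d)) (lab (s (a d)))" unfolding vc_def ne_def sp2 gs by simp
  have f2: "fc (a d, 0) = ne (lab (a d)) (lab (s d))" unfolding fc_def ne_def fp2 gs by simp
  have "Q (d, 0) = ne (lab d) (lab (s d)) + ne (lab d) (lab (s (a d))) + ne (lab (a d)) (lab (s (a d)))
      + ne (lab (a d)) (lab (s d))"
    unfolding Q_def using v1 f1 v2 f2 by (simp add: ap_def)
  also have "\<dots> = 2" using l G unfolding ne_def by auto
  finally show ?thesis .
qed

end

context cnt
begin

lemma finK: "finite K" using K_sub finDp finite_subset by blast

lemma sum_Q: "2 * (\<Sum>z\<in>K. vc z + fc z) = (\<Sum>z\<in>K. Q z)"
proof -
  have bij: "bij_betw ap K K" using permS_apK unfolding permS_def by blast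
  have r1: "(\<Sum>z\<in>K. vc (ap z)) = (\<Sum>z\<in>K. vc z)" by (rule sum.reindex_bij_betw[OF bij])
  have r2: "(\<Sum>z\<in>K. fc (ap z)) = (\<Sum>z\<in>K. fc z)" by (rule sum.reindex_bij_betw[OF bij])
  have "(\<Sum>z\<in>K. Q z) = (\<Sum>z\<in>K. vc z) + (\<Sum>z\<in>K. fc z) + (\<Sum>z\<in>K. vc (ap z)) + (\<Sum>z\<in>K. fc (ap z))"
    unfolding Q_def by (simp add: sum.distrib)
  thus ?thesis using r1 r2 by (simp add: sum.distrib)
qed

lemma card_I: "card I = card Cd"
proof -
  have "inj_on a Cd" by (rule inj_onI) (metis aa xD)
  thus ?thesis unfolding I_def by (rule card_image)
qed

lemma sum_Q_val: "(\<Sum>z\<in>K. Q z) + 4 * card Cd = 2 * card K + 2 * (\<Sum>x\<in>Cd. es x)"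
proof -
  define C0 where "C0 = (\<lambda>x. (x, 0::nat)) ` Cd"
  define I0 where "I0 = (\<lambda>x. (x, 0::nat)) ` I"
  have C0K: "C0 \<subseteq> K" unfolding C0_def using Cd0_K by blast
  have I0K: "I0 \<subseteq> K" unfolding I0_def using I0_K by blast
  have CI: "C0 \<inter> I0 = {}" unfolding C0_def I0_def using disj by blast
  have finI: "finite I" unfolding I_def using finCd by blast
  have cC0: "card C0 = card Cd" unfolding C0_def by (rule card_image) (rule inj_onI, simp)
  have cI0: "card I0 = card Cd" unfolding I0_def using card_I by (subst card_image) (rule inj_onI, simp_all)
  have s1: "(\<Sum>z\<in>K. Q z) = (\<Sum>z\<in>K - (C0 \<union> I0). Q z) + (\<Sum>z\<in>C0 \<union> I0. Q z)"
    by (rule sum.subset_diff) (use C0K I0K finK in auto)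
  have s2: "(\<Sum>z\<in>C0 \<union> I0. Q z) = (\<Sum>z\<in>C0. Q z) + (\<Sum>z\<in>I0. Q z)"
    by (rule sum.union_disjoint) (use CI finCd finI C0_def I0_def in auto)
  have s3: "(\<Sum>z\<in>C0. Q z) = (\<Sum>x\<in>Cd. es x)"
  proof -
    have "(\<Sum>z\<in>C0. Q z) = (\<Sum>x\<in>Cd. Q (x, 0))" unfolding C0_def
      using sum.reindex[of "\<lambda>x. (x, 0::nat)" Cd Q] by (simp add: inj_on_def)
    also have "\<dots> = (\<Sum>x\<in>Cd. es x)" by (rule sum.cong[OF refl]) (rule Q_Cd)
    finally show ?thesis .
  qed
  have s4: "(\<Sum>z\<in>I0. Q z) = (\<Sum>x\<in>Cd. es x)"
  proof -
    have "(\<Sum>z\<in>I0. Q z) = (\<Sum>y\<in>I. Q (y, 0))" unfolding I0_def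
      using sum.reindex[of "\<lambda>x. (x, 0::nat)" I Q] by (simp add: inj_on_def)
    also have "\<dots> = (\<Sum>y\<in>I. es (a y))" by (rule sum.cong[OF refl]) (rule Q_I)
    also have "\<dots> = (\<Sum>x\<in>Cd. es (a (a x)))"
    proof -
      have "inj_on a Cd" by (rule inj_onI) (metis aa xD)
      thus ?thesis unfolding I_def using sum.reindex[of a Cd "\<lambda>y. es (a y)"] by simp
    qed
    also have "\<dots> = (\<Sum>x\<in>Cd. es x)" by (rule sum.cong[OF refl]) (simp add: aa xD)
    finally show ?thesis .
  qed
  have s5: "(\<Sum>z\<in>K - (C0 \<union> I0). Q z) = (\<Sum>z\<in>K - (C0 \<union> I0). 2)"
  proof (rule sum.cong[OF refl])
    fix z assume z: "z \<in> K - (C0 \<union> I0)"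
    then obtain d where d: "z = (d, 0)" "d \<in> D" using K_mem by blast
    have "d \<notin> Cd" "d \<notin> I" using z d unfolding C0_def I0_def by auto
    thus "Q z = 2" using Q_other z d by simp
  qed
  have c5: "card (K - (C0 \<union> I0)) + 2 * card Cd = card K"
  proof -
    have "card (C0 \<union> I0) = 2 * card Cd" using card_Un_disjoint[OF _ _ CI] cC0 cI0 finCd finI
      unfolding C0_def I0_def by simp
    moreover have "card (K - (C0 \<union> I0)) = card K - card (C0 \<union> I0)"
      by (rule card_Diff_subset) (use finK C0K I0K finite_subset in auto)
    moreover have "card (C0 \<union> I0) \<le> card K" by (rule card_mono[OF finK]) (use C0K I0K in auto)
    ultimately show ?thesis by simp
  qed
  show ?thesis using s1 s2 s3 s4 s5 c5 by simp
qed

lemma lab_le1: "d \<in> D \<Longrightarrow> lab d \<le> 1" using lab01 by fastforce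

lemma telescope: "(\<Sum>x\<in>Cd. es x) \<le> (\<Sum>x\<in>Cd. st x)"
proof -
  have bij: "bij_betw psi Cd Cd" using permS_psi unfolding permS_def by blast
  have r1: "(\<Sum>x\<in>Cd. ne (lab (a x)) 0) = (\<Sum>x\<in>Cd. ne (lab (iota x)) 0)"
  proof -
    have "(\<Sum>x\<in>Cd. ne (lab (a x)) 0) = (\<Sum>x\<in>Cd. ne (lab (iota (psi x))) 0)"
      by (rule sum.cong[OF refl]) (simp add: a_iota_psi)
    also have "\<dots> = (\<Sum>x\<in>Cd. ne (lab (iota x)) 0)" by (rule sum.reindex_bij_betw[OF bij])
    finally show ?thesis .
  qed
  have r2: "(\<Sum>x\<in>Cd. int (lab (a x))) = (\<Sum>x\<in>Cd. int (lab (iota x)))"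
  proof -
    have "(\<Sum>x\<in>Cd. int (lab (a x))) = (\<Sum>x\<in>Cd. int (lab (iota (psi x))))"
      by (rule sum.cong[OF refl]) (simp add: a_iota_psi)
    also have "\<dots> = (\<Sum>x\<in>Cd. int (lab (iota x)))" by (rule sum.reindex_bij_betw[OF bij])
    finally show ?thesis .
  qed
  define sg :: int where "sg = (if c = 0 then -1 else 1)"
  have edge: "int (lab (a x)) - int (lab (s x)) = sg * int (ne (lab (a x)) (lab (s x)))" if x: "x \<in> Cd" for x
  proof -
    have l: "lab (a x) \<le> 1" "lab (s x) \<le> 1" "lab x \<le> 1" using lab_le1 x xD aD sD by auto
    have o: "outd lab s a c x" by (rule outC[OF x])
    have "lab (a x) \<noteq> lab (s x) \<Longrightarrow> lab (a x) = c"
      using o l c01 unfolding outd_def by auto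
    thus ?thesis using l c01 unfolding sg_def ne_def by (cases "c = 0") auto
  qed
  have vert: "sg * (int (lab (iota x)) - int (lab (s x))) \<le> int (ne (lab (s x)) (lab (iota x)))" if x: "x \<in> Cd" for x
  proof -
    have l: "lab (iota x) \<le> 1" "lab (s x) \<le> 1" using lab_le1 iota_D x xD sD by auto
    thus ?thesis unfolding sg_def ne_def by auto
  qed
  have sgsq: "sg * sg = 1" unfolding sg_def by simp
  have "(\<Sum>x\<in>Cd. int (ne (lab (a x)) (lab (s x)))) = sg * (\<Sum>x\<in>Cd. int (lab (a x)) - int (lab (s x)))"
  proof -
    have "(\<Sum>x\<in>Cd. int (lab (a x)) - int (lab (s x))) = (\<Sum>x\<in>Cd. sg * int (ne (lab (a x)) (lab (s x))))"
      by (rule sum.cong[OF refl]) (rule edge)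
    hence "sg * (\<Sum>x\<in>Cd. int (lab (a x)) - int (lab (s x))) = sg * sg * (\<Sum>x\<in>Cd. int (ne (lab (a x)) (lab (s x))))"
      by (simp add: sum_distrib_left mult.assoc)
    thus ?thesis using sgsq by simp
  qed
  also have "\<dots> = (\<Sum>x\<in>Cd. sg * (int (lab (iota x)) - int (lab (s x))))"
    using r2 by (simp add: sum_subtractf sum_distrib_left[symmetric])
  also have "\<dots> \<le> (\<Sum>x\<in>Cd. int (ne (lab (s x)) (lab (iota x))))"
    by (rule sum_mono) (rule vert)
  finally have "int (\<Sum>x\<in>Cd. ne (lab (a x)) (lab (s x))) \<le> int (\<Sum>x\<in>Cd. ne (lab (s x)) (lab (iota x)))"
    by simp
  hence m: "(\<Sum>x\<in>Cd. ne (lab (a x)) (lab (s x))) \<le> (\<Sum>x\<in>Cd. ne (lab (s x)) (lab (iota x)))" by linarith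
  have "(\<Sum>x\<in>Cd. es x) = (\<Sum>x\<in>Cd. ne 0 (lab (s x))) + (\<Sum>x\<in>Cd. ne (lab (a x)) 0) + (\<Sum>x\<in>Cd. ne (lab (a x)) (lab (s x)))"
    unfolding es_def by (simp add: sum.distrib)
  moreover have "(\<Sum>x\<in>Cd. st x) = (\<Sum>x\<in>Cd. ne 0 (lab (s x))) + (\<Sum>x\<in>Cd. ne (lab (s x)) (lab (iota x))) + (\<Sum>x\<in>Cd. ne (lab (iota x)) 0)"
    unfolding st_def by (simp add: sum.distrib)
  ultimately show ?thesis using r1 m by simp
qed

end

lemma arith_test:
  fixes V F Q k Kc E zs St zf :: nat
  shows "2*V + 2*F = Q \<Longrightarrow> Q + 4*k = 2*Kc + 2*E \<Longrightarrow> 2*zs + St \<le> V + 2*k \<Longrightarrow> 2*zf \<le> F + 2 \<Longrightarrow> E \<le> St \<Longrightarrow> 2*(zs+zf) \<le> Kc + 2"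
  by presburger

lemma path_ne:
  fixes f :: "nat \<Rightarrow> nat"
  assumes "1 \<le> m"
  shows "(\<Sum>n<m. (if f n = f (Suc n) then 0 else 1::nat)) \<ge>
         (if f 0 = f 1 then 0 else 1) + (if f 1 = f m then 0 else 1)"
  using assms
proof (induct m)
  case 0 thus ?case by simp
next
  case (Suc m)
  show ?case
  proof (cases "m = 0")
    case True thus ?thesis by simp
  next
    case False
    hence IH: "(\<Sum>n<m. (if f n = f (Suc n) then 0 else 1::nat)) \<ge>
         (if f 0 = f 1 then 0 else 1) + (if f 1 = f m then 0 else 1)" using Suc by simp
    have "(\<Sum>n<Suc m. (if f n = f (Suc n) then 0 else 1::nat)) =
          (\<Sum>n<m. (if f n = f (Suc n) then 0 else 1::nat)) + (if f m = f (Suc m) then 0 else 1)" by simp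
    moreover have "(if f 1 = f m then 0 else 1::nat) + (if f m = f (Suc m) then 0 else 1) \<ge> (if f 1 = f (Suc m) then 0 else 1)"
      by auto
    ultimately show ?thesis using IH by linarith
  qed
qed

context cnt
begin

lemma ne_sym: "ne u v = ne v u" unfolding ne_def by auto

lemma Lsum:
  assumes x: "x \<in> Cd"
  shows "(\<Sum>z\<in>orb sp (x, 0). vc z) \<ge> st x"
proof -
  define m where "m = mm x"
  have m1: "1 \<le> m" using mm_pos[OF x] unfolding m_def by simp
  have inj: "inj_on (\<lambda>n. ((s ^^ n) x, 0::nat)) {..m}"
  proof (rule inj_onI)
    fix i j assume ij: "i \<in> {..m}" "j \<in> {..m}" "((s ^^ i) x, 0::nat) = ((s ^^ j) x, 0)"
    hence e: "(s ^^ i) x = (s ^^ j) x" by simp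
    have bij: "bij_betw s D D" using permS_s unfolding permS_def by blast
    { fix i j assume ij': "i < j" "j \<le> m" "(s ^^ i) x = (s ^^ j) x"
      have "(s ^^ i) ((s ^^ (j - i)) x) = (s ^^ (i + (j - i))) x" by (simp add: funpow_add)
      hence "(s ^^ i) ((s ^^ (j - i)) x) = (s ^^ i) x" using ij' by simp
      moreover have "inj_on (s ^^ i) D" using bij_betw_funpow[OF bij] bij_betw_def by blast
      moreover have "(s ^^ (j - i)) x \<in> D" using fpow_D xD[OF x] by blast
      ultimately have "(s ^^ (j - i)) x = x" using xD[OF x] unfolding inj_on_def by blast
      hence False using mm_noret[OF x, of "j - i"] ij' unfolding m_def by simp }
    note * = this
    show "i = j"
    proof (rule ccontr)
      assume "i \<noteq> j"
      thus False using * ij e by (metis atMost_iff linorder_neqE_nat)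
    qed
  qed
  have Leq: "orb sp (x, 0) = (\<lambda>n. ((s ^^ n) x, 0::nat)) ` {..m}"
    unfolding orb_L[OF x] Lset_def m_def by auto
  define f where "f n = g ((s ^^ n) x, 0)" for n
  have f0: "f 0 = 0" unfolding f_def g_def using x by simp
  have fn: "f n = lab ((s ^^ n) x)" if "1 \<le> n" "n \<le> m" for n
  proof -
    have "(s ^^ n) x \<notin> Cd"
    proof
      assume "(s ^^ n) x \<in> Cd"
      hence "(s ^^ n) x = x" using uniqCd[OF x] fpow_vert by blast
      thus False using mm_noret[OF x, of n] that unfolding m_def by simp
    qed
    thus ?thesis unfolding f_def g_def by simp
  qed
  have vcn: "vc ((s ^^ n) x, 0) = (if f n = f (Suc n) then 0 else 1)" if "n < m" for n
  proof -
    have "sp ((s ^^ n) x, 0) = ((s ^^ Suc n) x, 0)" using iter_step[OF x, of n] that unfolding m_def by blast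
    thus ?thesis unfolding vc_def f_def by (simp only:)
  qed
  have vcm: "vc ((s ^^ m) x, 0) = (if f m = f 0 then 0 else 1)"
  proof -
    have "sp ((s ^^ m) x, 0) = ((s ^^ 0) x, 0)" using sp_mm[OF x] unfolding m_def by simp
    thus ?thesis unfolding vc_def f_def by (simp only:)
  qed
  have "(\<Sum>z\<in>orb sp (x, 0). vc z) = (\<Sum>n\<in>{..m}. vc ((s ^^ n) x, 0))"
    unfolding Leq using sum.reindex[OF inj, of vc] by (simp add: comp_def)
  also have "\<dots> = (\<Sum>n<m. vc ((s ^^ n) x, 0)) + vc ((s ^^ m) x, 0)"
    by (simp add: lessThan_Suc_atMost[symmetric])
  also have "\<dots> = (\<Sum>n<m. (if f n = f (Suc n) then 0 else 1)) + (if f m = f 0 then 0 else 1)"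
    using vcn vcm by simp
  finally have S: "(\<Sum>z\<in>orb sp (x, 0). vc z) = (\<Sum>n<m. (if f n = f (Suc n) then 0 else 1)) + (if f m = f 0 then 0 else 1)" .
  have P: "(\<Sum>n<m. (if f n = f (Suc n) then 0 else 1::nat)) \<ge> (if f 0 = f 1 then 0 else 1) + (if f 1 = f m then 0 else 1)"
    by (rule path_ne[OF m1])
  have f1: "f 1 = lab (s x)" using fn[of 1] m1 by simp
  have fm: "f m = lab (iota x)" using fn[of m] m1 mm_prop[OF x] unfolding m_def by simp
  have "st x = (if f 0 = f 1 then 0 else 1) + (if f 1 = f m then 0 else 1) + (if f m = f 0 then 0 else 1)"
    unfolding st_def ne_def f0 f1 fm by simp
  thus ?thesis using S P by linarith
qed

lemma vclass:
  assumes z: "(d, 0) \<in> K" and x: "x \<in> Cd" "x \<in> orb s d"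
  shows "orb sp (d, 0) = orb sp (x, 0)"
proof -
  have zD: "(d, 0) \<in> Dp" using z K_sub by blast
  have dD: "d \<in> D" using zD Dp0 by simp
  have OK: "orb sp (d, 0) \<subseteq> K" by (rule orb_closed_min[OF K_sp z])
  have oxd: "orb s x = orb s d" by (rule orb_eq[OF permS_s dD x(2)])
  have xO: "(x, 0) \<in> orb sp (d, 0)"
  proof (cases "\<exists>y. (y, 0) \<in> orb sp (d, 0) \<and> y \<in> I")
    case True
    then obtain y where y: "(y, 0) \<in> orb sp (d, 0)" "y \<in> I" by blast
    have "y \<in> orb s d" using orb_sp_vert(1)[OF zD y(1)] by simp
    hence "y = iota x" using uniqI[OF x(1) y(2)] oxd by simp
    hence "sp (y, 0) = (x, 0)" using spB1[of 0 y] y(2) om_iota[OF x(1)] by simp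
    thus ?thesis using orb_step_in[OF y(1)] by simp
  next
    case False
    define q where "q = (\<lambda>w::_ \<times> nat. (s (fst w), 0::nat))"
    have qs: "sp w = q w" if w: "w \<in> orb sp (d, 0)" for w
    proof -
      obtain e where e: "w = (e, 0)" using K_mem OK w by blast
      have eI: "e \<notin> I" using False w e by blast
      have eK: "(e, 0) \<in> K" using OK w e by blast
      have "s e \<notin> Cd" by (rule K_sp_nCd[OF eK eI])
      thus ?thesis using spB3[of 0 e] eI e unfolding q_def by simp
    qed
    have "orb q (d, 0) = orb sp (d, 0)"
    proof (rule orb_cong[where T="orb sp (d,0)"])
      show "\<And>z. z \<in> orb sp (d, 0) \<Longrightarrow> sp z \<in> orb sp (d, 0)" by (rule orb_step_in)
      show "\<And>z. z \<in> orb sp (d, 0) \<Longrightarrow> q z = sp z" using qs by simp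
      show "(d, 0) \<in> orb sp (d, 0)" by (rule orb_self)
    qed
    moreover have "((s ^^ n) d, 0) \<in> orb q (d, 0)" for n
    proof -
      have "(q ^^ n) (d, 0) = ((s ^^ n) d, 0)" by (induct n) (simp_all add: q_def)
      thus ?thesis using orb_iter[of n q "(d,0)"] by simp
    qed
    moreover obtain n where "x = (s ^^ n) d" using x(2) unfolding orb_def by blast
    ultimately show ?thesis by metis
  qed
  show ?thesis by (rule orb_eq[OF permS_sp zD xO, symmetric])
qed

lemma vrest:
  assumes z: "(d, 0) \<in> K" and nc: "orb s d \<inter> Cd = {}"
  shows "(\<Sum>w\<in>orb sp (d, 0). vc w) = 2"
proof -
  have zD: "(d, 0) \<in> Dp" using z K_sub by blast
  have dD: "d \<in> D" using zD Dp0 by simp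
  have Osub: "orb s d \<subseteq> D" by (rule orb_sub[OF permS_s dD])
  have eprop: "e \<notin> I \<and> s e \<notin> Cd \<and> e \<notin> Cd" if e: "e \<in> orb s d" for e
  proof -
    have eD: "e \<in> D" using e Osub by blast
    have oe: "orb s e = orb s d" by (rule orb_eq[OF permS_s dD e])
    have "e \<notin> I"
    proof
      assume "e \<in> I"
      hence "om e \<in> orb s e" by (rule om_in_vert)
      thus False using om_Cd[OF \<open>e \<in> I\<close>] nc oe by blast
    qed
    moreover have "s e \<notin> Cd" using orb_step_in[OF e] nc by blast
    moreover have "e \<notin> Cd" using e nc by blast
    ultimately show ?thesis by blast
  qed
  have cm: "sp (e, 0) = (s e, 0)" if "e \<in> orb s d" for e
    using spB3[of 0 e] eprop[OF that] by simp
  have oc: "orb sp (d, 0) = (\<lambda>e. (e, 0::nat)) ` orb s d"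
    by (rule orb_conj[where A="orb s d"]) (auto intro: orb_step_in orb_self cm)
  have "(\<Sum>w\<in>orb sp (d, 0). vc w) = (\<Sum>e\<in>orb s d. vc (e, 0))"
    unfolding oc using sum.reindex[of "\<lambda>e. (e, 0::nat)" "orb s d" vc] by (simp add: inj_on_def)
  also have "\<dots> = (\<Sum>e\<in>orb s d. (if lab e = lab (s e) then 0 else 1))"
  proof (rule sum.cong[OF refl])
    fix e assume e: "e \<in> orb s d"
    show "vc (e, 0) = (if lab e = lab (s e) then 0 else 1)"
      unfolding vc_def g_def using cm[OF e] eprop[OF e] by simp
  qed
  also have "\<dots> = 2"
  proof (rule vsum[OF dD])
    show "orb s d \<noteq> s0" using np[OF z[unfolded K_def]] orb_self[of d s] by blast
    show "orb s d \<noteq> s1" using np[OF z[unfolded K_def]] orb_self[of d s] by blast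
  qed
  finally show ?thesis .
qed

lemma V_bound: "(\<Sum>z\<in>K. vc z) + 2 * card Cd \<ge> 2 * zc sp K + (\<Sum>x\<in>Cd. st x)"
proof -
  define OS where "OS = orb sp ` K"
  define OL where "OL = (\<lambda>x. orb sp (x, 0)) ` Cd"
  have finOS: "finite OS" unfolding OS_def using finK by blast
  have OLsub: "OL \<subseteq> OS" unfolding OL_def OS_def using Cd0_K by blast
  have injL: "inj_on (\<lambda>x. orb sp (x, 0)) Cd"
  proof (rule inj_onI)
    fix x y assume x: "x \<in> Cd" and y: "y \<in> Cd" and e: "orb sp (x, 0) = orb sp (y, 0)"
    have xD0: "(x, 0) \<in> Dp" using x xD Dp0 by simp
    have "(y, 0) \<in> orb sp (x, 0)" using e orb_self[of "(y,0::nat)" sp] by simp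
    hence "fst (y, 0::nat) \<in> orb s (fst (x, 0::nat))" by (rule orb_sp_vert(1)[OF xD0])
    hence "y \<in> orb s x" by simp
    thus "x = y" using uniqCd[OF x y] by simp
  qed
  have cOL: "card OL = card Cd" unfolding OL_def by (rule card_image[OF injL])
  have s0: "(\<Sum>z\<in>K. vc z) = (\<Sum>B\<in>OS. sum vc B)" unfolding OS_def by (rule sum_orbits[OF permS_spK])
  have s1: "(\<Sum>B\<in>OS. sum vc B) = (\<Sum>B\<in>OS - OL. sum vc B) + (\<Sum>B\<in>OL. sum vc B)"
    by (rule sum.subset_diff[OF OLsub finOS])
  have s2: "(\<Sum>B\<in>OL. sum vc B) = (\<Sum>x\<in>Cd. sum vc (orb sp (x, 0)))"
    unfolding OL_def using sum.reindex[OF injL, of "sum vc"] by (simp add: comp_def)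
  have s3: "(\<Sum>x\<in>Cd. sum vc (orb sp (x, 0))) \<ge> (\<Sum>x\<in>Cd. st x)"
    by (rule sum_mono) (rule Lsum)
  have s4: "(\<Sum>B\<in>OS - OL. sum vc B) = (\<Sum>B\<in>OS - OL. 2)"
  proof (rule sum.cong[OF refl])
    fix B assume B: "B \<in> OS - OL"
    then obtain z where z: "z \<in> K" "B = orb sp z" unfolding OS_def by blast
    obtain d where d: "z = (d, 0)" "d \<in> D" using K_mem[OF z(1)] by blast
    have "orb s d \<inter> Cd = {}"
    proof (rule ccontr)
      assume "orb s d \<inter> Cd \<noteq> {}"
      then obtain x where "x \<in> Cd" "x \<in> orb s d" by blast
      hence "B = orb sp (x, 0)" using vclass z d by simp
      hence "B \<in> OL" unfolding OL_def using \<open>x \<in> Cd\<close> by blast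
      thus False using B by blast
    qed
    thus "sum vc B = 2" using vrest z d by simp
  qed
  have c4: "card (OS - OL) = zc sp K - card Cd"
    using card_Diff_subset[OF _ OLsub] finOS cOL finite_subset[OF OLsub finOS] unfolding zc_def OS_def by simp
  have c5: "card Cd \<le> zc sp K" using card_mono[OF finOS OLsub] cOL unfolding zc_def OS_def by simp
  show ?thesis using s0 s1 s2 s3 s4 c4 c5 by simp
qed

lemma fp_iter_Cd: "((fp ^^ n) (x0, 0)) = ((psi ^^ n) x0, 0) \<and> (psi ^^ n) x0 \<in> Cd"
  by (induct n) (simp_all add: x0 fp_Cd0 psiCd)

lemma frest:
  assumes z: "(d, 0) \<in> K" and nb: "orb fp (d, 0) \<noteq> orb fp (x0, 0)"
  shows "(\<Sum>w\<in>orb fp (d, 0). fc w) = 2"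
proof -
  have zD: "(d, 0) \<in> Dp" using z K_sub by blast
  have dD: "d \<in> D" using zD Dp0 by simp
  have x0D: "(x0, 0) \<in> Dp" by (rule x00)
  have dC: "d \<notin> Cd"
  proof
    assume "d \<in> Cd"
    hence "d \<in> orb psi x0" by (rule single[OF x0])
    then obtain n where "d = (psi ^^ n) x0" unfolding orb_def by blast
    hence "(d, 0) \<in> orb fp (x0, 0)" using fp_iter_Cd[of n] orb_iter[of n fp "(x0,0)"] by simp
    hence "orb fp (d, 0) = orb fp (x0, 0)" by (rule orb_eq[OF permS_fp x0D])
    thus False using nb by simp
  qed
  have rd: "rho d = (d, 0)" unfolding rho_def using dC by simp
  have oc: "orb fp (rho d) = rho ` orb (s \<circ> a) d"
  proof (rule orb_conj[where A=D])
    show "\<And>x. x \<in> D \<Longrightarrow> (s \<circ> a) x \<in> D" using sD aD by simp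
    show "\<And>x. x \<in> D \<Longrightarrow> fp (rho x) = rho ((s \<circ> a) x)" by (rule fp_rho)
    show "d \<in> D" by (rule dD)
  qed
  have OK: "orb fp (d, 0) \<subseteq> K" by (rule orb_closed_min[OF K_fp z])
  have enC: "e \<notin> Cd" if e: "e \<in> orb (s \<circ> a) d" for e
  proof -
    have "rho e \<in> rho ` orb (s \<circ> a) d" using e by (rule imageI)
    hence "rho e \<in> orb fp (d, 0)" using oc rd by simp
    hence "rho e \<in> K" using OK by blast
    thus ?thesis using K_layer unfolding rho_def by fastforce
  qed
  have "(\<Sum>w\<in>orb fp (d, 0). fc w) = (\<Sum>e\<in>orb (s \<circ> a) d. fc (rho e))"
    using oc rd sum.reindex[of rho "orb (s \<circ> a) d" fc] by (simp add: inj_on_def rho_def)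
  also have "\<dots> = (\<Sum>e\<in>orb (s \<circ> a) d. (if lab e = lab ((s \<circ> a) e) then 0 else 1))"
  proof (rule sum.cong[OF refl])
    fix e assume e: "e \<in> orb (s \<circ> a) d"
    have eD: "e \<in> D" using orb_sub[OF permS_f dD] e by blast
    have e2: "(s \<circ> a) e \<in> orb (s \<circ> a) d" by (rule orb_step_in[OF e])
    have "fp (rho e) = rho ((s \<circ> a) e)" by (rule fp_rho[OF eD])
    thus "fc (rho e) = (if lab e = lab ((s \<circ> a) e) then 0 else 1)"
      unfolding fc_def g_def rho_def using enC[OF e] enC[OF e2] by simp
  qed
  also have "\<dots> = 2" by (rule fsum[OF dD])
  finally show ?thesis .
qed

lemma F_bound: "(\<Sum>z\<in>K. fc z) + 2 \<ge> 2 * zc fp K"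
proof -
  define OS where "OS = orb fp ` K"
  define B0 where "B0 = orb fp (x0, 0)"
  have finOS: "finite OS" unfolding OS_def using finK by blast
  have B0in: "B0 \<in> OS" unfolding OS_def B0_def using Cd0_K[OF x0] by blast
  have s0: "(\<Sum>z\<in>K. fc z) = (\<Sum>B\<in>OS. sum fc B)" unfolding OS_def by (rule sum_orbits[OF permS_fpK])
  have s1: "(\<Sum>B\<in>OS. sum fc B) \<ge> (\<Sum>B\<in>OS - {B0}. sum fc B)"
    by (rule sum_mono2[OF finOS]) auto
  have s2: "(\<Sum>B\<in>OS - {B0}. sum fc B) = (\<Sum>B\<in>OS - {B0}. 2)"
  proof (rule sum.cong[OF refl])
    fix B assume B: "B \<in> OS - {B0}"
    then obtain z where z: "z \<in> K" "B = orb fp z" unfolding OS_def by blast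
    obtain d where d: "z = (d, 0)" "d \<in> D" using K_mem[OF z(1)] by blast
    show "sum fc B = 2" using frest[of d] z d B unfolding B0_def by simp
  qed
  have c: "card (OS - {B0}) = card OS - 1" using B0in finOS by simp
  have c1: "card OS \<ge> 1" using B0in finOS card_0_eq by fastforce
  show ?thesis using s0 s1 s2 c c1 unfolding zc_def OS_def[symmetric] by simp
qed

lemma count: "2 * (zc sp K + zc fp K) \<le> card K + 2"
proof -
  have a1: "2 * ((\<Sum>z\<in>K. vc z) + (\<Sum>z\<in>K. fc z)) = (\<Sum>z\<in>K. Q z)" using sum_Q by (simp add: sum.distrib)
  have f1: "2 * sum vc K + 2 * sum fc K = sum Q K" using sum_Q by (simp add: sum.distrib)
  have f2: "sum Q K + 4 * card Cd = 2 * card K + 2 * sum es Cd" using sum_Q_val by simp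
  have f3: "2 * zc sp K + sum st Cd \<le> sum vc K + 2 * card Cd" using V_bound by simp
  have f4: "2 * zc fp K \<le> sum fc K + 2" using F_bound by simp
  have f5: "sum es Cd \<le> sum st Cd" using telescope by simp
  show ?thesis using arith_test[OF f1 f2 f3 f4 f5] .
qed

end

lemma card_le_2zc:
  assumes perm: "permS p S" and inv: "\<And>x. x \<in> S \<Longrightarrow> p (p x) = x"
  shows "card S \<le> 2 * zc p S"
proof -
  have "card S = (\<Sum>x\<in>S. 1::nat)" by simp
  also have "\<dots> = (\<Sum>B\<in>orb p ` S. \<Sum>x\<in>B. 1::nat)" by (rule sum_orbits[OF perm])
  also have "\<dots> \<le> (\<Sum>B\<in>orb p ` S. 2)"
  proof (rule sum_mono)
    fix B assume "B \<in> orb p ` S"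
    then obtain x where x: "x \<in> S" "B = orb p x" by blast
    have "orb p x \<subseteq> {x, p x}"
    proof (rule orb_closed_min)
      show "x \<in> {x, p x}" by simp
      fix z assume "z \<in> {x, p x}" thus "p z \<in> {x, p x}" using inv[OF x(1)] by auto
    qed
    hence "card B \<le> card {x, p x}" using x by (simp add: card_mono)
    also have "\<dots> \<le> 2" by (simp add: card_insert_if)
    finally show "(\<Sum>x\<in>B. 1::nat) \<le> 2" by simp
  qed
  also have "\<dots> = 2 * zc p S" unfolding zc_def by simp
  finally show ?thesis .
qed

context cyc
begin

lemma ap_inv_Dp: "z \<in> Dp \<Longrightarrow> ap z \<in> Dp \<and> ap z \<noteq> z \<and> ap (ap z) = z"
  using ap_Dp ap_ne ap_ap by blast

lemma chi_connected_False:
  assumes conn: "\<And>z w. z \<in> Dp \<Longrightarrow> w \<in> Dp \<Longrightarrow> (z, w) \<in> (Esym sp ap Dp)\<^sup>*"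
  shows False
proof -
  have ne: "Dp \<noteq> {}" using Cdne xD Dp0 by fastforce
  have "zc sp Dp + zc (sp \<circ> ap) Dp \<le> zc ap Dp + 2"
    by (rule RH[OF permS_sp ap_inv_Dp ne conn])
  thus False using chi_ge unfolding fp_def by linarith
qed

lemma LL:
  assumes x0: "x0 \<in> Cd"
  shows "\<exists>d. (d \<in> s0 \<or> d \<in> s1) \<and> (d, 0) \<in> cc (x0, 0)"
proof (rule ccontr)
  assume "\<not> ?thesis"
  hence np: "\<And>d. (d, 0) \<in> cc (x0, 0) \<Longrightarrow> d \<notin> s0 \<and> d \<notin> s1" by blast
  have x00: "(x0, 0) \<in> Dp" using x0 xD Dp0 by simp
  have x01: "(x0, 1) \<in> Dp" using x0 Dp1 by simp
  show False
  proof (cases "(x0, 1) \<in> cc (x0, 0)")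
    case True
    have "cc (x0, 1) = cc (x0, 0)" by (rule comp_eq[OF True])
    hence all: "z \<in> cc (x0, 0)" if "z \<in> Dp" for z using all_conn[OF x0 that] by blast
    show False
    proof (rule chi_connected_False)
      fix z w assume z: "z \<in> Dp" and w: "w \<in> Dp"
      have "((x0, 0), z) \<in> (Esym sp ap Dp)\<^sup>*" "((x0, 0), w) \<in> (Esym sp ap Dp)\<^sup>*"
        using all[OF z] all[OF w] unfolding comp_def by auto
      thus "(z, w) \<in> (Esym sp ap Dp)\<^sup>*" using rtrancl_sym_sym[OF sym_Esym] by (meson rtrancl_trans)
    qed
  next
    case False
    interpret cnt D a s fo s0 s1 lab c Cd psi x0
      by unfold_locales (use x0 False np in auto)
    define R where "R = Dp - K"
    have cnt1: "2 * (zc sp K + zc fp K) \<le> card K + 2" by (rule count)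
    have cnt2: "card K \<le> 2 * zc ap K" by (rule card_le_2zc[OF permS_apK]) (use ap_ap K_sub in blast)
    have aS: "zc sp Dp = zc sp K + zc sp R" unfolding R_def by (rule zc_add[OF permS_sp K_sub K_sp])
    have aA: "zc ap Dp = zc ap K + zc ap R" unfolding R_def by (rule zc_add[OF permS_ap K_sub K_ap])
    have aF: "zc fp Dp = zc fp K + zc fp R" unfolding R_def by (rule zc_add[OF permS_fp K_sub K_fp])
    have pR: "permS sp R" unfolding R_def by (rule permS_closed(3)[OF permS_sp K_sub K_sp])
    have apR: "\<And>z. z \<in> R \<Longrightarrow> ap z \<in> R" unfolding R_def by (rule permS_closed(2)[OF permS_ap K_sub K_ap])
    have invR: "\<And>z. z \<in> R \<Longrightarrow> ap z \<in> R \<and> ap z \<noteq> z \<and> ap (ap z) = z"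
      using apR ap_ne ap_ap unfolding R_def by blast
    have x1R: "(x0, 1) \<in> R" unfolding R_def K_def using False x01 by blast
    have neR: "R \<noteq> {}" using x1R by blast
    have Kstep: "\<And>u v. (u, v) \<in> Esym sp ap Dp \<Longrightarrow> u \<in> K \<Longrightarrow> v \<in> K"
      unfolding K_def comp_def by (auto intro: rtrancl_into_rtrancl)
    have connR: "(z, w) \<in> (Esym sp ap R)\<^sup>*" if z: "z \<in> R" and w: "w \<in> R" for z w
    proof -
      have "z \<in> cc (x0, 1)" "w \<in> cc (x0, 1)" using all_conn[OF x0] z w unfolding R_def K_def by blast+
      hence "((x0, 1), z) \<in> (Esym sp ap Dp)\<^sup>*" "((x0, 1), w) \<in> (Esym sp ap Dp)\<^sup>*" unfolding comp_def by auto
      hence "(z, w) \<in> (Esym sp ap Dp)\<^sup>*" using rtrancl_sym_sym[OF sym_Esym] by (meson rtrancl_trans)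
      moreover have "z \<in> Dp - K" using z unfolding R_def .
      ultimately show ?thesis unfolding R_def using Esym_restrict[of sp ap Dp K z w] Kstep sp_Dp ap_Dp by blast
    qed
    have rhR: "zc sp R + zc (sp \<circ> ap) R \<le> zc ap R + 2" by (rule RH[OF pR invR neR connR])
    have ch: "zc sp Dp + zc fp Dp \<ge> zc ap Dp + 4" using chi_ge by linarith
    have k1: "zc sp K + zc fp K \<le> zc ap K + 1" using cnt1 cnt2 by presburger
    have r1: "zc sp R + zc fp R \<le> zc ap R + 2" using rhR unfolding fp_def .
    have t1: "zc sp Dp + zc fp Dp = (zc sp K + zc fp K) + (zc sp R + zc fp R)" using aS aF by simp
    have t2: "zc sp Dp + zc fp Dp \<le> zc ap Dp + 3" unfolding t1 aA using k1 r1 by simp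
    show False using ch t2 by simp
  qed
qed

end

context cyc
begin

lemma pole_in: assumes P: "P = s0 \<or> P = s1" and d: "d \<in> P" shows "d \<in> D" "orb s d = P"
proof -
  obtain d0 where d0: "d0 \<in> D" "P = orb s d0" using pole_vertex(1)[OF P] by blast
  show "d \<in> D" using d d0 orb_sub[OF permS_s d0(1)] by blast
  show "orb s d = P" using orb_eq[OF permS_s d0(1)] d d0(2) by simp
qed

lemma pole_nc: assumes P: "P = s0 \<or> P = s1" and d: "d \<in> P" shows "d \<notin> Cd" "d \<notin> I"
proof -
  have o: "orb s d = P" by (rule pole_in(2)[OF P d])
  show "d \<notin> Cd" using pole_not_cycle[OF _ P] o by blast
  show "d \<notin> I"
  proof
    assume dI: "d \<in> I"
    have "orb s (om d) = orb s d"
      using orb_eq[OF permS_s xD[OF om_Cd[OF dI]] om_vert[OF dI]] by simp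
    thus False using pole_not_cycle[OF om_Cd[OF dI] P] o by simp
  qed
qed

lemma pole_vertex_conn:
  assumes P: "P = s0 \<or> P = s1" and d: "d \<in> P" and e: "e \<in> P"
  shows "(e, 0) \<in> cc (d, 0)"
proof -
  have dD: "d \<in> D" and od: "orb s d = P" using pole_in[OF P d] by auto
  have step: "sp (y, 0) = (s y, 0)" if y: "y \<in> P" for y
  proof -
    have "y \<notin> I" using pole_nc[OF P y] by blast
    moreover have "s y \<in> P" using od y orb_step_in by metis
    hence "s y \<notin> Cd" using pole_nc[OF P] by blast
    ultimately show ?thesis using spB3[of 0 y] by simp
  qed
  have "((s ^^ n) d, 0) \<in> cc (d, 0) \<and> (s ^^ n) d \<in> P" for n
  proof (induct n)
    case 0 thus ?case using comp_self d by simp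
  next
    case (Suc n)
    hence h: "((s ^^ n) d, 0) \<in> cc (d, 0)" "(s ^^ n) d \<in> P" by auto
    have "((s ^^ n) d, 0) \<in> Dp" using h(2) pole_in[OF P] Dp0 by blast
    hence "sp ((s ^^ n) d, 0) \<in> cc (d, 0)" using cc_fwd h(1) by blast
    moreover have "s ((s ^^ n) d) \<in> P" using od h(2) orb_step_in by metis
    ultimately show ?case using step[OF h(2)] by simp
  qed
  moreover obtain n where "e = (s ^^ n) d" using e od unfolding orb_def by blast
  ultimately show ?thesis by blast
qed

lemma fp_cc: "z \<in> cc x \<Longrightarrow> z \<in> Dp \<Longrightarrow> fp z \<in> cc x"
  using cc_fwd ap_Dp unfolding fp_def by simp

lemma poles_conn:
  assumes d: "d \<in> s0 \<or> d \<in> s1" and e: "e \<in> s0 \<or> e \<in> s1"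
  shows "(e, 0) \<in> cc (d, 0)"
proof -
  obtain d0 where d0: "d0 \<in> s0" "d0 \<in> fo" using s0fo by blast
  obtain d1 where d1: "d1 \<in> s1" "d1 \<in> fo" using s1fo by blast
  obtain f0 where f0: "f0 \<in> D" "fo = orb (s \<circ> a) f0" using fo_face by blast
  have d0D: "d0 \<in> D" using pole_in(1)[of s0 d0] d0 by blast
  have "orb (s \<circ> a) d0 = fo" using orb_eq[OF permS_f f0(1)] d0(2) f0(2) by simp
  then obtain n where n: "d1 = ((s \<circ> a) ^^ n) d0" using d1(2) unfolding orb_def by blast
  have "(fp ^^ k) (rho d0) = rho (((s \<circ> a) ^^ k) d0) \<and> ((s \<circ> a) ^^ k) d0 \<in> D" for k
  proof (induct k)
    case 0 thus ?case using d0D by simp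
  next
    case (Suc k) thus ?case using fp_rho sD aD by simp
  qed
  moreover have "rho d0 = (d0, 0)" "rho d1 = (d1, 0)" unfolding rho_def
    using pole_nc(1)[of s0 d0] pole_nc(1)[of s1 d1] d0 d1 by auto
  ultimately have it: "(fp ^^ n) (d0, 0) = (d1, 0)" using n by metis
  have "(fp ^^ k) (d0, 0) \<in> cc (d0, 0) \<and> (fp ^^ k) (d0, 0) \<in> Dp" for k
  proof (induct k)
    case 0 thus ?case using comp_self d0D Dp0 by simp
  next
    case (Suc k) thus ?case using fp_cc permS_mem[OF permS_fp] by simp
  qed
  hence d01: "(d1, 0) \<in> cc (d0, 0)" using it by metis
  have D0: "d0 \<in> D" "d1 \<in> D" using d0D pole_in(1)[of s1 d1] d1 by auto
  have gen: "(e, 0) \<in> cc (d0, 0)" if "e \<in> s0 \<or> e \<in> s1" for e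
    using that
  proof
    assume "e \<in> s0" thus ?thesis using pole_vertex_conn[of s0 d0 e] d0 by simp
  next
    assume e1: "e \<in> s1"
    have "(e, 0) \<in> cc (d1, 0)" using pole_vertex_conn[of s1 d1 e] d1 e1 by simp
    moreover have "cc (d1, 0) = cc (d0, 0)" by (rule comp_eq[OF d01])
    ultimately show ?thesis by simp
  qed
  have "cc (d, 0) = cc (d0, 0)" by (rule comp_eq[OF gen[OF d]])
  thus ?thesis using gen[OF e] by simp
qed

end

context cyc
begin

lemma a_I_Cd: "y \<in> I \<Longrightarrow> a y \<in> Cd"
  unfolding I_def using aa xD by auto

lemma rev_cyc: "cyc D a s fo s0 s1 lab (1 - c) I (iota \<circ> a)"
proof unfold_locales
  show "1 - c \<le> 1" by simp
  show "I \<subseteq> D" by (rule ID)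
  show "I \<noteq> {}" using Cdne unfolding I_def by blast
  show "\<And>x. x \<in> I \<Longrightarrow> (iota \<circ> a) x \<in> I" using iota_I a_I_Cd by simp
  show "\<And>x. x \<in> I \<Longrightarrow> a x \<in> orb s ((iota \<circ> a) x)"
  proof -
    fix y assume y: "y \<in> I"
    have z: "a y \<in> Cd" by (rule a_I_Cd[OF y])
    show "a y \<in> orb s ((iota \<circ> a) y)"
      using orb_sym[OF permS_s xD[OF z] iota_vert[OF z]] by simp
  qed
  show "\<And>x y. x \<in> I \<Longrightarrow> y \<in> I \<Longrightarrow> orb s x = orb s y \<Longrightarrow> x = y"
  proof -
    fix y y' assume y: "y \<in> I" and y': "y' \<in> I" and e: "orb s y = orb s y'"
    have o1: "orb s y = orb s (om y)" by (rule orb_eq[OF permS_s xD[OF om_Cd[OF y]] om_vert[OF y]])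
    have o2: "orb s y' = orb s (om y')" by (rule orb_eq[OF permS_s xD[OF om_Cd[OF y']] om_vert[OF y']])
    have "orb s (om y) = orb s (om y')" using o1 o2 e by (metis (no_types))
    hence "om y = om y'" by (rule tinj[OF om_Cd[OF y] om_Cd[OF y']])
    hence "iota (om y) = iota (om y')" by simp
    thus "y = y'" using iota_om[OF y] iota_om[OF y'] by simp
  qed
  show "\<And>x y. x \<in> I \<Longrightarrow> y \<in> I \<Longrightarrow> y \<in> orb (iota \<circ> a) x"
  proof -
    fix y y' assume y: "y \<in> I" and y': "y' \<in> I"
    obtain z where z: "z \<in> Cd" "y = a z" using y unfolding I_def by blast
    obtain z' where z': "z' \<in> Cd" "y' = a z'" using y' unfolding I_def by blast
    have "z \<in> orb psi z'" by (rule single[OF z'(1) z(1)])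
    then obtain n where n: "z = (psi ^^ n) z'" unfolding orb_def by blast
    have key: "((iota \<circ> a) ^^ n) (a ((psi ^^ n) w)) = a w" if w: "w \<in> Cd" for w
      using w
    proof (induct n arbitrary: w)
      case 0 thus ?case by simp
    next
      case (Suc n)
      have pw: "(psi ^^ n) w \<in> Cd"
      proof -
        have "(psi ^^ k) w \<in> Cd" for k by (induct k) (use Suc.prems psiCd in auto)
        thus ?thesis by blast
      qed
      have e1: "((iota \<circ> a) ^^ Suc n) (a ((psi ^^ Suc n) w)) = ((iota \<circ> a) ^^ n) ((iota \<circ> a) (a ((psi ^^ Suc n) w)))"
        by (simp only: funpow_Suc_right o_apply)
      have e2: "(iota \<circ> a) (a ((psi ^^ Suc n) w)) = a ((psi ^^ n) w)"
      proof -
        define p where "p = (psi ^^ n) w"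
        have "(psi ^^ Suc n) w = psi p" unfolding p_def by simp
        moreover have "(iota \<circ> a) (a (psi p)) = iota (psi p)" using aa[OF xD[OF psiCd[OF pw]]] unfolding p_def by simp
        moreover have "iota (psi p) = a p" using a_iota_psi[OF pw] unfolding p_def by simp
        ultimately show ?thesis unfolding p_def by simp
      qed
      have e3: "((iota \<circ> a) ^^ n) (a ((psi ^^ n) w)) = a w" by (rule Suc.hyps[OF Suc.prems])
      show ?case unfolding e1 e2 by (rule e3)
    qed
    show "y' \<in> orb (iota \<circ> a) y"
      using key[OF z'(1)] n z z' orb_iter[of n "iota \<circ> a" y] by simp
  qed
  show "\<And>x. x \<in> I \<Longrightarrow> outd lab s a (1 - c) x"
  proof -
    fix y assume y: "y \<in> I"
    obtain z where z: "z \<in> Cd" "y = a z" using y unfolding I_def by blast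
    have o: "outd lab s a c z" by (rule outC[OF z(1)])
    have "1 - (1 - c) = c" using c01 by simp
    thus "outd lab s a (1 - c) y" using o z aa[OF xD[OF z(1)]] unfolding outd_def by auto
  qed
qed

definition beta :: "'d \<times> nat \<Rightarrow> 'd \<times> nat" where
  "beta z = (if fst z \<in> Cd \<or> fst z \<in> I then (fst z, 1 - snd z) else z)"

end

context cyc
begin

lemma beta_sd: "beta (e, if e \<in> Cd then 1 else 0) = (e, if e \<in> I then 1 else 0)"
  unfolding beta_def using disj by auto

lemma beta_Dp: "z \<in> Dp \<Longrightarrow> beta z \<in> Dp"
  unfolding beta_def Dp_def using CdD ID by (cases z) auto

lemma beta_beta: "z \<in> Dp \<Longrightarrow> beta (beta z) = z"
  unfolding beta_def Dp_def by (cases z) auto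

lemma beta_ap: "z \<in> Dp \<Longrightarrow> ap (beta z) = beta (ap z)"
proof -
  assume z: "z \<in> Dp"
  obtain d l where zz: "z = (d, l)" by (cases z)
  have dD: "d \<in> D" using z CdD ID unfolding zz Dp_def by auto
  have "a d \<in> Cd \<or> a d \<in> I \<longleftrightarrow> d \<in> Cd \<or> d \<in> I"
    using aI_iff[OF dD] aI_iff[OF aD[OF dD]] aa[OF dD] by auto
  thus ?thesis unfolding zz beta_def ap_def by auto
qed

lemma cyc_False: False
proof -
  interpret B: cyc D a s fo s0 s1 lab "1 - c" I "iota \<circ> a" by (rule rev_cyc)
  have BI: "B.I = Cd"
  proof -
    have "a ` I = Cd" unfolding I_def using aa xD by (auto simp: image_iff)
    thus ?thesis unfolding B.I_def .
  qed
  have Bom: "B.om y = iota y" if "y \<in> Cd" for y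
    unfolding B.om_def using aa[OF xD[OF that]] by simp
  have Biota: "B.iota y = om y" if y: "y \<in> I" for y
  proof -
    have w: "a (om y) \<in> I" using om_Cd[OF y] unfolding I_def by blast
    have "(iota \<circ> a) (a (om y)) = y" using aa[OF xD[OF om_Cd[OF y]]] iota_om[OF y] by simp
    hence "B.psinv y = a (om y)" using B.psinv_psi[OF w] by simp
    thus ?thesis unfolding B.iota_def using aa[OF xD[OF om_Cd[OF y]]] by simp
  qed
  have BDp: "B.Dp = Dp" unfolding B.Dp_def Dp_def BI by auto
  have Bap: "B.ap = ap" unfolding B.ap_def[abs_def] ap_def[abs_def] by simp
  have beta_sp: "B.sp (beta z) = beta (sp z)" if z: "z \<in> Dp" for z
  proof -
    obtain d l where zz: "z = (d, l)" by (cases z)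
    have dD: "d \<in> D" using z CdD ID unfolding zz Dp_def by auto
    consider (i) "l = 0" "d \<in> I" | (ii) "l = 0" "d \<in> Cd" | (iii) "l = 1" "d \<in> Cd" | (iv) "l = 1" "d \<in> I"
      | (v) "d \<notin> Cd" "d \<notin> I" "l = 0"
      using z unfolding zz Dp_def by auto
    thus ?thesis
    proof cases
      case i
      have "sp z = (om d, 0)" unfolding zz using spB1 i by simp
      moreover have "beta (om d, 0) = (om d, 1)" unfolding beta_def using om_Cd[OF i(2)] by simp
      moreover have "beta z = (d, 1)" unfolding zz beta_def using i by simp
      moreover have "B.sp (d, 1) = (om d, 1)" using B.spB2[of 1 d] i Biota by simp
      ultimately show ?thesis by simp
    next
      case ii
      have nI: "d \<notin> I" using disj ii(2) by blast
      have "sp z = (s d, if s d \<in> Cd then 1 else 0)" unfolding zz using spB3[of l d] ii nI by auto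
      hence "beta (sp z) = (s d, if s d \<in> I then 1 else 0)" using beta_sd by simp
      moreover have "beta z = (d, 1)" unfolding zz beta_def using ii by simp
      moreover have "B.sp (d, 1) = (s d, if s d \<in> I then 1 else 0)" using B.spB3[of 1 d] ii nI by auto
      ultimately show ?thesis by simp
    next
      case iii
      have "sp z = (iota d, 1)" unfolding zz using spB2 iii by simp
      moreover have "beta (iota d, 1) = (iota d, 0)" unfolding beta_def using iota_I[OF iii(2)] by simp
      moreover have "beta z = (d, 0)" unfolding zz beta_def using iii by simp
      moreover have "B.sp (d, 0) = (iota d, 0)" using B.spB1[of 0 d] iii BI Bom by simp
      ultimately show ?thesis by simp
    next
      case iv
      have nC: "d \<notin> Cd" using disj iv(2) by blast
      have "sp z = (s d, if s d \<in> Cd then 1 else 0)" unfolding zz using spB3[of l d] iv nC by auto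
      hence "beta (sp z) = (s d, if s d \<in> I then 1 else 0)" using beta_sd by simp
      moreover have "beta z = (d, 0)" unfolding zz beta_def using iv by simp
      moreover have "B.sp (d, 0) = (s d, if s d \<in> I then 1 else 0)" using B.spB3[of 0 d] iv nC BI by auto
      ultimately show ?thesis by simp
    next
      case v
      have "sp z = (s d, if s d \<in> Cd then 1 else 0)" unfolding zz using spB3[of l d] v by auto
      hence "beta (sp z) = (s d, if s d \<in> I then 1 else 0)" using beta_sd by simp
      moreover have "beta z = (d, 0)" unfolding zz beta_def using v by simp
      moreover have "B.sp (d, 0) = (s d, if s d \<in> I then 1 else 0)" using B.spB3[of 0 d] v BI by auto
      ultimately show ?thesis by simp
    qed
  qed
  have beta_sp': "beta (B.sp z) = sp (beta z)" if z: "z \<in> Dp" for z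
  proof -
    have "B.sp (beta (beta z)) = beta (sp (beta z))" by (rule beta_sp[OF beta_Dp[OF z]])
    hence "B.sp z = beta (sp (beta z))" using beta_beta[OF z] by simp
    thus ?thesis using beta_beta[OF sp_Dp[OF beta_Dp[OF z]]] by simp
  qed
  have transp: "(beta u, beta v) \<in> (Esym sp ap Dp)\<^sup>*" if uv: "(u, v) \<in> (Esym B.sp B.ap B.Dp)\<^sup>*" for u v
    using uv
  proof (induct rule: rtrancl_induct)
    case base thus ?case by simp
  next
    case (step v w)
    have E1: "(y, sp y) \<in> Esym sp ap Dp" "(sp y, y) \<in> Esym sp ap Dp"
      "(y, ap y) \<in> Esym sp ap Dp" "(ap y, y) \<in> Esym sp ap Dp" if "y \<in> Dp" for y
      using that unfolding Esym_def by blast+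
    have "(v, w) \<in> Esym B.sp ap Dp" using step(2) BDp Bap by simp
    then consider (c1) z where "z \<in> Dp" "v = z" "w = B.sp z" | (c2) z where "z \<in> Dp" "v = B.sp z" "w = z"
      | (c3) z where "z \<in> Dp" "v = z" "w = ap z" | (c4) z where "z \<in> Dp" "v = ap z" "w = z"
      unfolding Esym_def by blast
    hence "(beta v, beta w) \<in> Esym sp ap Dp"
    proof cases
      case (c1 z) thus ?thesis using beta_sp'[OF c1(1)] E1(1)[OF beta_Dp[OF c1(1)]] by simp
    next
      case (c2 z) thus ?thesis using beta_sp'[OF c2(1)] E1(2)[OF beta_Dp[OF c2(1)]] by simp
    next
      case (c3 z) thus ?thesis using beta_ap[OF c3(1)] E1(3)[OF beta_Dp[OF c3(1)]] by simp
    next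
      case (c4 z) thus ?thesis using beta_ap[OF c4(1)] E1(4)[OF beta_Dp[OF c4(1)]] by simp
    qed
    thus ?case using step(3) by (simp add: rtrancl_into_rtrancl)
  qed
  obtain x0 where x0: "x0 \<in> Cd" using Cdne by blast
  have ax0: "a x0 \<in> I" using x0 unfolding I_def by blast
  obtain d1 where d1: "d1 \<in> s0 \<or> d1 \<in> s1" "(d1, 0) \<in> cc (x0, 0)" using LL[OF x0] by blast
  obtain d2 where d2: "d2 \<in> s0 \<or> d2 \<in> s1" "(d2, 0) \<in> B.cc (a x0, 0)" using B.LL[OF ax0] by blast
  have "((a x0, 0), (d2, 0)) \<in> (Esym B.sp B.ap B.Dp)\<^sup>*" using d2(2) unfolding comp_def by simp
  hence "(beta (a x0, 0), beta (d2, 0)) \<in> (Esym sp ap Dp)\<^sup>*" by (rule transp)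
  moreover have "beta (a x0, 0) = (a x0, 1)" unfolding beta_def using ax0 by simp
  moreover have "beta (d2, 0) = (d2, 0)"
  proof -
    have "d2 \<notin> Cd \<and> d2 \<notin> I"
    proof (cases "d2 \<in> s0")
      case True thus ?thesis using pole_nc[of s0 d2] by simp
    next
      case False hence "d2 \<in> s1" using d2(1) by simp
      thus ?thesis using pole_nc[of s1 d2] by simp
    qed
    thus ?thesis unfolding beta_def by simp
  qed
  ultimately have d2c: "(d2, 0) \<in> cc (a x0, 1)" unfolding comp_def by simp
  have "(a x0, 1) \<in> cc (x0, 1)"
  proof -
    have x1: "(x0, 1) \<in> Dp" using x0 Dp1 by simp
    have "(x0, 1) \<in> cc (x0, 1)" by (rule comp_self)
    hence "ap (x0, 1) \<in> cc (x0, 1)" using cc_fwd[OF _ x1] by blast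
    thus ?thesis by (simp add: ap_def)
  qed
  hence "cc (a x0, 1) = cc (x0, 1)" by (rule comp_eq)
  hence "(d2, 0) \<in> cc (x0, 1)" using d2c by simp
  hence c1: "cc (d2, 0) = cc (x0, 1)" by (rule comp_eq)
  have "(d2, 0) \<in> cc (d1, 0)" by (rule poles_conn[OF d1(1) d2(1)])
  hence "cc (d2, 0) = cc (d1, 0)" by (rule comp_eq)
  moreover have "cc (d1, 0) = cc (x0, 0)" using d1(2) by (rule comp_eq)
  ultimately have same: "cc (x0, 1) = cc (x0, 0)" using c1 by simp
  have all: "z \<in> cc (x0, 0)" if "z \<in> Dp" for z using all_conn[OF x0 that] same by blast
  show False
  proof (rule chi_connected_False)
    fix z w assume z: "z \<in> Dp" and w: "w \<in> Dp"
    have "((x0, 0), z) \<in> (Esym sp ap Dp)\<^sup>*" "((x0, 0), w) \<in> (Esym sp ap Dp)\<^sup>*"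
      using all[OF z] all[OF w] unfolding comp_def by auto
    thus "(z, w) \<in> (Esym sp ap Dp)\<^sup>*" using rtrancl_sym_sym[OF sym_Esym] by (meson rtrancl_trans)
  qed
qed

end

lemma orb_cyclic:
  assumes p: "0 < p" "(f ^^ p) u = u" and v: "v \<in> orb f u"
  shows "u \<in> orb f v"
proof -
  obtain k where k: "v = (f ^^ k) u" using v unfolding orb_def by blast
  have per: "(f ^^ (p * m)) u = u" for m
  proof (induct m)
    case (Suc m)
    have e: "p * Suc m = p * m + p" by simp
    have "(f ^^ (p * Suc m)) u = (f ^^ (p * m)) ((f ^^ p) u)" unfolding e funpow_add by simp
    thus ?case using Suc p(2) by simp
  qed simp
  have ge: "p * k \<ge> k" using p(1) by simp
  have e: "p * k = (p * k - k) + k" using ge by simp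
  have "(f ^^ (p * k - k)) v = (f ^^ (p * k)) u" unfolding k by (subst e) (simp only: funpow_add o_apply)
  hence "(f ^^ (p * k - k)) v = u" using per by simp
  thus ?thesis unfolding orb_def by blast
qed

context wl
begin

lemma arc_dart:
  assumes c: "c \<le> 1" and uw: "(u, w) \<in> colored_arcs D a s lab c \<union> (colored_arcs D a s lab (1 - c))\<inverse>"
  shows "\<exists>x\<in>D. u = orb s x \<and> w = orb s (a x) \<and> outd lab s a c x"
  using uw
proof
  assume "(u, w) \<in> colored_arcs D a s lab c"
  then obtain d where d: "u = orb s (a d)" "w = orb s d" "d \<in> D" "lab d = lab (s d)" "lab d = c"
    unfolding colored_arcs_def by blast
  have "outd lab s a c (a d)" unfolding outd_def using d aa by simp
  thus ?thesis using d aD aa by (intro bexI[of _ "a d"]) auto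
next
  assume "(u, w) \<in> (colored_arcs D a s lab (1 - c))\<inverse>"
  then obtain d where d: "w = orb s (a d)" "u = orb s d" "d \<in> D" "lab d = lab (s d)" "lab d = 1 - c"
    unfolding colored_arcs_def by blast
  have "outd lab s a c d" unfolding outd_def using d by simp
  thus ?thesis using d by blast
qed

lemma acyc:
  assumes c: "c \<le> 1"
  shows "acyclic (colored_arcs D a s lab c \<union> (colored_arcs D a s lab (1 - c))\<inverse>)"
proof (rule ccontr)
  define R where "R = colored_arcs D a s lab c \<union> (colored_arcs D a s lab (1 - c))\<inverse>"
  assume "\<not> acyclic (colored_arcs D a s lab c \<union> (colored_arcs D a s lab (1 - c))\<inverse>)"
  then obtain v0 where v0: "(v0, v0) \<in> R\<^sup>+" unfolding acyclic_def R_def by blast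
  define W where "W = {v. (v, v) \<in> R\<^sup>+}"
  have succ: "\<exists>w. (v, w) \<in> R \<and> w \<in> W" if v: "v \<in> W" for v
  proof -
    have "(v, v) \<in> R\<^sup>+" using v unfolding W_def by simp
    then obtain w where w: "(v, w) \<in> R" "(w, v) \<in> R\<^sup>*" by (meson tranclD)
    have "(w, w) \<in> R\<^sup>+" using w by (meson rtrancl_into_trancl1)
    thus ?thesis using w unfolding W_def by blast
  qed
  define f where "f v = (SOME w. (v, w) \<in> R \<and> w \<in> W)" for v
  have fW: "(v, f v) \<in> R \<and> f v \<in> W" if "v \<in> W" for v
    unfolding f_def using someI_ex[OF succ[OF that]] by simp
  have WV: "W \<subseteq> orb s ` D"
  proof
    fix v assume "v \<in> W"
    hence "(v, f v) \<in> R" using fW by blast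
    then obtain x where "x \<in> D" "v = orb s x" using arc_dart[OF c] unfolding R_def by blast
    thus "v \<in> orb s ` D" by blast
  qed
  have finW: "finite W" using WV finD finite_subset by blast
  have v0W: "v0 \<in> W" using v0 unfolding W_def by simp
  have itW: "(f ^^ n) v0 \<in> W" for n by (induct n) (use v0W fW in auto)
  have "\<not> inj_on (\<lambda>n. (f ^^ n) v0) {0..card W}"
  proof
    assume inj: "inj_on (\<lambda>n. (f ^^ n) v0) {0..card W}"
    have "(\<lambda>n. (f ^^ n) v0) ` {0..card W} \<subseteq> W" using itW by blast
    hence "card ((\<lambda>n. (f ^^ n) v0) ` {0..card W}) \<le> card W" using finW by (simp add: card_mono)
    with card_image[OF inj] show False by simp
  qed
  then obtain i j where ij: "i \<noteq> j" "(f ^^ i) v0 = (f ^^ j) v0" unfolding inj_on_def by blast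
  obtain i' j' where ij': "i' < j'" "(f ^^ i') v0 = (f ^^ j') v0"
  proof (cases "i < j")
    case True thus ?thesis using that ij by blast
  next
    case False hence "j < i" using ij(1) by simp
    thus ?thesis using that ij by metis
  qed
  define u where "u = (f ^^ i') v0"
  define p where "p = j' - i'"
  have p0: "0 < p" unfolding p_def using ij' by simp
  have fp: "(f ^^ p) u = u"
  proof -
    have "(f ^^ p) u = (f ^^ (p + i')) v0" unfolding u_def by (simp add: funpow_add)
    also have "p + i' = j'" unfolding p_def using ij' by simp
    finally show ?thesis using ij' unfolding u_def by simp
  qed
  define VC where "VC = orb f u"
  have uW: "u \<in> W" unfolding u_def by (rule itW)
  have VCW: "VC \<subseteq> W" unfolding VC_def by (rule orb_closed_min) (use fW uW in auto)
  have VCcl: "f v \<in> VC" if "v \<in> VC" for v using that unfolding VC_def by (rule orb_step_in)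
  have VCcyc: "orb f v = VC" if v: "v \<in> VC" for v
  proof
    show "orb f v \<subseteq> VC" unfolding VC_def by (rule orb_trans[OF v[unfolded VC_def]])
    have "u \<in> orb f v" by (rule orb_cyclic[OF p0 fp v[unfolded VC_def]])
    thus "VC \<subseteq> orb f v" unfolding VC_def by (rule orb_trans)
  qed
  have dex: "\<exists>x. x \<in> D \<and> v = orb s x \<and> f v = orb s (a x) \<and> outd lab s a c x" if v: "v \<in> W" for v
    using arc_dart[OF c, of v "f v"] fW[OF v] unfolding R_def by blast
  define dv where "dv v = (SOME x. x \<in> D \<and> v = orb s x \<and> f v = orb s (a x) \<and> outd lab s a c x)" for v
  have dvp: "dv v \<in> D \<and> v = orb s (dv v) \<and> f v = orb s (a (dv v)) \<and> outd lab s a c (dv v)" if "v \<in> W" for v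
    unfolding dv_def using someI_ex[OF dex[OF that]] by simp
  define Cd where "Cd = dv ` VC"
  define psi where "psi x = dv (f (orb s x))" for x
  have psi_dv: "psi (dv v) = dv (f v)" if "v \<in> W" for v unfolding psi_def using dvp[OF that] by simp
  interpret C: cyc D a s fo s0 s1 lab c Cd psi
  proof unfold_locales
    show "c \<le> 1" by (rule c)
    show "Cd \<subseteq> D" unfolding Cd_def using dvp VCW by blast
    show "Cd \<noteq> {}" unfolding Cd_def VC_def using orb_self[of u f] by blast
    show "\<And>x. x \<in> Cd \<Longrightarrow> psi x \<in> Cd"
    proof -
      fix x assume "x \<in> Cd"
      then obtain v where v: "v \<in> VC" "x = dv v" unfolding Cd_def by blast
      have "psi x = dv (f v)" using psi_dv VCW v by blast
      thus "psi x \<in> Cd" using VCcl[OF v(1)] unfolding Cd_def by blast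
    qed
    show "\<And>x. x \<in> Cd \<Longrightarrow> a x \<in> orb s (psi x)"
    proof -
      fix x assume "x \<in> Cd"
      then obtain v where v: "v \<in> VC" "x = dv v" unfolding Cd_def by blast
      have vW: "v \<in> W" "f v \<in> W" using VCW v VCcl by blast+
      have "psi x = dv (f v)" using psi_dv vW v by blast
      hence "orb s (psi x) = f v" using dvp[OF vW(2)] by simp
      also have "\<dots> = orb s (a x)" using dvp[OF vW(1)] v by simp
      finally show "a x \<in> orb s (psi x)" using orb_self[of "a x" s] by simp
    qed
    show "\<And>x y. x \<in> Cd \<Longrightarrow> y \<in> Cd \<Longrightarrow> orb s x = orb s y \<Longrightarrow> x = y"
    proof -
      fix x y assume "x \<in> Cd" "y \<in> Cd" "orb s x = orb s y"
      moreover obtain v where v: "v \<in> VC" "x = dv v" using \<open>x \<in> Cd\<close> unfolding Cd_def by blast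
      moreover obtain w where w: "w \<in> VC" "y = dv w" using \<open>y \<in> Cd\<close> unfolding Cd_def by blast
      ultimately have "v = w" using dvp VCW by (metis subsetD)
      thus "x = y" using v w by simp
    qed
    show "\<And>x y. x \<in> Cd \<Longrightarrow> y \<in> Cd \<Longrightarrow> y \<in> orb psi x"
    proof -
      fix x y assume "x \<in> Cd" "y \<in> Cd"
      obtain v where v: "v \<in> VC" "x = dv v" using \<open>x \<in> Cd\<close> unfolding Cd_def by blast
      obtain w where w: "w \<in> VC" "y = dv w" using \<open>y \<in> Cd\<close> unfolding Cd_def by blast
      have "w \<in> orb f v" using VCcyc[OF v(1)] w(1) by simp
      then obtain n where n: "w = (f ^^ n) v" unfolding orb_def by blast
      have "(psi ^^ k) (dv v) = dv ((f ^^ k) v) \<and> (f ^^ k) v \<in> VC" for k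
      proof (induct k)
        case 0 thus ?case using v by simp
      next
        case (Suc k) thus ?case using psi_dv VCW VCcl by auto
      qed
      thus "y \<in> orb psi x" using n v w orb_iter[of n psi x] by metis
    qed
    show "\<And>x. x \<in> Cd \<Longrightarrow> outd lab s a c x" unfolding Cd_def using dvp VCW by blast
  qed
  show False by (rule C.cyc_False)
qed

end

theorem proposition6:
  assumes "plane_map D alpha sigma"
    and "weak_labeling D alpha sigma fo s0 s1 lab"
  shows "acyclic (colored_arcs D alpha sigma lab 0 \<union> (colored_arcs D alpha sigma lab 1)\<inverse>) \<and>
         acyclic (colored_arcs D alpha sigma lab 1 \<union> (colored_arcs D alpha sigma lab 0)\<inverse>)"
proof -
  interpret wl D alpha sigma fo s0 s1 lab using assms by unfold_locales
  show ?thesis using acyc[of 0] acyc[of 1] by simp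
qed

end
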